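(* Let $G$ be a full Frobenius group of finite Morley rank with proper full Frobenius complement $B$. Then: (a) if $H$ is a connected definable subgroup of $G$ which is not contained in any conjugate of $B$, then for every conjugate $B'$ of $B$ with $B'\cap H\neq\{1\}$, the subgroup $B'\cap H$ is a proper full Frobenius complement of $H$; in particular $H$ is a full Frobenius group; (b) if $H$ is a connected definable subgroup of $G$ containing some conjugate of $B$, then $H$ is a full Frobenius complement of $G$; (c) if $G$ is connected and $B'$ is a full Frobenius complement of $G$ with $B\cap B'\neq\{1\}$, then $B\cap B'$ is again a full Frobenius complement of $G$. In particular, the full Frobenius complements of $G$ that are minimal under inclusion all are conjugate in $G$ (there is a unique minimal full Frobenius complement up to conjugacy).
   Context: A subgroup $B$ of a group $G$ is malnormal if $B\cap B^g=\{1\}$ for all $g\in G\setminus B$. A full Frobenius complement of a group $G$ of finite Morley rank is a definable malnormal subgroup of $G$ whose conjugates $B^g$ ($g\in G$) cover $G$. A group $G$ of finite Morley rank is a full Frobenius group if it has a proper full Frobenius complement $B$; the conjugates of $B$ are then called the Borel subgroups of $G$. *)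

theory Defs
  imports "HOL-Algebra.Coset"
begin

text \<open>Groups of finite Morley rank are rendered, following Borovik--Nesin
(Groups of finite Morley rank, Ch. 4) and Poizat, as ranked groups: a group
together with a family of definable sets D n (subsets of M^n, encoded as lists
of length n) and a rank function rk satisfying the Borovik--Poizat axioms.\<close>

definition Mn :: "'a set \<Rightarrow> nat \<Rightarrow> 'a list set" where
  "Mn M n = {xs. length xs = n \<and> set xs \<subseteq> M}"

definition def_fun ::
  "(nat \<Rightarrow> 'a list set set) \<Rightarrow> nat \<Rightarrow> nat \<Rightarrow> 'a list set \<Rightarrow> 'a list set
     \<Rightarrow> ('a list \<Rightarrow> 'a list) \<Rightarrow> bool" where
  "def_fun D n m A B f \<longleftrightarrow> A \<in> D n \<and> B \<in> D m \<and> f ` A \<subseteq> B \<and>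
     {xs @ f xs | xs. xs \<in> A} \<in> D (n + m)"

definition fib :: "'a list set \<Rightarrow> ('a list \<Rightarrow> 'a list) \<Rightarrow> 'a list \<Rightarrow> 'a list set" where
  "fib A f b = {x \<in> A. f x = b}"

definition ranked_universe ::
  "'a set \<Rightarrow> (nat \<Rightarrow> 'a list set set) \<Rightarrow> ('a list set \<Rightarrow> nat) \<Rightarrow> bool" where
  "ranked_universe M D rk \<longleftrightarrow>
    M \<noteq> {} \<and>
    \<comment> \<open>definable sets: boolean algebra containing diagonals, closed under
        products, coordinate permutations, projections and fibres (parameters)\<close>
    (\<forall>n. D n \<subseteq> Pow (Mn M n)) \<and>
    (\<forall>n. Mn M n \<in> D n) \<and>
    (\<forall>n X. X \<in> D n \<longrightarrow> Mn M n - X \<in> D n) \<and>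
    (\<forall>n X Y. X \<in> D n \<longrightarrow> Y \<in> D n \<longrightarrow> X \<inter> Y \<in> D n) \<and>
    (\<forall>n i j. i < n \<longrightarrow> j < n \<longrightarrow> {xs \<in> Mn M n. xs ! i = xs ! j} \<in> D n) \<and>
    (\<forall>n m X Y. X \<in> D n \<longrightarrow> Y \<in> D m \<longrightarrow> {xs @ ys | xs ys. xs \<in> X \<and> ys \<in> Y} \<in> D (n + m)) \<and>
    (\<forall>n X p. X \<in> D n \<longrightarrow> bij_betw p {..<n} {..<n} \<longrightarrow>
        (\<lambda>xs. map (\<lambda>i. xs ! p i) [0..<n]) ` X \<in> D n) \<and>
    (\<forall>n m X. X \<in> D (n + m) \<longrightarrow> take n ` X \<in> D n) \<and>
    (\<forall>n m X a. X \<in> D (n + m) \<longrightarrow> a \<in> Mn M n \<longrightarrow> {ys. a @ ys \<in> X} \<in> D m) \<and>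
    \<comment> \<open>monotonicity of rank\<close>
    (\<forall>n A k. A \<in> D n \<longrightarrow> A \<noteq> {} \<longrightarrow>
       (Suc k \<le> rk A \<longleftrightarrow>
         (\<exists>S :: nat \<Rightarrow> 'a list set. (\<forall>i. S i \<in> D n \<and> S i \<subseteq> A \<and> S i \<noteq> {} \<and> k \<le> rk (S i)) \<and>
              (\<forall>i j. i \<noteq> j \<longrightarrow> S i \<inter> S j = {})))) \<and>
    \<comment> \<open>definability of rank\<close>
    (\<forall>n m A B f k. def_fun D n m A B f \<longrightarrow>
       {b \<in> B. fib A f b \<noteq> {} \<and> rk (fib A f b) = k} \<in> D m) \<and>
    \<comment> \<open>additivity of rank\<close>
    (\<forall>n m A B f k. def_fun D n m A B f \<longrightarrow> f ` A = B \<longrightarrow> A \<noteq> {} \<longrightarrow>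
       (\<forall>b\<in>B. rk (fib A f b) = k) \<longrightarrow> rk A = rk B + k) \<and>
    \<comment> \<open>elimination of infinite quantifiers\<close>
    (\<forall>n m A B f. def_fun D n m A B f \<longrightarrow>
       (\<exists>N. \<forall>b\<in>B. finite (fib A f b) \<longrightarrow> card (fib A f b) \<le> N))"

definition ranked_group ::
  "('a, 'b) monoid_scheme \<Rightarrow> (nat \<Rightarrow> 'a list set set) \<Rightarrow> ('a list set \<Rightarrow> nat) \<Rightarrow> bool" where
  "ranked_group G D rk \<longleftrightarrow> group G \<and> ranked_universe (carrier G) D rk \<and>
     {[x, y, x \<otimes>\<^bsub>G\<^esub> y] | x y. x \<in> carrier G \<and> y \<in> carrier G} \<in> D 3"

definition definable1 :: "(nat \<Rightarrow> 'a list set set) \<Rightarrow> 'a set \<Rightarrow> bool" where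
  "definable1 D S \<longleftrightarrow> (\<lambda>x. [x]) ` S \<in> D 1"

definition connected_sg ::
  "('a, 'b) monoid_scheme \<Rightarrow> (nat \<Rightarrow> 'a list set set) \<Rightarrow> 'a set \<Rightarrow> bool" where
  "connected_sg G D H \<longleftrightarrow>
     (\<forall>K. subgroup K G \<longrightarrow> K \<subseteq> H \<longrightarrow> definable1 D K \<longrightarrow>
        finite ((\<lambda>h. K #>\<^bsub>G\<^esub> h) ` H) \<longrightarrow> K = H)"

definition conjg :: "('a, 'b) monoid_scheme \<Rightarrow> 'a set \<Rightarrow> 'a \<Rightarrow> 'a set" where
  "conjg G B g = (\<lambda>b. inv\<^bsub>G\<^esub> g \<otimes>\<^bsub>G\<^esub> b \<otimes>\<^bsub>G\<^esub> g) ` B"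

definition malnormal :: "('a, 'b) monoid_scheme \<Rightarrow> 'a set \<Rightarrow> bool" where
  "malnormal G B \<longleftrightarrow> subgroup B G \<and>
     (\<forall>g \<in> carrier G - B. B \<inter> conjg G B g = {\<one>\<^bsub>G\<^esub>})"

definition full_frob_complement ::
  "('a, 'b) monoid_scheme \<Rightarrow> (nat \<Rightarrow> 'a list set set) \<Rightarrow> 'a set \<Rightarrow> bool" where
  "full_frob_complement G D B \<longleftrightarrow> definable1 D B \<and> malnormal G B \<and>
     (\<Union>g \<in> carrier G. conjg G B g) = carrier G"

definition full_frob_group ::
  "('a, 'b) monoid_scheme \<Rightarrow> (nat \<Rightarrow> 'a list set set) \<Rightarrow> bool" where
  "full_frob_group G D \<longleftrightarrow> (\<exists>B. full_frob_complement G D B \<and> B \<noteq> carrier G)"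

end

theory Submission imports Defs begin

context group begin

lemma mic1 [simp]: "x \<in> carrier G \<Longrightarrow> y \<in> carrier G \<Longrightarrow> x \<otimes> (inv x \<otimes> y) = y"
  by (simp add: m_assoc[symmetric])
lemma mic2 [simp]: "x \<in> carrier G \<Longrightarrow> y \<in> carrier G \<Longrightarrow> inv x \<otimes> (x \<otimes> y) = y"
  by (simp add: m_assoc[symmetric])

lemma conj_mem_iff: assumes "B \<subseteq> carrier G" "g \<in> carrier G"
  shows "x \<in> conjg G B g \<longleftrightarrow> x \<in> carrier G \<and> g \<otimes> x \<otimes> inv g \<in> B"
proof
  assume "x \<in> conjg G B g"
  then obtain b where b: "b \<in> B" "x = inv g \<otimes> b \<otimes> g" unfolding conjg_def by blast
  have bG: "b \<in> carrier G" using b assms by blast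
  have "g \<otimes> x \<otimes> inv g = b" using bG assms(2) unfolding b(2) by (simp add: m_assoc)
  thus "x \<in> carrier G \<and> g \<otimes> x \<otimes> inv g \<in> B" using b bG assms(2) by simp
next
  assume a: "x \<in> carrier G \<and> g \<otimes> x \<otimes> inv g \<in> B"
  have "inv g \<otimes> (g \<otimes> x \<otimes> inv g) \<otimes> g = x" using a assms(2) by (simp add: m_assoc)
  thus "x \<in> conjg G B g" using a unfolding conjg_def by (metis image_eqI)
qed

lemma rcos_mem_iff: assumes "X \<subseteq> carrier G" "a \<in> carrier G"
  shows "y \<in> X #> a \<longleftrightarrow> y \<in> carrier G \<and> y \<otimes> inv a \<in> X"
proof
  assume "y \<in> X #> a"
  then obtain x where x: "x \<in> X" "y = x \<otimes> a" unfolding r_coset_def by blast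
  thus "y \<in> carrier G \<and> y \<otimes> inv a \<in> X" using assms by (auto simp: m_assoc)
next
  assume y: "y \<in> carrier G \<and> y \<otimes> inv a \<in> X"
  have "y = (y \<otimes> inv a) \<otimes> a" using y assms by (simp add: m_assoc)
  thus "y \<in> X #> a" using y unfolding r_coset_def by blast
qed

lemma conjg_conjg: assumes "B \<subseteq> carrier G" "a \<in> carrier G" "b \<in> carrier G"
  shows "conjg G (conjg G B a) b = conjg G B (a \<otimes> b)"
  unfolding conjg_def image_image using assms by (auto simp: m_assoc inv_mult_group intro!: image_cong) 

lemma conjg_sub: "B \<subseteq> carrier G \<Longrightarrow> g \<in> carrier G \<Longrightarrow> conjg G B g \<subseteq> carrier G"
  unfolding conjg_def by auto

lemma conjg_one: assumes "B \<subseteq> carrier G" shows "conjg G B \<one> = B"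
proof -
  have "conjg G B \<one> = (\<lambda>x. x) ` B" unfolding conjg_def using assms by (intro image_cong) auto
  thus ?thesis by simp
qed


lemma rcos_assoc: assumes "M \<subseteq> carrier G" "a \<in> carrier G" "b \<in> carrier G"
  shows "(M #> a) #> b = M #> (a \<otimes> b)"
proof -
  have s: "M #> a \<subseteq> carrier G" unfolding r_coset_def using assms by auto
  show ?thesis using assms s by (auto simp: rcos_mem_iff m_assoc inv_mult_group)
qed

lemma rcos_one: assumes "M \<subseteq> carrier G" shows "M #> \<one> = M"
  using assms by (auto simp: rcos_mem_iff)

lemma rcos_sub: "M \<subseteq> carrier G \<Longrightarrow> a \<in> carrier G \<Longrightarrow> M #> a \<subseteq> carrier G"
  unfolding r_coset_def by auto

lemma rcos_int: assumes "M \<subseteq> carrier G" "N \<subseteq> carrier G" "a \<in> carrier G"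
  shows "(M \<inter> N) #> a = (M #> a) \<inter> (N #> a)"
proof -
  have "M \<inter> N \<subseteq> carrier G" using assms by blast
  thus ?thesis using assms by (auto simp: rcos_mem_iff)
qed

lemma rcos_diff: assumes "M \<subseteq> carrier G" "N \<subseteq> carrier G" "a \<in> carrier G"
  shows "(M - N) #> a = (M #> a) - (N #> a)"
proof -
  have "M - N \<subseteq> carrier G" using assms by blast
  thus ?thesis using assms by (auto simp: rcos_mem_iff)
qed

lemma rcos_mono: "M \<subseteq> N \<Longrightarrow> M #> a \<subseteq> N #> a"
  unfolding r_coset_def by auto

lemma rcos_ne: "M \<noteq> {} \<Longrightarrow> M #> a \<noteq> {}"
  unfolding r_coset_def by auto

lemma rcos_in_sub: assumes "subgroup H G" "M \<subseteq> H" "a \<in> H" shows "M #> a \<subseteq> H"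
  unfolding r_coset_def using assms subgroup.m_closed by fastforce

lemma rcos_back: assumes "M \<subseteq> carrier G" "a \<in> carrier G" shows "(M #> a) #> inv a = M"
  using assms by (simp add: rcos_assoc rcos_one)


lemma conj_comp: assumes "a \<in> carrier G" "b \<in> carrier G" "y \<in> carrier G"
  shows "a \<otimes> (b \<otimes> y \<otimes> inv b) \<otimes> inv a = (a \<otimes> b) \<otimes> y \<otimes> inv (a \<otimes> b)"
  using assms by (simp add: m_assoc inv_mult_group)

lemma conj_back1: assumes "h \<in> carrier G" "c \<in> carrier G"
  shows "h \<otimes> (inv h \<otimes> c \<otimes> h) \<otimes> inv h = c"
  using assms by (simp add: m_assoc)

lemma conj_back2: assumes "h \<in> carrier G" "y \<in> carrier G"
  shows "inv h \<otimes> (h \<otimes> y \<otimes> inv h) \<otimes> h = y"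
  using assms by (simp add: m_assoc)

lemma conj_one_iff: assumes "h \<in> carrier G" "y \<in> carrier G"
  shows "h \<otimes> y \<otimes> inv h = \<one> \<longleftrightarrow> y = \<one>"
proof
  assume "h \<otimes> y \<otimes> inv h = \<one>"
  hence "inv h \<otimes> (h \<otimes> y \<otimes> inv h) \<otimes> h = inv h \<otimes> \<one> \<otimes> h" by simp
  thus "y = \<one>" using assms by (simp add: conj_back2)
qed (use assms in simp)

lemma sg_conj_closed: assumes "subgroup K G" "h \<in> K" "y \<in> K" shows "h \<otimes> y \<otimes> inv h \<in> K"
  using assms by (simp add: subgroup.m_closed subgroup.m_inv_closed)


lemma transport: assumes M: "subgroup M G" and G: "x \<in> carrier G" "a \<in> carrier G" "y \<in> carrier G"
  and m: "x \<otimes> inv a \<in> M" and c: "a \<otimes> y \<otimes> inv a \<in> M"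
  shows "x \<otimes> y \<otimes> inv x \<in> M"
proof -
  have e: "(x \<otimes> inv a) \<otimes> a = x" using G by (simp add: m_assoc)
  have "(x \<otimes> inv a) \<otimes> (a \<otimes> y \<otimes> inv a) \<otimes> inv (x \<otimes> inv a) \<in> M" by (rule sg_conj_closed[OF M m c])
  thus ?thesis using conj_comp[of "x \<otimes> inv a" a y] e G by simp
qed

definition TI :: "'a set \<Rightarrow> 'a set \<Rightarrow> bool" where
  "TI K C \<longleftrightarrow> (\<forall>g\<in>K. \<forall>z\<in>C. z \<noteq> \<one> \<longrightarrow> g \<otimes> z \<otimes> inv g \<in> C \<longrightarrow> g \<in> C)"

lemma mal_sub: "malnormal G M \<Longrightarrow> subgroup M G" by (simp add: malnormal_def)
lemma mal_G: "malnormal G M \<Longrightarrow> M \<subseteq> carrier G" using mal_sub subgroup.subset by blast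

lemma mal_TI: assumes "malnormal G M" shows "TI (carrier G) M"
  unfolding TI_def
proof (intro ballI impI)
  fix g z assume g: "g \<in> carrier G" and z: "z \<in> M" "z \<noteq> \<one>" "g \<otimes> z \<otimes> inv g \<in> M"
  show "g \<in> M"
  proof (rule ccontr)
    assume "g \<notin> M"
    hence "inv g \<notin> M" using mal_sub[OF assms] g by (metis inv_inv subgroup.m_inv_closed)
    hence e: "M \<inter> conjg G M (inv g) = {\<one>}" using assms g unfolding malnormal_def by simp
    have zG: "z \<in> carrier G" using z mal_G[OF assms] by blast
    have "g \<otimes> z \<otimes> inv g \<in> conjg G M (inv g)"
      using conj_mem_iff[OF mal_G[OF assms], of "inv g" "g \<otimes> z \<otimes> inv g"] g zG z conj_back2[OF g zG] by simp
    hence "g \<otimes> z \<otimes> inv g = \<one>" using e z by blast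
    thus False using conj_one_iff[OF g zG] z by simp
  qed
qed

lemma mal_U: assumes M: "malnormal G M" and G: "a \<in> carrier G" "b \<in> carrier G" "y \<in> carrier G"
  and y1: "y \<noteq> \<one>" and ma: "a \<otimes> y \<otimes> inv a \<in> M" and mb: "b \<otimes> y \<otimes> inv b \<in> M"
  shows "a \<otimes> inv b \<in> M"
proof -
  have z1: "b \<otimes> y \<otimes> inv b \<noteq> \<one>" using conj_one_iff[OF G(2,3)] y1 by simp
  have e: "(a \<otimes> inv b) \<otimes> b = a" using G by (simp add: m_assoc)
  have "(a \<otimes> inv b) \<otimes> (b \<otimes> y \<otimes> inv b) \<otimes> inv (a \<otimes> inv b) = a \<otimes> y \<otimes> inv a"
    using conj_comp[of "a \<otimes> inv b" b y] e G by simp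
  thus ?thesis using mal_TI[OF M] G mb z1 ma unfolding TI_def by (metis inv_closed m_closed)
qed

lemma TI_int: "TI K A \<Longrightarrow> TI K B \<Longrightarrow> TI K (A \<inter> B)"
  unfolding TI_def by blast

lemma TI_restrict: "TI K A \<Longrightarrow> K' \<subseteq> K \<Longrightarrow> TI K' (A \<inter> K')"
  unfolding TI_def by blast

lemma conjg_mono: "X \<subseteq> Y \<Longrightarrow> conjg G X g \<subseteq> conjg G Y g"
  unfolding conjg_def by blast

lemma one_in_conjg: assumes M: "subgroup M G" and g: "g \<in> carrier G" shows "\<one> \<in> conjg G M g"
  using conj_mem_iff[OF subgroup.subset[OF M] g, of \<one>] subgroup.one_closed[OF M] g by simp

lemma conjg_subgroup: assumes M: "subgroup M G" and g: "g \<in> carrier G" shows "subgroup (conjg G M g) G"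
proof (rule subgroupI)
  have MG: "M \<subseteq> carrier G" using M subgroup.subset by blast
  show "conjg G M g \<subseteq> carrier G" by (rule conjg_sub[OF MG g])
  show "conjg G M g \<noteq> {}" using one_in_conjg[OF M g] by blast
  fix a assume "a \<in> conjg G M g"
  hence a: "a \<in> carrier G" "g \<otimes> a \<otimes> inv g \<in> M" using conj_mem_iff[OF MG g] by auto
  have "inv (g \<otimes> a \<otimes> inv g) = g \<otimes> inv a \<otimes> inv g" using a g by (simp add: inv_mult_group m_assoc)
  hence "g \<otimes> inv a \<otimes> inv g \<in> M" using a M by (metis subgroup.m_inv_closed)
  thus "inv a \<in> conjg G M g" using conj_mem_iff[OF MG g] a by simp
next
  have MG: "M \<subseteq> carrier G" using M subgroup.subset by blast
  fix a b assume "a \<in> conjg G M g" "b \<in> conjg G M g"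
  hence a: "a \<in> carrier G" "g \<otimes> a \<otimes> inv g \<in> M" and b: "b \<in> carrier G" "g \<otimes> b \<otimes> inv g \<in> M"
    using conj_mem_iff[OF MG g] by auto
  have "g \<otimes> (a \<otimes> b) \<otimes> inv g = (g \<otimes> a \<otimes> inv g) \<otimes> (g \<otimes> b \<otimes> inv g)" using a b g by (simp add: m_assoc)
  hence "g \<otimes> (a \<otimes> b) \<otimes> inv g \<in> M" using a b M by (simp add: subgroup.m_closed)
  thus "a \<otimes> b \<in> conjg G M g" using conj_mem_iff[OF MG g] a b by simp
qed

lemma conjg_mal: assumes M: "malnormal G M" and a: "a \<in> carrier G" shows "malnormal G (conjg G M a)"
  unfolding malnormal_def
proof (intro conjI ballI)
  have MG: "M \<subseteq> carrier G" by (rule mal_G[OF M])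
  show "subgroup (conjg G M a) G" by (rule conjg_subgroup[OF mal_sub[OF M] a])
  fix g assume g: "g \<in> carrier G - conjg G M a"
  have gG: "g \<in> carrier G" using g by blast
  have Ma: "conjg G M a \<subseteq> carrier G" by (rule conjg_sub[OF MG a])
  show "conjg G M a \<inter> conjg G (conjg G M a) g = {\<one>}"
  proof (intro equalityI subsetI)
    fix y assume y: "y \<in> conjg G M a \<inter> conjg G (conjg G M a) g"
    have y1: "y \<in> carrier G" "a \<otimes> y \<otimes> inv a \<in> M" using y conj_mem_iff[OF MG a] by auto
    have "y \<in> conjg G M (a \<otimes> g)" using y conjg_conjg[OF MG a gG] by simp
    hence y2: "(a \<otimes> g) \<otimes> y \<otimes> inv (a \<otimes> g) \<in> M" using conj_mem_iff[OF MG m_closed[OF a gG]] by simp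
    show "y \<in> {\<one>}"
    proof (rule ccontr)
      assume "y \<notin> {\<one>}"
      hence "(a \<otimes> g) \<otimes> inv a \<in> M" using mal_U[OF M m_closed[OF a gG] a y1(1) _ y2 y1(2)] by simp
      hence "a \<otimes> g \<otimes> inv a \<in> M" by simp
      hence "g \<in> conjg G M a" using conj_mem_iff[OF MG a] gG by simp
      thus False using g by blast
    qed
  next
    fix y assume "y \<in> {\<one>}"
    moreover have "\<one> \<in> conjg G M a" by (rule one_in_conjg[OF mal_sub[OF M] a])
    moreover have "\<one> \<in> conjg G (conjg G M a) g" by (rule one_in_conjg[OF conjg_subgroup[OF mal_sub[OF M] a] gG])
    ultimately show "y \<in> conjg G M a \<inter> conjg G (conjg G M a) g" by blast
  qed
qed


lemma alg1: assumes "g \<in> carrier G" "h1 \<in> carrier G" "h2 \<in> carrier G" "a \<in> carrier G"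
  shows "(g \<otimes> (h1 \<otimes> inv h2)) \<otimes> inv a = (g \<otimes> h1) \<otimes> inv (a \<otimes> h2)"
  using assms by (simp add: m_assoc inv_mult_group)

lemma conj_nontriv: assumes M: "M \<subseteq> carrier G" and g: "g \<in> carrier G" and ne: "M - {\<one>} \<noteq> {}"
  shows "conjg G M g - {\<one>} \<noteq> {}"
proof -
  obtain m where m: "m \<in> M" "m \<noteq> \<one>" using ne by blast
  have mG: "m \<in> carrier G" using m M by blast
  have "inv g \<otimes> m \<otimes> g \<in> conjg G M g" unfolding conjg_def using m by blast
  moreover have "inv g \<otimes> m \<otimes> g \<noteq> \<one>" using conj_one_iff[of "inv g" m] g mG m by simp
  ultimately show ?thesis by blast
qed


lemma rcos_eq_iff: assumes C: "subgroup C G" and a: "a \<in> carrier G" and b: "b \<in> carrier G"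
  shows "C #> a = C #> b \<longleftrightarrow> a \<otimes> inv b \<in> C"
proof
  have CG: "C \<subseteq> carrier G" using C subgroup.subset by blast
  assume "C #> a = C #> b"
  moreover have "a \<in> C #> a" using rcos_mem_iff[OF CG a] a C subgroup.one_closed by fastforce
  ultimately show "a \<otimes> inv b \<in> C" using rcos_mem_iff[OF CG b] by simp
next
  have CG: "C \<subseteq> carrier G" using C subgroup.subset by blast
  assume ab: "a \<otimes> inv b \<in> C"
  have ba: "b \<otimes> inv a \<in> C" using subgroup.m_inv_closed[OF C ab] a b by (simp add: inv_mult_group)
  show "C #> a = C #> b"
  proof (intro equalityI subsetI)
    fix y assume "y \<in> C #> a"
    hence y: "y \<in> carrier G" "y \<otimes> inv a \<in> C" using rcos_mem_iff[OF CG a] by auto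
    have "(y \<otimes> inv a) \<otimes> (a \<otimes> inv b) = y \<otimes> inv b" using y a b by (simp add: m_assoc)
    hence "y \<otimes> inv b \<in> C" using subgroup.m_closed[OF C y(2) ab] by simp
    thus "y \<in> C #> b" using rcos_mem_iff[OF CG b] y by simp
  next
    fix y assume "y \<in> C #> b"
    hence y: "y \<in> carrier G" "y \<otimes> inv b \<in> C" using rcos_mem_iff[OF CG b] by auto
    have "(y \<otimes> inv b) \<otimes> (b \<otimes> inv a) = y \<otimes> inv a" using y a b by (simp add: m_assoc)
    hence "y \<otimes> inv a \<in> C" using subgroup.m_closed[OF C y(2) ba] by simp
    thus "y \<in> C #> a" using rcos_mem_iff[OF CG a] y by simp
  qed
qed

lemma rcos_disj: assumes C: "subgroup C G" and a: "a \<in> carrier G" and b: "b \<in> carrier G"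
  and ne: "C #> a \<noteq> C #> b" shows "(C #> a) \<inter> (C #> b) = {}"
proof (rule ccontr)
  have CG: "C \<subseteq> carrier G" using C subgroup.subset by blast
  assume "(C #> a) \<inter> (C #> b) \<noteq> {}"
  then obtain y where y: "y \<in> carrier G" "y \<otimes> inv a \<in> C" "y \<otimes> inv b \<in> C"
    using rcos_mem_iff[OF CG a] rcos_mem_iff[OF CG b] by blast
  have "inv (y \<otimes> inv a) \<otimes> (y \<otimes> inv b) = a \<otimes> inv b" using y a b by (simp add: m_assoc inv_mult_group)
  hence "a \<otimes> inv b \<in> C" using subgroup.m_closed[OF C subgroup.m_inv_closed[OF C y(2)] y(3)] by simp
  thus False using ne rcos_eq_iff[OF C a b] by simp
qed

lemma conjg_coset: assumes C: "subgroup C G" and a: "a \<in> carrier G" and b: "b \<in> carrier G"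
  and ab: "a \<otimes> inv b \<in> C" shows "conjg G C a = conjg G C b"
proof -
  have CG: "C \<subseteq> carrier G" using C subgroup.subset by blast
  have ba: "b \<otimes> inv a \<in> C" using subgroup.m_inv_closed[OF C ab] a b by (simp add: inv_mult_group)
  show ?thesis
  proof (intro equalityI subsetI)
    fix x assume "x \<in> conjg G C a"
    hence x: "x \<in> carrier G" "a \<otimes> x \<otimes> inv a \<in> C" using conj_mem_iff[OF CG a] by auto
    have "b \<otimes> x \<otimes> inv b \<in> C" by (rule transport[OF C b a x(1) ba x(2)])
    thus "x \<in> conjg G C b" using conj_mem_iff[OF CG b] x by simp
  next
    fix x assume "x \<in> conjg G C b"
    hence x: "x \<in> carrier G" "b \<otimes> x \<otimes> inv b \<in> C" using conj_mem_iff[OF CG b] by auto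
    have "a \<otimes> x \<otimes> inv a \<in> C" by (rule transport[OF C a b x(1) ab x(2)])
    thus "x \<in> conjg G C a" using conj_mem_iff[OF CG a] x by simp
  qed
qed

lemma card_conjg: assumes "C \<subseteq> carrier G" "a \<in> carrier G" shows "card (conjg G C a) = card C"
  unfolding conjg_def
proof (rule card_image, rule inj_onI)
  fix x y assume xy: "x \<in> C" "y \<in> C" "inv a \<otimes> x \<otimes> a = inv a \<otimes> y \<otimes> a"
  have "x \<in> carrier G" "y \<in> carrier G" using xy assms by auto
  thus "x = y" using xy(3) assms(2) by simp
qed

lemma card_rcos: assumes "C \<subseteq> carrier G" "a \<in> carrier G" shows "card (C #> a) = card C"
proof -
  have e: "C #> a = (\<lambda>x. x \<otimes> a) ` C" unfolding r_coset_def by auto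
  show ?thesis unfolding e
  proof (rule card_image, rule inj_onI)
    fix x y assume xy: "x \<in> C" "y \<in> C" "x \<otimes> a = y \<otimes> a"
    have "x \<in> carrier G" "y \<in> carrier G" using xy assms by auto
    thus "x = y" using xy(3) assms(2) by simp
  qed
qed

end

locale rg = group G for G (structure) +
  fixes D :: "nat \<Rightarrow> 'a list set set" and rk :: "'a list set \<Rightarrow> nat"
  assumes RU: "ranked_universe (carrier G) D rk"
  and MUL: "{[x, y, x \<otimes> y] | x y. x \<in> carrier G \<and> y \<in> carrier G} \<in> D 3"
begin

lemmas RU' = RU[unfolded ranked_universe_def]

lemma ax_sub: "X \<in> D n \<Longrightarrow> X \<subseteq> Mn (carrier G) n" using RU'[THEN conjunct2, THEN conjunct1] by blast
lemma ax_full: "Mn (carrier G) n \<in> D n" using RU'[THEN conjunct2, THEN conjunct2, THEN conjunct1, rule_format] by blast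
lemma ax_compl: "X \<in> D n \<Longrightarrow> Mn (carrier G) n - X \<in> D n" using RU'[THEN conjunct2, THEN conjunct2, THEN conjunct2, THEN conjunct1, rule_format] by blast
lemma ax_int: "X \<in> D n \<Longrightarrow> Y \<in> D n \<Longrightarrow> X \<inter> Y \<in> D n" using RU'[THEN conjunct2, THEN conjunct2, THEN conjunct2, THEN conjunct2, THEN conjunct1, rule_format] by blast
lemma ax_diag: "i < n \<Longrightarrow> j < n \<Longrightarrow> {xs \<in> Mn (carrier G) n. xs ! i = xs ! j} \<in> D n"
  using RU'[THEN conjunct2, THEN conjunct2, THEN conjunct2, THEN conjunct2, THEN conjunct2, THEN conjunct1, rule_format] by blast
lemma ax_prod: "X \<in> D n \<Longrightarrow> Y \<in> D m \<Longrightarrow> {xs @ ys | xs ys. xs \<in> X \<and> ys \<in> Y} \<in> D (n + m)"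
  using RU'[THEN conjunct2, THEN conjunct2, THEN conjunct2, THEN conjunct2, THEN conjunct2, THEN conjunct2, THEN conjunct1, rule_format] by blast
lemma ax_proj: "X \<in> D (n + m) \<Longrightarrow> take n ` X \<in> D n"
  using RU'[THEN conjunct2, THEN conjunct2, THEN conjunct2, THEN conjunct2, THEN conjunct2, THEN conjunct2, THEN conjunct2, THEN conjunct2, THEN conjunct1, rule_format] by blast
lemma ax_fib: "X \<in> D (n + m) \<Longrightarrow> a \<in> Mn (carrier G) n \<Longrightarrow> {ys. a @ ys \<in> X} \<in> D m"
  using RU'[THEN conjunct2, THEN conjunct2, THEN conjunct2, THEN conjunct2, THEN conjunct2, THEN conjunct2, THEN conjunct2, THEN conjunct2, THEN conjunct2, THEN conjunct1, rule_format] by blast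
lemma ax_mono: assumes "A \<in> D n" "A \<noteq> {}" shows
       "(Suc k \<le> rk A \<longleftrightarrow>
         (\<exists>S :: nat \<Rightarrow> 'a list set. (\<forall>i. S i \<in> D n \<and> S i \<subseteq> A \<and> S i \<noteq> {} \<and> k \<le> rk (S i)) \<and>
              (\<forall>i j. i \<noteq> j \<longrightarrow> S i \<inter> S j = {})))"
  using assms by (rule RU'[THEN conjunct2, THEN conjunct2, THEN conjunct2, THEN conjunct2, THEN conjunct2, THEN conjunct2, THEN conjunct2, THEN conjunct2, THEN conjunct2, THEN conjunct2, THEN conjunct1, rule_format])
lemma ax_defrk: "def_fun D n m A B f \<Longrightarrow>
       {b \<in> B. fib A f b \<noteq> {} \<and> rk (fib A f b) = k} \<in> D m"
  using RU'[THEN conjunct2, THEN conjunct2, THEN conjunct2, THEN conjunct2, THEN conjunct2, THEN conjunct2, THEN conjunct2, THEN conjunct2, THEN conjunct2, THEN conjunct2, THEN conjunct2, THEN conjunct1, rule_format] by blast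
lemma ax_add: "def_fun D n m A B f \<Longrightarrow> f ` A = B \<Longrightarrow> A \<noteq> {} \<Longrightarrow>
       (\<forall>b\<in>B. rk (fib A f b) = k) \<Longrightarrow> rk A = rk B + k"
  using RU'[THEN conjunct2, THEN conjunct2, THEN conjunct2, THEN conjunct2, THEN conjunct2, THEN conjunct2, THEN conjunct2, THEN conjunct2, THEN conjunct2, THEN conjunct2, THEN conjunct2, THEN conjunct2, THEN conjunct1, rule_format] by blast

definition dfn :: "nat \<Rightarrow> ('a list \<Rightarrow> bool) \<Rightarrow> bool" where
  "dfn n P \<longleftrightarrow> {xs \<in> Mn (carrier G) n. P xs} \<in> D n"

lemma Mn_len: "xs \<in> Mn A n \<Longrightarrow> length xs = n" by (simp add: Mn_def)
lemma Mn_nth: "xs \<in> Mn A n \<Longrightarrow> i < n \<Longrightarrow> xs ! i \<in> A" by (auto simp: Mn_def)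

lemma d_true: "dfn n (\<lambda>_. True)" using ax_full by (simp add: dfn_def)
lemma d_not: assumes "dfn n P" shows "dfn n (\<lambda>xs. \<not> P xs)"
proof -
  have e: "{xs \<in> Mn (carrier G) n. \<not> P xs} = Mn (carrier G) n - {xs \<in> Mn (carrier G) n. P xs}" by blast
  show ?thesis unfolding dfn_def e using assms unfolding dfn_def by (rule ax_compl)
qed
lemma d_and: assumes "dfn n P" "dfn n Q" shows "dfn n (\<lambda>xs. P xs \<and> Q xs)"
proof -
  have e: "{xs \<in> Mn (carrier G) n. P xs \<and> Q xs} = {xs \<in> Mn (carrier G) n. P xs} \<inter> {xs \<in> Mn (carrier G) n. Q xs}" by blast
  show ?thesis unfolding dfn_def e using assms unfolding dfn_def by (rule ax_int)
qed
lemma d_or: "dfn n P \<Longrightarrow> dfn n Q \<Longrightarrow> dfn n (\<lambda>xs. P xs \<or> Q xs)"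
  using d_not[OF d_and[OF d_not d_not], of n P Q] by simp
lemma d_imp: "dfn n P \<Longrightarrow> dfn n Q \<Longrightarrow> dfn n (\<lambda>xs. P xs \<longrightarrow> Q xs)"
  using d_or[OF d_not] by simp
lemma d_eq: "i < n \<Longrightarrow> j < n \<Longrightarrow> dfn n (\<lambda>xs. xs ! i = xs ! j)"
  unfolding dfn_def by (rule ax_diag)

lemma d_ex: assumes "dfn (Suc n) P" shows "dfn n (\<lambda>xs. \<exists>y\<in>carrier G. P (xs @ [y]))"
proof -
  have "take n ` {xs \<in> Mn (carrier G) (n + 1). P xs} \<in> D n"
    using assms unfolding dfn_def by (intro ax_proj[where m=1]) simp
  moreover have "take n ` {xs \<in> Mn (carrier G) (n + 1). P xs} = {xs \<in> Mn (carrier G) n. \<exists>y\<in>carrier G. P (xs @ [y])}"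
  proof (intro equalityI subsetI)
    fix xs assume "xs \<in> take n ` {xs \<in> Mn (carrier G) (n + 1). P xs}"
    then obtain zs where zs: "zs \<in> Mn (carrier G) (n+1)" "P zs" "xs = take n zs" by blast
    have len: "length zs = Suc n" using zs(1) by (simp add: Mn_def)
    hence e: "take n zs @ [zs ! n] = zs" by (simp add: take_Suc_conv_app_nth[symmetric])
    have y: "zs ! n \<in> carrier G" using zs(1) len unfolding Mn_def by (simp add: subset_iff)
    have t: "take n zs \<in> Mn (carrier G) n" using zs(1) len unfolding Mn_def by (auto dest: in_set_takeD)
    have p: "P (take n zs @ [zs ! n])" using zs(2) e by simp
    show "xs \<in> {xs \<in> Mn (carrier G) n. \<exists>y\<in>carrier G. P (xs @ [y])}" using y t p zs(3) by blast
  next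
    fix xs assume "xs \<in> {xs \<in> Mn (carrier G) n. \<exists>y\<in>carrier G. P (xs @ [y])}"
    then obtain y where "xs \<in> Mn (carrier G) n" "y \<in> carrier G" "P (xs @ [y])" by auto
    thus "xs \<in> take n ` {xs \<in> Mn (carrier G) (n + 1). P xs}"
      by (intro image_eqI[of _ _ "xs @ [y]"]) (auto simp: Mn_def)
  qed
  ultimately show ?thesis by (simp add: dfn_def)
qed

lemma d_sub:
  assumes X: "X \<in> D k" and s: "\<forall>i<k. \<sigma> i < n"
  shows "dfn n (\<lambda>xs. map (\<lambda>i. xs ! \<sigma> i) [0..<k] \<in> X)"
proof -
  define Q where "Q j zs \<longleftrightarrow> drop n zs \<in> X \<and> (\<forall>i<j. zs ! (n+i) = zs ! (\<sigma> i))" for j zs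
  have base: "dfn (n+k) (Q 0)"
  proof -
    have "{xs @ ys | xs ys. xs \<in> Mn (carrier G) n \<and> ys \<in> X} \<in> D (n+k)" by (rule ax_prod[OF ax_full X])
    moreover have "{xs @ ys | xs ys. xs \<in> Mn (carrier G) n \<and> ys \<in> X} = {zs \<in> Mn (carrier G) (n+k). Q 0 zs}"
    proof (intro equalityI subsetI)
      fix zs assume "zs \<in> {xs @ ys | xs ys. xs \<in> Mn (carrier G) n \<and> ys \<in> X}"
      then obtain xs ys where "zs = xs @ ys" "xs \<in> Mn (carrier G) n" "ys \<in> X" by auto
      moreover have "ys \<in> Mn (carrier G) k" using ax_sub[OF X] \<open>ys \<in> X\<close> by auto
      ultimately show "zs \<in> {zs \<in> Mn (carrier G) (n+k). Q 0 zs}" by (auto simp: Mn_def Q_def)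
    next
      fix zs assume "zs \<in> {zs \<in> Mn (carrier G) (n+k). Q 0 zs}"
      hence "zs = take n zs @ drop n zs" "take n zs \<in> Mn (carrier G) n" "drop n zs \<in> X"
        by (auto simp: Mn_def Q_def dest: in_set_takeD)
      thus "zs \<in> {xs @ ys | xs ys. xs \<in> Mn (carrier G) n \<and> ys \<in> X}" by blast
    qed
    ultimately show ?thesis by (simp add: dfn_def)
  qed
  have step: "j \<le> k \<Longrightarrow> dfn (n+k) (Q j)" for j
  proof (induction j)
    case 0 thus ?case using base by simp
  next
    case (Suc j)
    have "\<sigma> j < n" using Suc s by auto
    hence "dfn (n+k) (\<lambda>zs. Q j zs \<and> zs ! (n+j) = zs ! (\<sigma> j))"
      using Suc by (intro d_and d_eq) auto
    moreover have "(\<lambda>zs. Q j zs \<and> zs ! (n+j) = zs ! (\<sigma> j)) = Q (Suc j)"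
      by (auto simp: Q_def less_Suc_eq)
    ultimately show ?case by simp
  qed
  have "take n ` {zs \<in> Mn (carrier G) (n+k). Q k zs} \<in> D n"
    using step[of k] unfolding dfn_def by (intro ax_proj) simp
  moreover have "take n ` {zs \<in> Mn (carrier G) (n+k). Q k zs} = {xs \<in> Mn (carrier G) n. map (\<lambda>i. xs ! \<sigma> i) [0..<k] \<in> X}"
  proof (intro equalityI subsetI)
    fix xs assume "xs \<in> take n ` {zs \<in> Mn (carrier G) (n+k). Q k zs}"
    then obtain zs where zs: "zs \<in> Mn (carrier G) (n+k)" "Q k zs" "xs = take n zs" by auto
    have "map (\<lambda>i. xs ! \<sigma> i) [0..<k] = drop n zs"
      using zs s by (intro nth_equalityI) (auto simp: Mn_def Q_def)
    thus "xs \<in> {xs \<in> Mn (carrier G) n. map (\<lambda>i. xs ! \<sigma> i) [0..<k] \<in> X}"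
      using zs by (auto simp: Mn_def Q_def dest: in_set_takeD)
  next
    fix xs assume xs: "xs \<in> {xs \<in> Mn (carrier G) n. map (\<lambda>i. xs ! \<sigma> i) [0..<k] \<in> X}"
    define zs where "zs = xs @ map (\<lambda>i. xs ! \<sigma> i) [0..<k]"
    have "zs \<in> Mn (carrier G) (n+k)" using xs s by (auto simp: Mn_def zs_def)
    moreover have "Q k zs" using xs s by (auto simp: Q_def zs_def Mn_def nth_append)
    moreover have "xs = take n zs" using xs by (auto simp: zs_def Mn_def)
    ultimately show "xs \<in> take n ` {zs \<in> Mn (carrier G) (n+k). Q k zs}" by blast
  qed
  ultimately show ?thesis by (simp add: dfn_def)
qed


lemma Mn1: "xs \<in> Mn A (Suc 0) \<longleftrightarrow> (\<exists>x\<in>A. xs = [x])"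
  unfolding Mn_def by (auto simp: length_Suc_conv)
lemma Mn2: "xs \<in> Mn A 2 \<longleftrightarrow> (\<exists>x\<in>A. \<exists>y\<in>A. xs = [x, y])"
  unfolding Mn_def by (auto simp: length_Suc_conv numeral_2_eq_2)
lemma Mn3: "xs \<in> Mn A 3 \<longleftrightarrow> (\<exists>x\<in>A. \<exists>y\<in>A. \<exists>z\<in>A. xs = [x, y, z])"
  unfolding Mn_def by (auto simp: length_Suc_conv numeral_3_eq_3)

lemma d_cong: assumes "dfn n P" "\<And>xs. xs \<in> Mn (carrier G) n \<Longrightarrow> P xs = Q xs" shows "dfn n Q"
proof -
  have "{xs \<in> Mn (carrier G) n. P xs} = {xs \<in> Mn (carrier G) n. Q xs}" using assms(2) by blast
  thus ?thesis using assms(1) unfolding dfn_def by simp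
qed

lemma single1: assumes "a \<in> carrier G" shows "{[a]} \<in> D 1"
proof -
  have "{xs \<in> Mn (carrier G) (1+1). xs ! 0 = xs ! 1} \<in> D (1+1)" by (rule ax_diag) auto
  hence "{ys. [a] @ ys \<in> {xs \<in> Mn (carrier G) (1+1). xs ! 0 = xs ! 1}} \<in> D 1"
    by (rule ax_fib) (use assms in \<open>simp add: Mn_def\<close>)
  moreover have "{ys. [a] @ ys \<in> {xs \<in> Mn (carrier G) (1+1). xs ! 0 = xs ! 1}} = {[a]}"
  proof (intro equalityI subsetI)
    fix ys assume "ys \<in> {ys. [a] @ ys \<in> {xs \<in> Mn (carrier G) (1+1). xs ! 0 = xs ! 1}}"
    hence "length ys = 1" "ys ! 0 = a" unfolding Mn_def by auto
    thus "ys \<in> {[a]}" by (cases ys) auto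
  qed (use assms in \<open>simp add: Mn_def\<close>)
  ultimately show ?thesis by simp
qed

lemma d_param: assumes "a \<in> carrier G" "i < n" shows "dfn n (\<lambda>xs. xs ! i = a)"
proof -
  have "dfn n (\<lambda>xs. map (\<lambda>t. xs ! ((\<lambda>_. i) t)) [0..<1] \<in> {[a]})"
    by (rule d_sub[OF single1[OF assms(1)]]) (use assms in auto)
  thus ?thesis by (rule d_cong) simp
qed

lemma d_mul: assumes "i < n" "j < n" "l < n" shows "dfn n (\<lambda>xs. xs ! l = xs ! i \<otimes> xs ! j)"
proof -
  define \<sigma> where "\<sigma> t = (if t = 0 then i else if t = 1 then j else l)" for t :: nat
  have "dfn n (\<lambda>xs. map (\<lambda>t. xs ! \<sigma> t) [0..<3] \<in> {[x, y, x \<otimes> y] | x y. x \<in> carrier G \<and> y \<in> carrier G})"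
    by (rule d_sub[OF MUL]) (use assms in \<open>auto simp: \<sigma>_def\<close>)
  note d = this
  have e: "map (\<lambda>t. xs ! \<sigma> t) [0..<3] = [xs ! i, xs ! j, xs ! l]" for xs
    by (simp add: \<sigma>_def numeral_3_eq_3 upt_rec)
  from d show ?thesis
  proof (rule d_cong)
    fix xs assume "xs \<in> Mn (carrier G) n"
    hence "xs ! i \<in> carrier G" "xs ! j \<in> carrier G" using assms by (auto simp: Mn_def)
    thus "(map (\<lambda>t. xs ! \<sigma> t) [0..<3] \<in> {[x, y, x \<otimes> y] | x y. x \<in> carrier G \<and> y \<in> carrier G}) = (xs ! l = xs ! i \<otimes> xs ! j)"
      unfolding e by auto
  qed
qed

lemma d_in1: assumes "definable1 D S" "i < n" shows "dfn n (\<lambda>xs. xs ! i \<in> S)"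
proof -
  have "dfn n (\<lambda>xs. map (\<lambda>t. xs ! ((\<lambda>_. i) t)) [0..<1] \<in> (\<lambda>x. [x]) ` S)"
    by (rule d_sub) (use assms in \<open>auto simp: definable1_def\<close>)
  thus ?thesis by (rule d_cong) auto
qed

lemma d_in2: assumes "X \<in> D 2" "i < n" "j < n" shows "dfn n (\<lambda>xs. [xs ! i, xs ! j] \<in> X)"
proof -
  define \<sigma> where "\<sigma> t = (if t = 0 then i else j)" for t :: nat
  have "dfn n (\<lambda>xs. map (\<lambda>t. xs ! \<sigma> t) [0..<2] \<in> X)"
    by (rule d_sub[OF assms(1)]) (use assms in \<open>auto simp: \<sigma>_def\<close>)
  note d = this
  have e: "map (\<lambda>t. xs ! \<sigma> t) [0..<2] = [xs ! i, xs ! j]" for xs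
    by (simp add: \<sigma>_def numeral_2_eq_2 upt_rec)
  from d show ?thesis by (rule d_cong) (simp only: e)
qed

lemma def1_of: assumes "dfn 1 (\<lambda>xs. P (xs ! 0))" shows "definable1 D {x \<in> carrier G. P x}"
proof -
  have "(\<lambda>x. [x]) ` {x \<in> carrier G. P x} = {xs \<in> Mn (carrier G) 1. P (xs ! 0)}"
    by (auto simp: Mn1)
  thus ?thesis using assms unfolding dfn_def definable1_def by simp
qed

lemma D2_of: assumes "dfn 2 (\<lambda>xs. P (xs ! 0) (xs ! 1))"
  shows "{[x, y] | x y. x \<in> carrier G \<and> y \<in> carrier G \<and> P x y} \<in> D 2"
proof -
  have "{[x, y] | x y. x \<in> carrier G \<and> y \<in> carrier G \<and> P x y} = {xs \<in> Mn (carrier G) 2. P (xs ! 0) (xs ! 1)}"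
    by (auto simp: Mn2)
  thus ?thesis using assms unfolding dfn_def by simp
qed

lemma D3_of: assumes "dfn 3 (\<lambda>xs. P (xs ! 0) (xs ! 1) (xs ! 2))"
  shows "{[x, y, z] | x y z. x \<in> carrier G \<and> y \<in> carrier G \<and> z \<in> carrier G \<and> P x y z} \<in> D 3"
proof -
  have "{[x, y, z] | x y z. x \<in> carrier G \<and> y \<in> carrier G \<and> z \<in> carrier G \<and> P x y z} = {xs \<in> Mn (carrier G) 3. P (xs ! 0) (xs ! 1) (xs ! 2)}"
    by (auto simp: Mn3)
  thus ?thesis using assms unfolding dfn_def by simp
qed

lemma def1_D1: "definable1 D S \<Longrightarrow> (\<lambda>x. [x]) ` S \<in> D 1" by (simp add: definable1_def)
lemma def1_sub: "definable1 D S \<Longrightarrow> S \<subseteq> carrier G"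
  using ax_sub[of "(\<lambda>x. [x]) ` S" 1] unfolding definable1_def Mn_def by auto


lemma D_diff: assumes "A \<in> D n" "B \<in> D n" shows "A - B \<in> D n"
proof -
  have "A - B = A \<inter> (Mn (carrier G) n - B)" using ax_sub[OF assms(1)] by blast
  thus ?thesis using assms by (simp add: ax_int ax_compl)
qed
lemma D_un: assumes "A \<in> D n" "B \<in> D n" shows "A \<union> B \<in> D n"
proof -
  have "A \<union> B = Mn (carrier G) n - ((Mn (carrier G) n - A) \<inter> (Mn (carrier G) n - B))"
    using ax_sub[OF assms(1)] ax_sub[OF assms(2)] by blast
  thus ?thesis using assms by (simp add: ax_int ax_compl)
qed

definition rk1 :: "'a set \<Rightarrow> nat" where "rk1 S = rk ((\<lambda>x. [x]) ` S)"

lemma mono_intro: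
  fixes T :: "nat \<Rightarrow> 'a list set"
  assumes "A \<in> D n" "\<And>i. T i \<in> D n" "\<And>i. T i \<subseteq> A" "\<And>i. T i \<noteq> {}" "\<And>i. k \<le> rk (T i)"
    "\<And>i j. i \<noteq> j \<Longrightarrow> T i \<inter> T j = {}"
  shows "Suc k \<le> rk A"
proof -
  have "A \<noteq> {}" using assms(3)[of 0] assms(4)[of 0] by blast
  show ?thesis unfolding ax_mono[OF assms(1) \<open>A \<noteq> {}\<close>]
    by (intro exI[of _ T] conjI allI impI) (simp_all add: assms)
qed

lemma mono_elim:
  assumes "A \<in> D n" "A \<noteq> {}" "Suc k \<le> rk A"
  shows "\<exists>T :: nat \<Rightarrow> 'a list set. (\<forall>i. T i \<in> D n \<and> T i \<subseteq> A \<and> T i \<noteq> {} \<and> k \<le> rk (T i)) \<and>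
    (\<forall>i j. i \<noteq> j \<longrightarrow> T i \<inter> T j = {})"
  using assms(3) unfolding ax_mono[OF assms(1,2)] .

lemma R0: assumes "A \<in> D n" "finite A" "A \<noteq> {}" shows "rk A = 0"
proof (rule ccontr)
  assume "rk A \<noteq> 0" hence "Suc 0 \<le> rk A" by simp
  then obtain S :: "nat \<Rightarrow> 'a list set" where S0: "\<forall>i. S i \<in> D n \<and> S i \<subseteq> A \<and> S i \<noteq> {} \<and> 0 \<le> rk (S i)"
    "\<forall>i j. i \<noteq> j \<longrightarrow> S i \<inter> S j = {}"
    using mono_elim[OF assms(1,3) \<open>Suc 0 \<le> rk A\<close>] by blast
  have S: "\<And>i. S i \<in> D n" "\<And>i. S i \<subseteq> A" "\<And>i. S i \<noteq> {}" "\<And>i. 0 \<le> rk (S i)"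
    "\<And>i j. i \<noteq> j \<Longrightarrow> S i \<inter> S j = {}" using S0 by simp_all
  have "inj S"
  proof (rule injI)
    fix i j assume e: "S i = S j"
    show "i = j"
    proof (rule ccontr)
      assume "i \<noteq> j" hence "S i \<inter> S j = {}" by (rule S(5))
      with e S(3)[of i] show False by simp
    qed
  qed
  moreover have "range S \<subseteq> Pow A" using S(2) by auto
  hence "finite (range S)" by (rule finite_subset) (simp add: assms(2))
  ultimately have "finite (UNIV :: nat set)" using finite_imageD[of S UNIV] by simp
  thus False by simp
qed

lemma R1: assumes "A \<in> D n" "B \<in> D n" "A \<subseteq> B" "A \<noteq> {}" shows "rk A \<le> rk B"
proof (cases "rk A")
  case 0 thus ?thesis by simp
next
  case (Suc k)
  obtain S :: "nat \<Rightarrow> 'a list set" where S0: "\<forall>i. S i \<in> D n \<and> S i \<subseteq> A \<and> S i \<noteq> {} \<and> k \<le> rk (S i)"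
    "\<forall>i j. i \<noteq> j \<longrightarrow> S i \<inter> S j = {}"
    using mono_elim[OF assms(1,4), of k] Suc by auto
  have S: "\<And>i. S i \<in> D n" "\<And>i. S i \<subseteq> A" "\<And>i. S i \<noteq> {}" "\<And>i. k \<le> rk (S i)"
    "\<And>i j. i \<noteq> j \<Longrightarrow> S i \<inter> S j = {}" using S0 by simp_all
  have "Suc k \<le> rk B"
    using S(1,3,4,5) subset_trans[OF S(2) assms(3)] by (intro mono_intro[OF assms(2), of S])
  thus ?thesis using Suc by simp
qed

lemma R2: "A \<in> D n \<Longrightarrow> B \<in> D n \<Longrightarrow> A \<union> B \<noteq> {} \<Longrightarrow> k \<le> rk (A \<union> B) \<Longrightarrow>
   (A \<noteq> {} \<and> k \<le> rk A) \<or> (B \<noteq> {} \<and> k \<le> rk B)"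
proof (induction k arbitrary: A B)
  case 0 thus ?case by auto
next
  case (Suc k)
  have AB: "A \<union> B \<in> D n" using Suc.prems by (simp add: D_un)
  obtain S :: "nat \<Rightarrow> 'a list set" where S0: "\<forall>i. S i \<in> D n \<and> S i \<subseteq> A \<union> B \<and> S i \<noteq> {} \<and> k \<le> rk (S i)"
    "\<forall>i j. i \<noteq> j \<longrightarrow> S i \<inter> S j = {}"
    using mono_elim[OF AB Suc.prems(3,4)] by blast
  have S: "\<And>i. S i \<in> D n" "\<And>i. S i \<subseteq> A \<union> B" "\<And>i. S i \<noteq> {}" "\<And>i. k \<le> rk (S i)"
    "\<And>i j. i \<noteq> j \<Longrightarrow> S i \<inter> S j = {}" using S0 by simp_all
  define SA where "SA i = S i \<inter> A" for i
  define SB where "SB i = S i - A" for i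
  have SAD: "SA i \<in> D n" for i unfolding SA_def using S(1) Suc.prems(1) by (simp add: ax_int)
  have SBD: "SB i \<in> D n" for i unfolding SB_def using S(1) Suc.prems(1) by (simp add: D_diff)
  have alt: "(SA i \<noteq> {} \<and> k \<le> rk (SA i)) \<or> (SB i \<noteq> {} \<and> k \<le> rk (SB i))" for i
  proof -
    have eq: "SA i \<union> SB i = S i" unfolding SA_def SB_def by blast
    have "SA i \<union> SB i \<noteq> {}" "k \<le> rk (SA i \<union> SB i)" unfolding eq by (rule S(3), rule S(4))
    from Suc.IH[OF SAD SBD this] show ?thesis .
  qed
  define I where "I = {i::nat. SA i \<noteq> {} \<and> k \<le> rk (SA i)}"
  show ?case
  proof (cases "finite I")
    case False
    then obtain f :: "nat \<Rightarrow> nat" where f: "inj f" "range f \<subseteq> I" using infinite_countable_subset by blast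
    have "Suc k \<le> rk A"
    proof (rule mono_intro[OF Suc.prems(1), of "\<lambda>j. SA (f j)"])
      fix i j :: nat assume "i \<noteq> j"
      hence "f i \<noteq> f j" using f(1) by (auto dest: injD)
      thus "SA (f i) \<inter> SA (f j) = {}" using S(5) unfolding SA_def by blast
    qed (use f SAD in \<open>auto simp: I_def SA_def\<close>)
    moreover have "A \<noteq> {}" using f(2) unfolding I_def SA_def by blast
    ultimately show ?thesis by blast
  next
    case True
    hence "infinite (- I)" by (simp add: Compl_eq_Diff_UNIV infinite_UNIV_char_0 Diff_infinite_finite)
    then obtain f :: "nat \<Rightarrow> nat" where f: "inj f" "range f \<subseteq> - I" using infinite_countable_subset by blast
    have fB: "SB (f j) \<noteq> {} \<and> k \<le> rk (SB (f j))" for j using f(2) alt[of "f j"] unfolding I_def by blast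
    have "Suc k \<le> rk B"
    proof (rule mono_intro[OF Suc.prems(2), of "\<lambda>j. SB (f j)"])
      fix i j :: nat assume "i \<noteq> j"
      hence "f i \<noteq> f j" using f(1) by (auto dest: injD)
      thus "SB (f i) \<inter> SB (f j) = {}" using S(5) unfolding SB_def by blast
    next
      fix i show "SB (f i) \<subseteq> B" using S(2) unfolding SB_def by blast
    qed (use fB SBD in auto)
    moreover have "B \<noteq> {}" using fB[of 0] S(2) unfolding SB_def by blast
    ultimately show ?thesis by blast
  qed
qed

lemma D_single: assumes "xs \<in> Mn (carrier G) n" shows "{xs} \<in> D n"
proof -
  have "j \<le> n \<Longrightarrow> dfn n (\<lambda>ys. \<forall>i<j. ys ! i = xs ! i)" for j
  proof (induction j)
    case 0 show ?case using d_true by simp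
  next
    case (Suc j)
    have "xs ! j \<in> carrier G" using assms Suc.prems by (auto simp: Mn_def)
    hence "dfn n (\<lambda>ys. (\<forall>i<j. ys ! i = xs ! i) \<and> ys ! j = xs ! j)"
      using Suc by (intro d_and d_param) auto
    thus ?case by (rule d_cong) (auto simp: less_Suc_eq)
  qed
  hence "dfn n (\<lambda>ys. \<forall>i<n. ys ! i = xs ! i)" by simp
  moreover have "{ys \<in> Mn (carrier G) n. \<forall>i<n. ys ! i = xs ! i} = {xs}"
  proof (intro equalityI subsetI)
    fix ys assume ys: "ys \<in> {ys \<in> Mn (carrier G) n. \<forall>i<n. ys ! i = xs ! i}"
    have "length ys = length xs" using ys assms by (simp add: Mn_def)
    hence "ys = xs" using ys assms by (intro nth_equalityI) (simp_all add: Mn_def)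
    thus "ys \<in> {xs}" by simp
  qed (use assms in simp)
  ultimately show ?thesis unfolding dfn_def by simp
qed

lemma R4: assumes "def_fun D n m A B f" "f ` A = B" "inj_on f A" "A \<noteq> {}" shows "rk A = rk B"
proof -
  have "\<forall>b\<in>B. rk (fib A f b) = 0"
  proof
    fix b assume "b \<in> B"
    then obtain a where a: "a \<in> A" "f a = b" using assms(2) by blast
    have "fib A f b = {a}" using a assms(3) unfolding fib_def inj_on_def by blast
    moreover have "a \<in> Mn (carrier G) n" using a(1) assms(1) ax_sub unfolding def_fun_def by blast
    ultimately show "rk (fib A f b) = 0" using R0[OF D_single] by simp
  qed
  thus ?thesis using ax_add[OF assms(1,2,4), of 0] by simp
qed


lemma D2_sub: "A \<in> D 2 \<Longrightarrow> p \<in> A \<Longrightarrow> \<exists>x\<in>carrier G. \<exists>y\<in>carrier G. p = [x, y]"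
  using ax_sub[of A 2] Mn2 by blast

lemma D2_mem: "A \<in> D 2 \<Longrightarrow> [x, y] \<in> A \<Longrightarrow> x \<in> carrier G \<and> y \<in> carrier G"
  using ax_sub[of A 2] by (auto simp: Mn2)

lemma D2_nth_eq: assumes "A \<in> D 2" "p \<in> A" shows "p = [p ! 0, p ! 1]"
proof -
  obtain x y where "p = [x, y]" using D2_sub[OF assms] by blast
  thus ?thesis by simp
qed

lemma D2_dfn: assumes "A \<in> D 2" shows "dfn 2 (\<lambda>xs. xs \<in> A)"
proof -
  have "dfn 2 (\<lambda>xs. [xs ! 0, xs ! 1] \<in> A)" by (rule d_in2[OF assms]) auto
  thus ?thesis by (rule d_cong) (auto simp: Mn2)
qed

lemma coord_img0: assumes "A \<in> D 2" shows "(\<lambda>x. [x]) ` {x. \<exists>y. [x, y] \<in> A} \<in> D 1"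
proof -
  have "dfn 1 (\<lambda>xs. \<exists>y\<in>carrier G. [(xs @ [y]) ! 0, (xs @ [y]) ! 1] \<in> A)"
    by (rule d_ex) (rule d_in2[OF assms], auto)
  hence "dfn 1 (\<lambda>xs. \<exists>y. [xs ! 0, y] \<in> A)"
    by (rule d_cong) (use D2_mem[OF assms] in \<open>auto simp: Mn1\<close>)
  hence "definable1 D {x \<in> carrier G. \<exists>y. [x, y] \<in> A}" by (rule def1_of)
  moreover have "{x \<in> carrier G. \<exists>y. [x, y] \<in> A} = {x. \<exists>y. [x, y] \<in> A}" using D2_mem[OF assms] by blast
  ultimately show ?thesis by (simp add: definable1_def)
qed

lemma coord_img1: assumes "A \<in> D 2" shows "(\<lambda>x. [x]) ` {y. \<exists>x. [x, y] \<in> A} \<in> D 1"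
proof -
  have "dfn 1 (\<lambda>xs. \<exists>y\<in>carrier G. [(xs @ [y]) ! 1, (xs @ [y]) ! 0] \<in> A)"
    by (rule d_ex) (rule d_in2[OF assms], auto)
  hence "dfn 1 (\<lambda>xs. \<exists>y. [y, xs ! 0] \<in> A)"
    by (rule d_cong) (use D2_mem[OF assms] in \<open>auto simp: Mn1\<close>)
  hence "definable1 D {x \<in> carrier G. \<exists>y. [y, x] \<in> A}" by (rule def1_of)
  moreover have "{x \<in> carrier G. \<exists>y. [y, x] \<in> A} = {y. \<exists>x. [x, y] \<in> A}" using D2_mem[OF assms] by blast
  ultimately show ?thesis by (simp add: definable1_def)
qed

lemma DF_coord: assumes "A \<in> D 2" "c < 2" "B \<in> D 1" "(\<lambda>p. [p ! c]) ` A \<subseteq> B"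
  shows "def_fun D 2 1 A B (\<lambda>p. [p ! c])"
proof -
  have cc: "c = 0 \<or> c = 1" using assms(2) by auto
  have d1: "dfn 3 (\<lambda>zs. [zs ! 0, zs ! 1] \<in> A)" by (rule d_in2[OF assms(1)]) simp_all
  have d2: "dfn 3 (\<lambda>zs. zs ! 2 = zs ! c)" by (rule d_eq) (use cc in auto)
  have d: "dfn 3 (\<lambda>zs. [zs ! 0, zs ! 1] \<in> A \<and> zs ! 2 = zs ! c)" by (rule d_and[OF d1 d2])
  have "{xs @ [xs ! c] | xs. xs \<in> A} = {zs \<in> Mn (carrier G) 3. [zs ! 0, zs ! 1] \<in> A \<and> zs ! 2 = zs ! c}"
  proof (intro equalityI subsetI)
    fix zs assume "zs \<in> {xs @ [xs ! c] | xs. xs \<in> A}"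
    then obtain xs where xs: "xs \<in> A" "zs = xs @ [xs ! c]" by blast
    then obtain x y where xy: "x \<in> carrier G" "y \<in> carrier G" "xs = [x, y]" using D2_sub[OF assms(1)] by blast
    have c: "[x, y] ! c \<in> carrier G" "[x, y, [x, y] ! c] ! c = [x, y] ! c"
      using cc xy by auto
    have z: "zs = [x, y, [x, y] ! c]" using xs xy by simp
    have "zs \<in> Mn (carrier G) 3" unfolding Mn3 z using xy c by blast
    moreover have "[zs ! 0, zs ! 1] \<in> A" using xs xy z by simp
    moreover have "zs ! 2 = zs ! c" unfolding z using c by simp
    ultimately show "zs \<in> {zs \<in> Mn (carrier G) 3. [zs ! 0, zs ! 1] \<in> A \<and> zs ! 2 = zs ! c}" by blast
  next
    fix zs assume zs: "zs \<in> {zs \<in> Mn (carrier G) 3. [zs ! 0, zs ! 1] \<in> A \<and> zs ! 2 = zs ! c}"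
    then obtain x y z where e: "zs = [x, y, z]" unfolding Mn3 by blast
    have A: "[x, y] \<in> A" "z = [x, y, z] ! c" using zs unfolding e by simp_all
    have "z = [x, y] ! c" using A(2) cc by auto
    hence "zs = [x, y] @ [[x, y] ! c]" using e by simp
    thus "zs \<in> {xs @ [xs ! c] | xs. xs \<in> A}" using A(1) by blast
  qed
  thus ?thesis using d assms unfolding def_fun_def dfn_def by simp
qed

definition dom0 :: "'a list set \<Rightarrow> 'a set" where "dom0 A = {x. \<exists>y. [x, y] \<in> A}"
definition dom1 :: "'a list set \<Rightarrow> 'a set" where "dom1 A = {y. \<exists>x. [x, y] \<in> A}"
definition fb0 :: "'a list set \<Rightarrow> 'a \<Rightarrow> 'a set" where "fb0 A x = {y. [x, y] \<in> A}"
definition fb1 :: "'a list set \<Rightarrow> 'a \<Rightarrow> 'a set" where "fb1 A y = {x. [x, y] \<in> A}"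

lemma fb0_D: assumes "A \<in> D 2" "x \<in> carrier G" shows "(\<lambda>y. [y]) ` fb0 A x \<in> D 1"
proof -
  have A': "A \<in> D (1 + 1)" using assms(1) by (simp add: numeral_2_eq_2)
  have "{ys. [x] @ ys \<in> A} \<in> D 1" using assms(2) by (intro ax_fib[OF A']) (auto simp: Mn_def)
  moreover have "{ys. [x] @ ys \<in> A} = (\<lambda>y. [y]) ` fb0 A x"
    using D2_sub[OF assms(1)] by (auto simp: fb0_def)
  ultimately show ?thesis by simp
qed

lemma fib_row0: assumes "A \<in> D 2" "x \<in> carrier G" shows "{p \<in> A. p ! 0 = x} \<in> D 2"
proof -
  have "dfn 2 (\<lambda>p. p \<in> A \<and> p ! 0 = x)" using assms by (intro d_and D2_dfn d_param) auto
  moreover have "{p \<in> Mn (carrier G) 2. p \<in> A \<and> p ! 0 = x} = {p \<in> A. p ! 0 = x}"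
    using ax_sub[OF assms(1)] by blast
  ultimately show ?thesis unfolding dfn_def by simp
qed

lemma fib_row1: assumes "A \<in> D 2" "x \<in> carrier G" shows "{p \<in> A. p ! 1 = x} \<in> D 2"
proof -
  have "dfn 2 (\<lambda>p. p \<in> A \<and> p ! 1 = x)" using assms by (intro d_and D2_dfn d_param) auto
  moreover have "{p \<in> Mn (carrier G) 2. p \<in> A \<and> p ! 1 = x} = {p \<in> A. p ! 1 = x}"
    using ax_sub[OF assms(1)] by blast
  ultimately show ?thesis unfolding dfn_def by simp
qed

lemma row0_rank: assumes "A \<in> D 2" "x \<in> dom0 A" shows "rk {p \<in> A. p ! 0 = x} = rk1 (fb0 A x)"
proof -
  have xG: "x \<in> carrier G" using assms D2_sub[OF assms(1)] unfolding dom0_def by fastforce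
  have R: "{p \<in> A. p ! 0 = x} \<in> D 2" by (rule fib_row0[OF assms(1) xG])
  have img: "(\<lambda>p. [p ! 1]) ` {p \<in> A. p ! 0 = x} = (\<lambda>y. [y]) ` fb0 A x"
  proof (intro equalityI subsetI)
    fix q assume "q \<in> (\<lambda>p. [p ! 1]) ` {p \<in> A. p ! 0 = x}"
    then obtain p where "p \<in> A" "p ! 0 = x" "q = [p ! 1]" by blast
    thus "q \<in> (\<lambda>y. [y]) ` fb0 A x" using D2_sub[OF assms(1)] by (force simp: fb0_def)
  qed (force simp: fb0_def)
  have "rk {p \<in> A. p ! 0 = x} = rk ((\<lambda>y. [y]) ` fb0 A x)"
  proof (rule R4)
    show "def_fun D 2 1 {p \<in> A. p ! 0 = x} ((\<lambda>y. [y]) ` fb0 A x) (\<lambda>p. [p ! 1])"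
      using img by (intro DF_coord R fb0_D assms xG) auto
    show "inj_on (\<lambda>p. [p ! 1]) {p \<in> A. p ! 0 = x}"
    proof (rule inj_onI)
      fix p q assume "p \<in> {p \<in> A. p ! 0 = x}" "q \<in> {p \<in> A. p ! 0 = x}" "[p ! 1] = [q ! 1]"
      thus "p = q" using D2_nth_eq[OF assms(1)] by (metis (mono_tags, lifting) list.inject mem_Collect_eq)
    qed
    show "{p \<in> A. p ! 0 = x} \<noteq> {}" using assms(2) unfolding dom0_def by force
  qed (rule img)
  thus ?thesis by (simp add: rk1_def)
qed


definition dtm :: "nat \<Rightarrow> ('a list \<Rightarrow> 'a) \<Rightarrow> bool" where
  "dtm n t \<longleftrightarrow> (\<forall>xs\<in>Mn (carrier G) n. t xs \<in> carrier G) \<and> dfn (Suc n) (\<lambda>ys. ys ! n = t (take n ys))"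

lemma Mn_snoc: "xs \<in> Mn A n \<Longrightarrow> y \<in> A \<Longrightarrow> xs @ [y] \<in> Mn A (Suc n)"
  by (simp add: Mn_def)
lemma Mn_take: "ys \<in> Mn A m \<Longrightarrow> n \<le> m \<Longrightarrow> take n ys \<in> Mn A n"
  by (auto simp: Mn_def dest: in_set_takeD)

lemma dtm_carr: "dtm n t \<Longrightarrow> xs \<in> Mn (carrier G) n \<Longrightarrow> t xs \<in> carrier G"
  by (simp add: dtm_def)

lemma d_subst: assumes t: "dtm n t" and P: "dfn (Suc n) P" shows "dfn n (\<lambda>xs. P (xs @ [t xs]))"
proof -
  have "dfn (Suc n) (\<lambda>ys. ys ! n = t (take n ys) \<and> P ys)" using t P unfolding dtm_def by (intro d_and) auto
  hence "dfn n (\<lambda>xs. \<exists>y\<in>carrier G. (xs @ [y]) ! n = t (take n (xs @ [y])) \<and> P (xs @ [y]))" by (rule d_ex)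
  thus ?thesis
  proof (rule d_cong)
    fix xs assume xs: "xs \<in> Mn (carrier G) n"
    hence l: "length xs = n" by (simp add: Mn_def)
    have tc: "t xs \<in> carrier G" using t xs by (simp add: dtm_def)
    show "(\<exists>y\<in>carrier G. (xs @ [y]) ! n = t (take n (xs @ [y])) \<and> P (xs @ [y])) = P (xs @ [t xs])"
      using l tc by auto
  qed
qed

lemma map_sigma: assumes "length ys = Suc m" "n \<le> m"
  shows "map (\<lambda>i. ys ! (if i < n then i else m)) [0..<Suc n] = take n ys @ [ys ! m]"
  using assms by (intro nth_equalityI) (auto simp: nth_append less_Suc_eq)

lemma dtm_lift: assumes t: "dtm n t" and nm: "n \<le> m" shows "dtm m (\<lambda>ys. t (take n ys))"
proof -
  have X: "{ys \<in> Mn (carrier G) (Suc n). ys ! n = t (take n ys)} \<in> D (Suc n)" using t by (simp add: dtm_def dfn_def)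
  have "dfn (Suc m) (\<lambda>ys. map (\<lambda>i. ys ! (if i < n then i else m)) [0..<Suc n] \<in> {ys \<in> Mn (carrier G) (Suc n). ys ! n = t (take n ys)})"
    by (rule d_sub[OF X]) (use nm in auto)
  hence "dfn (Suc m) (\<lambda>ys. ys ! m = t (take n (take m ys)))"
  proof (rule d_cong)
    fix ys assume ys: "ys \<in> Mn (carrier G) (Suc m)"
    hence l: "length ys = Suc m" by (simp add: Mn_def)
    have e: "map (\<lambda>i. ys ! (if i < n then i else m)) [0..<Suc n] = take n ys @ [ys ! m]"
      by (rule map_sigma[OF l nm])
    have tkm: "take n ys \<in> Mn (carrier G) n" using Mn_take[OF ys, of n] nm by simp
    have ym: "ys ! m \<in> carrier G" using ys l by (auto simp: Mn_def)
    have m1: "take n ys @ [ys ! m] \<in> Mn (carrier G) (Suc n)" by (rule Mn_snoc[OF tkm ym])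
    have tk: "take n (take m ys) = take n ys" using nm by (simp add: min_def)
    show "(map (\<lambda>i. ys ! (if i < n then i else m)) [0..<Suc n] \<in> {ys \<in> Mn (carrier G) (Suc n). ys ! n = t (take n ys)}) =
          (ys ! m = t (take n (take m ys)))"
      unfolding e tk using m1 l nm by (simp add: nth_append)
  qed
  moreover have "\<forall>xs\<in>Mn (carrier G) m. t (take n xs) \<in> carrier G"
    using t nm by (auto simp: dtm_def intro: Mn_take)
  ultimately show ?thesis unfolding dtm_def by simp
qed

lemma dtm_var: assumes "i < n" shows "dtm n (\<lambda>xs. xs ! i)"
proof -
  have "dfn (Suc n) (\<lambda>ys. ys ! n = ys ! i)" using assms by (intro d_eq) auto
  hence "dfn (Suc n) (\<lambda>ys. ys ! n = take n ys ! i)" by (rule d_cong) (use assms in simp)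
  thus ?thesis unfolding dtm_def using assms by (auto simp: Mn_def)
qed

lemma dtm_const: assumes "a \<in> carrier G" shows "dtm n (\<lambda>xs. a)"
  unfolding dtm_def using assms by (auto intro: d_param)

lemma Mn_lenD: "xs \<in> Mn A n \<Longrightarrow> length xs = n" by (simp add: Mn_def)

lemma dtm_mul: assumes s: "dtm n s" and t: "dtm n t" shows "dtm n (\<lambda>xs. s xs \<otimes> t xs)"
proof -
  have a0: "dfn (Suc (Suc (Suc n))) (\<lambda>zs. zs ! n = zs ! (Suc n) \<otimes> zs ! (Suc (Suc n)))" by (rule d_mul) auto
  have t2: "dtm (Suc (Suc n)) (\<lambda>ws. t (take n ws))" by (rule dtm_lift[OF t]) simp
  have a1: "dfn (Suc (Suc n)) (\<lambda>ws. ws ! n = ws ! (Suc n) \<otimes> t (take n ws))"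
    using d_subst[OF t2 a0] by (rule d_cong) (auto dest!: Mn_lenD simp: nth_append)
  have s1: "dtm (Suc n) (\<lambda>ws. s (take n ws))" by (rule dtm_lift[OF s]) simp
  have a2: "dfn (Suc n) (\<lambda>ys. ys ! n = s (take n ys) \<otimes> t (take n ys))"
    using d_subst[OF s1 a1] by (rule d_cong) (auto dest!: Mn_lenD simp: nth_append)
  moreover have "\<forall>xs\<in>Mn (carrier G) n. s xs \<otimes> t xs \<in> carrier G" using s t by (simp add: dtm_def)
  ultimately show ?thesis unfolding dtm_def by simp
qed

lemma dtm_inv: assumes t: "dtm n t" shows "dtm n (\<lambda>xs. inv (t xs))"
proof -
  have a0: "dfn (Suc (Suc (Suc n))) (\<lambda>zs. zs ! (Suc (Suc n)) = zs ! n \<otimes> zs ! (Suc n))" by (rule d_mul) auto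
  have a1: "dfn (Suc (Suc n)) (\<lambda>ws. \<one> = ws ! n \<otimes> ws ! (Suc n))"
    using d_subst[OF dtm_const[OF one_closed] a0] by (rule d_cong) (auto dest!: Mn_lenD simp: nth_append)
  have t1: "dtm (Suc n) (\<lambda>ws. t (take n ws))" by (rule dtm_lift[OF t]) simp
  have a2: "dfn (Suc n) (\<lambda>ys. \<one> = ys ! n \<otimes> t (take n ys))"
    using d_subst[OF t1 a1] by (rule d_cong) (auto dest!: Mn_lenD simp: nth_append)
  have a3: "dfn (Suc n) (\<lambda>ys. ys ! n = inv (t (take n ys)))"
  proof (rule d_cong[OF a2])
    fix ys assume ys: "ys \<in> Mn (carrier G) (Suc n)"
    have yn: "ys ! n \<in> carrier G" using ys by (auto simp: Mn_def)
    have tc: "t (take n ys) \<in> carrier G" using t Mn_take[OF ys, of n] by (simp add: dtm_def)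
    show "(\<one> = ys ! n \<otimes> t (take n ys)) = (ys ! n = inv (t (take n ys)))"
      using yn tc by (metis inv_equality r_inv)
  qed
  moreover have "\<forall>xs\<in>Mn (carrier G) n. inv (t xs) \<in> carrier G" using t by (simp add: dtm_def)
  ultimately show ?thesis unfolding dtm_def by simp
qed

lemma d_teq: assumes s: "dtm n s" and t: "dtm n t" shows "dfn n (\<lambda>xs. s xs = t xs)"
proof -
  have a0: "dfn (Suc (Suc n)) (\<lambda>zs. zs ! n = zs ! (Suc n))" by (rule d_eq) auto
  have t1: "dtm (Suc n) (\<lambda>ws. t (take n ws))" by (rule dtm_lift[OF t]) simp
  have a1: "dfn (Suc n) (\<lambda>ws. ws ! n = t (take n ws))"
    using d_subst[OF t1 a0] by (rule d_cong) (auto dest!: Mn_lenD simp: nth_append)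
  show ?thesis using d_subst[OF s a1] by (rule d_cong) (auto dest!: Mn_lenD simp: nth_append)
qed

lemma d_tin1: assumes t: "dtm n t" and S: "definable1 D S" shows "dfn n (\<lambda>xs. t xs \<in> S)"
proof -
  have a0: "dfn (Suc n) (\<lambda>zs. zs ! n \<in> S)" by (rule d_in1[OF S]) auto
  show ?thesis using d_subst[OF t a0] by (rule d_cong) (auto dest!: Mn_lenD simp: nth_append)
qed

lemma d_tin2: assumes s: "dtm n s" and t: "dtm n t" and X: "X \<in> D 2" shows "dfn n (\<lambda>xs. [s xs, t xs] \<in> X)"
proof -
  have a0: "dfn (Suc (Suc n)) (\<lambda>zs. [zs ! n, zs ! (Suc n)] \<in> X)" by (rule d_in2[OF X]) auto
  have t1: "dtm (Suc n) (\<lambda>ws. t (take n ws))" by (rule dtm_lift[OF t]) simp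
  have a1: "dfn (Suc n) (\<lambda>ws. [ws ! n, t (take n ws)] \<in> X)"
    using d_subst[OF t1 a0] by (rule d_cong) (auto dest!: Mn_lenD simp: nth_append)
  show ?thesis using d_subst[OF s a1] by (rule d_cong) (auto dest!: Mn_lenD simp: nth_append)
qed


lemma row1_rank: assumes "A \<in> D 2" "y \<in> dom1 A" shows "rk {p \<in> A. p ! 1 = y} = rk1 (fb1 A y)"
proof -
  have yG: "y \<in> carrier G" using assms D2_mem[OF assms(1)] unfolding dom1_def by blast
  have R: "{p \<in> A. p ! 1 = y} \<in> D 2" by (rule fib_row1[OF assms(1) yG])
  have fbe: "fb1 A y = {x. \<exists>z. [x, z] \<in> {p \<in> A. p ! 1 = y}}" unfolding fb1_def by auto
  have fbD: "(\<lambda>x. [x]) ` fb1 A y \<in> D 1" unfolding fbe by (rule coord_img0[OF R])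
  have img: "(\<lambda>p. [p ! 0]) ` {p \<in> A. p ! 1 = y} = (\<lambda>x. [x]) ` fb1 A y"
  proof (intro equalityI subsetI)
    fix q assume "q \<in> (\<lambda>p. [p ! 0]) ` {p \<in> A. p ! 1 = y}"
    then obtain p where p: "p \<in> A" "p ! 1 = y" "q = [p ! 0]" by blast
    have "p = [p ! 0, y]" using D2_nth_eq[OF assms(1) p(1)] p(2) by simp
    hence "p ! 0 \<in> fb1 A y" using p(1) unfolding fb1_def by simp
    thus "q \<in> (\<lambda>x. [x]) ` fb1 A y" using p(3) by blast
  next
    fix q assume "q \<in> (\<lambda>x. [x]) ` fb1 A y"
    then obtain x where x: "[x, y] \<in> A" "q = [x]" unfolding fb1_def by blast
    thus "q \<in> (\<lambda>p. [p ! 0]) ` {p \<in> A. p ! 1 = y}" by (intro image_eqI[of _ _ "[x, y]"]) simp_all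
  qed
  have "rk {p \<in> A. p ! 1 = y} = rk ((\<lambda>x. [x]) ` fb1 A y)"
  proof (rule R4)
    show "def_fun D 2 1 {p \<in> A. p ! 1 = y} ((\<lambda>x. [x]) ` fb1 A y) (\<lambda>p. [p ! 0])"
      using img by (intro DF_coord R fbD) auto
    show "inj_on (\<lambda>p. [p ! 0]) {p \<in> A. p ! 1 = y}"
    proof (rule inj_onI)
      fix p q assume "p \<in> {p \<in> A. p ! 1 = y}" "q \<in> {p \<in> A. p ! 1 = y}" "[p ! 0] = [q ! 0]"
      thus "p = q" using D2_nth_eq[OF assms(1)] by (metis (mono_tags, lifting) list.inject mem_Collect_eq)
    qed
    show "{p \<in> A. p ! 1 = y} \<noteq> {}" using assms(2) unfolding dom1_def by force
  qed (rule img)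
  thus ?thesis by (simp add: rk1_def)
qed

lemma proj0: assumes A: "A \<in> D 2" and ne: "A \<noteq> {}" and k: "\<forall>x\<in>dom0 A. rk1 (fb0 A x) = k"
  shows "rk A = rk1 (dom0 A) + k"
proof -
  have BD: "(\<lambda>x. [x]) ` dom0 A \<in> D 1" unfolding dom0_def by (rule coord_img0[OF A])
  have img: "(\<lambda>p. [p ! 0]) ` A = (\<lambda>x. [x]) ` dom0 A"
  proof (intro equalityI subsetI)
    fix q assume "q \<in> (\<lambda>p. [p ! 0]) ` A"
    then obtain p where p: "p \<in> A" "q = [p ! 0]" by blast
    have "p = [p ! 0, p ! 1]" by (rule D2_nth_eq[OF A p(1)])
    hence "p ! 0 \<in> dom0 A" using p(1) unfolding dom0_def by (metis (mono_tags) mem_Collect_eq)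
    thus "q \<in> (\<lambda>x. [x]) ` dom0 A" using p(2) by blast
  next
    fix q assume "q \<in> (\<lambda>x. [x]) ` dom0 A"
    then obtain x y where x: "[x, y] \<in> A" "q = [x]" unfolding dom0_def by blast
    thus "q \<in> (\<lambda>p. [p ! 0]) ` A" by (intro image_eqI[of _ _ "[x, y]"]) simp_all
  qed
  have DF: "def_fun D 2 1 A ((\<lambda>x. [x]) ` dom0 A) (\<lambda>p. [p ! 0])"
    using img by (intro DF_coord A BD) auto
  have "\<forall>b\<in>(\<lambda>x. [x]) ` dom0 A. rk (fib A (\<lambda>p. [p ! 0]) b) = k"
  proof
    fix b assume "b \<in> (\<lambda>x. [x]) ` dom0 A"
    then obtain x where x: "x \<in> dom0 A" "b = [x]" by blast
    have "fib A (\<lambda>p. [p ! 0]) b = {p \<in> A. p ! 0 = x}" unfolding fib_def x(2) by simp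
    thus "rk (fib A (\<lambda>p. [p ! 0]) b) = k" using row0_rank[OF A x(1)] k x(1) by simp
  qed
  hence "rk A = rk ((\<lambda>x. [x]) ` dom0 A) + k" using ax_add[OF DF img ne] by blast
  thus ?thesis by (simp add: rk1_def)
qed

lemma proj1: assumes A: "A \<in> D 2" and ne: "A \<noteq> {}" and k: "\<forall>y\<in>dom1 A. rk1 (fb1 A y) = k"
  shows "rk A = rk1 (dom1 A) + k"
proof -
  have BD: "(\<lambda>x. [x]) ` dom1 A \<in> D 1" unfolding dom1_def by (rule coord_img1[OF A])
  have img: "(\<lambda>p. [p ! 1]) ` A = (\<lambda>x. [x]) ` dom1 A"
  proof (intro equalityI subsetI)
    fix q assume "q \<in> (\<lambda>p. [p ! 1]) ` A"
    then obtain p where p: "p \<in> A" "q = [p ! 1]" by blast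
    have "p = [p ! 0, p ! 1]" by (rule D2_nth_eq[OF A p(1)])
    hence "p ! 1 \<in> dom1 A" using p(1) unfolding dom1_def by (metis (mono_tags) mem_Collect_eq)
    thus "q \<in> (\<lambda>x. [x]) ` dom1 A" using p(2) by blast
  next
    fix q assume "q \<in> (\<lambda>x. [x]) ` dom1 A"
    then obtain x y where x: "[x, y] \<in> A" "q = [y]" unfolding dom1_def by blast
    thus "q \<in> (\<lambda>p. [p ! 1]) ` A" by (intro image_eqI[of _ _ "[x, y]"]) simp_all
  qed
  have DF: "def_fun D 2 1 A ((\<lambda>x. [x]) ` dom1 A) (\<lambda>p. [p ! 1])"
    using img by (intro DF_coord A BD) auto
  have "\<forall>b\<in>(\<lambda>x. [x]) ` dom1 A. rk (fib A (\<lambda>p. [p ! 1]) b) = k"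
  proof
    fix b assume "b \<in> (\<lambda>x. [x]) ` dom1 A"
    then obtain x where x: "x \<in> dom1 A" "b = [x]" by blast
    have "fib A (\<lambda>p. [p ! 1]) b = {p \<in> A. p ! 1 = x}" unfolding fib_def x(2) by simp
    thus "rk (fib A (\<lambda>p. [p ! 1]) b) = k" using row1_rank[OF A x(1)] k x(1) by simp
  qed
  hence "rk A = rk ((\<lambda>x. [x]) ` dom1 A) + k" using ax_add[OF DF img ne] by blast
  thus ?thesis by (simp add: rk1_def)
qed

lemma rk1_single: assumes "a \<in> carrier G" shows "rk1 {a} = 0"
  unfolding rk1_def using R0[OF single1[OF assms]] by simp

lemma rk1_bij:
  assumes G: "{[x, \<phi> x] | x. x \<in> X} \<in> D 2" and inj: "inj_on \<phi> X" and ne: "X \<noteq> {}"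
  shows "rk1 (\<phi> ` X) = rk1 X"
proof -
  let ?A = "{[x, \<phi> x] | x. x \<in> X}"
  have Ane: "?A \<noteq> {}" using ne by blast
  have d0: "dom0 ?A = X" unfolding dom0_def by auto
  have d1: "dom1 ?A = \<phi> ` X" unfolding dom1_def by auto
  have f0: "fb0 ?A x = {\<phi> x}" if "x \<in> X" for x using that unfolding fb0_def by auto
  have f1: "fb1 ?A (\<phi> x) = {x}" if "x \<in> X" for x using that inj unfolding fb1_def inj_on_def by auto
  have mem: "x \<in> carrier G \<and> \<phi> x \<in> carrier G" if "x \<in> X" for x using D2_mem[OF G, of x "\<phi> x"] that by blast
  have "\<forall>x\<in>dom0 ?A. rk1 (fb0 ?A x) = 0" using d0 f0 mem rk1_single by simp
  hence "rk ?A = rk1 (dom0 ?A) + 0" by (rule proj0[OF G Ane])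
  moreover have "\<forall>y\<in>dom1 ?A. rk1 (fb1 ?A y) = 0" using d1 f1 mem rk1_single by auto
  hence "rk ?A = rk1 (dom1 ?A) + 0" by (rule proj1[OF G Ane])
  ultimately show ?thesis using d0 d1 by simp
qed


lemma img_single_inj: "inj (\<lambda>x::'a. [x])" by (rule injI) simp

lemma def1_int: "definable1 D X \<Longrightarrow> definable1 D Y \<Longrightarrow> definable1 D (X \<inter> Y)"
  unfolding definable1_def using image_Int[OF img_single_inj, of X Y] ax_int by simp
lemma def1_un: "definable1 D X \<Longrightarrow> definable1 D Y \<Longrightarrow> definable1 D (X \<union> Y)"
  unfolding definable1_def using D_un by (simp add: image_Un)
lemma def1_diff: "definable1 D X \<Longrightarrow> definable1 D Y \<Longrightarrow> definable1 D (X - Y)"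
  unfolding definable1_def using image_set_diff[OF img_single_inj, of X Y] D_diff by simp
lemma def1_carrier: "definable1 D (carrier G)"
proof -
  have "(\<lambda>x. [x]) ` carrier G = Mn (carrier G) 1" by (auto simp: Mn1)
  thus ?thesis unfolding definable1_def using ax_full by simp
qed
lemma def1_empty: "definable1 D {}"
  using def1_diff[OF def1_carrier def1_carrier] by simp
lemma def1_single: "a \<in> carrier G \<Longrightarrow> definable1 D {a}"
  unfolding definable1_def using single1 by simp

lemma rk1_mono: assumes "definable1 D X" "definable1 D Y" "X \<subseteq> Y" "X \<noteq> {}" shows "rk1 X \<le> rk1 Y"
  unfolding rk1_def using assms by (intro R1[of _ 1]) (auto simp: definable1_def)

lemma rk1_un: assumes "definable1 D X" "definable1 D Y" "X \<union> Y \<noteq> {}" "k \<le> rk1 (X \<union> Y)"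
  shows "(X \<noteq> {} \<and> k \<le> rk1 X) \<or> (Y \<noteq> {} \<and> k \<le> rk1 Y)"
  using R2[of "(\<lambda>x. [x]) ` X" 1 "(\<lambda>x. [x]) ` Y" k] assms unfolding rk1_def definable1_def by (simp add: image_Un)

lemma mono_intro1:
  fixes T :: "nat \<Rightarrow> 'a set"
  assumes "definable1 D A" "\<And>i. definable1 D (T i)" "\<And>i. T i \<subseteq> A" "\<And>i. T i \<noteq> {}" "\<And>i. k \<le> rk1 (T i)"
    "\<And>i j. i \<noteq> j \<Longrightarrow> T i \<inter> T j = {}"
  shows "Suc k \<le> rk1 A"
  unfolding rk1_def
proof (rule mono_intro[of _ 1 "\<lambda>i. (\<lambda>x. [x]) ` T i"])
  fix i j :: nat assume "i \<noteq> j"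
  thus "(\<lambda>x. [x]) ` T i \<inter> (\<lambda>x. [x]) ` T j = {}" using assms(6) by (simp add: image_Int[OF img_single_inj, symmetric])
qed (use assms in \<open>auto simp: definable1_def rk1_def\<close>)

lemma def1_Un_fin: "(\<And>j. j < (m::nat) \<Longrightarrow> definable1 D (A j)) \<Longrightarrow> definable1 D (\<Union>j<m. A j)"
proof (induction m)
  case 0 thus ?case using def1_empty by simp
next
  case (Suc m)
  have "(\<Union>j<Suc m. A j) = (\<Union>j<m. A j) \<union> A m" by (auto simp: less_Suc_eq)
  thus ?case using Suc by (simp add: def1_un)
qed

lemma rk1_Un_fin: "(\<And>j. j < (m::nat) \<Longrightarrow> definable1 D (A j)) \<Longrightarrow> (\<Union>j<m. A j) \<noteq> {} \<Longrightarrow> k \<le> rk1 (\<Union>j<m. A j) \<Longrightarrow>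
   \<exists>j<m. A j \<noteq> {} \<and> k \<le> rk1 (A j)"
proof (induction m)
  case 0 thus ?case by simp
next
  case (Suc m)
  have e: "(\<Union>j<Suc m. A j) = (\<Union>j<m. A j) \<union> A m" by (auto simp: less_Suc_eq)
  have d: "definable1 D (\<Union>j<m. A j)" using Suc.prems(1) by (intro def1_Un_fin) simp
  have "((\<Union>j<m. A j) \<noteq> {} \<and> k \<le> rk1 (\<Union>j<m. A j)) \<or> (A m \<noteq> {} \<and> k \<le> rk1 (A m))"
    using rk1_un[OF d Suc.prems(1)[of m]] Suc.prems(2,3) unfolding e by simp
  thus ?case
  proof
    assume "(\<Union>j<m. A j) \<noteq> {} \<and> k \<le> rk1 (\<Union>j<m. A j)"
    thus ?thesis using Suc.IH Suc.prems(1) by (metis less_SucI)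
  qed blast
qed

lemma dtm_cong: assumes "dtm n s" "\<And>xs. xs \<in> Mn (carrier G) n \<Longrightarrow> s xs = t xs" shows "dtm n t"
proof -
  have "dfn (Suc n) (\<lambda>ys. ys ! n = t (take n ys))"
  proof (rule d_cong)
    show "dfn (Suc n) (\<lambda>ys. ys ! n = s (take n ys))" using assms(1) by (simp add: dtm_def)
    fix ys assume "ys \<in> Mn (carrier G) (Suc n)"
    hence "take n ys \<in> Mn (carrier G) n" by (rule Mn_take) simp
    thus "(ys ! n = s (take n ys)) = (ys ! n = t (take n ys))" using assms(2) by simp
  qed
  moreover have "\<forall>xs\<in>Mn (carrier G) n. t xs \<in> carrier G" using assms by (simp add: dtm_def)
  ultimately show ?thesis by (simp add: dtm_def)
qed

lemma dv0: "dtm 2 (\<lambda>xs. xs ! 0)" by (rule dtm_var) simp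
lemma dv1: "dtm 2 (\<lambda>xs. xs ! 1)" by (rule dtm_var) simp
lemma dv10: "dtm 1 (\<lambda>xs. xs ! 0)" by (rule dtm_var) simp

lemma graph_D2:
  assumes X: "definable1 D X" and t: "dtm 1 (\<lambda>xs. \<phi> (xs ! 0))"
  shows "{[x, \<phi> x] | x. x \<in> X} \<in> D 2"
proof -
  have t2: "dtm 2 (\<lambda>xs. \<phi> (take 1 xs ! 0))" using dtm_lift[OF t, of 2] by simp
  have t2': "dtm 2 (\<lambda>xs. \<phi> (xs ! 0))" by (rule dtm_cong[OF t2]) (auto simp: Mn_def)
  have "dfn 2 (\<lambda>xs. xs ! 0 \<in> X \<and> xs ! 1 = \<phi> (xs ! 0))"
    by (intro d_and d_in1[OF X] d_teq[OF dv1 t2']) simp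
  hence "{[x, y] | x y. x \<in> carrier G \<and> y \<in> carrier G \<and> (x \<in> X \<and> y = \<phi> x)} \<in> D 2" by (rule D2_of)
  moreover have "{[x, y] | x y. x \<in> carrier G \<and> y \<in> carrier G \<and> (x \<in> X \<and> y = \<phi> x)} = {[x, \<phi> x] | x. x \<in> X}"
  proof (intro equalityI subsetI)
    fix p assume "p \<in> {[x, \<phi> x] | x. x \<in> X}"
    then obtain x where x: "x \<in> X" "p = [x, \<phi> x]" by blast
    have xG: "x \<in> carrier G" using x(1) def1_sub[OF X] by blast
    have "\<phi> x \<in> carrier G" using dtm_carr[OF t, of "[x]"] xG by (simp add: Mn_def)
    thus "p \<in> {[x, y] | x y. x \<in> carrier G \<and> y \<in> carrier G \<and> (x \<in> X \<and> y = \<phi> x)}" using x xG by blast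
  qed blast
  ultimately show ?thesis by simp
qed

lemma rk1_image:
  assumes X: "definable1 D X" and t: "dtm 1 (\<lambda>xs. \<phi> (xs ! 0))" and inj: "inj_on \<phi> X" and ne: "X \<noteq> {}"
  shows "rk1 (\<phi> ` X) = rk1 X"
  by (rule rk1_bij[OF graph_D2[OF X t] inj ne])

lemma def1_image:
  assumes X: "definable1 D X" and t: "dtm 1 (\<lambda>xs. \<phi> (xs ! 0))"
  shows "definable1 D (\<phi> ` X)"
proof -
  have "(\<lambda>x. [x]) ` {y. \<exists>x. [x, y] \<in> {[x, \<phi> x] | x. x \<in> X}} \<in> D 1" by (rule coord_img1[OF graph_D2[OF X t]])
  moreover have "{y. \<exists>x. [x, y] \<in> {[x, \<phi> x] | x. x \<in> X}} = \<phi> ` X" by auto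
  ultimately show ?thesis unfolding definable1_def by simp
qed

lemma def1_conjg: assumes "definable1 D B" "g \<in> carrier G" shows "definable1 D (conjg G B g)"
  unfolding conjg_def
  by (rule def1_image[OF assms(1)]) (intro dtm_mul dtm_const dtm_inv dv10 assms(2))

lemma rk1_conjg: assumes "definable1 D B" "g \<in> carrier G" "B \<noteq> {}" shows "rk1 (conjg G B g) = rk1 B"
  unfolding conjg_def
proof (rule rk1_image[OF assms(1) _ _ assms(3)])
  show "dtm 1 (\<lambda>xs. inv g \<otimes> xs ! 0 \<otimes> g)" by (intro dtm_mul dtm_const dtm_inv dv10 assms(2))
  show "inj_on (\<lambda>b. inv g \<otimes> b \<otimes> g) B"
  proof (rule inj_onI)
    fix x y assume xy: "x \<in> B" "y \<in> B" "inv g \<otimes> x \<otimes> g = inv g \<otimes> y \<otimes> g"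
    have "x \<in> carrier G" "y \<in> carrier G" using xy def1_sub[OF assms(1)] by auto
    thus "x = y" using xy(3) assms(2) by simp
  qed
qed

lemma rcos_img: "X #> a = (\<lambda>x. x \<otimes> a) ` X" unfolding r_coset_def by auto

lemma def1_rcos: assumes "definable1 D X" "a \<in> carrier G" shows "definable1 D (X #> a)"
  unfolding rcos_img by (rule def1_image[OF assms(1)]) (intro dtm_mul dtm_const dv10 assms(2))

lemma rk1_rcos: assumes "definable1 D X" "a \<in> carrier G" "X \<noteq> {}" shows "rk1 (X #> a) = rk1 X"
  unfolding rcos_img
proof (rule rk1_image[OF assms(1) _ _ assms(3)])
  show "dtm 1 (\<lambda>xs. xs ! 0 \<otimes> a)" by (intro dtm_mul dtm_const dv10 assms(2))
  show "inj_on (\<lambda>x. x \<otimes> a) X"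
  proof (rule inj_onI)
    fix x y assume xy: "x \<in> X" "y \<in> X" "x \<otimes> a = y \<otimes> a"
    have "x \<in> carrier G" "y \<in> carrier G" using xy def1_sub[OF assms(1)] by auto
    thus "x = y" using xy(3) assms(2) by simp
  qed
qed

lemma rk1_minus1: assumes C: "definable1 D C" and ne: "C - {\<one>} \<noteq> {}" shows "rk1 (C - {\<one>}) = rk1 C"
proof -
  have d: "definable1 D (C - {\<one>})" by (rule def1_diff[OF C def1_single[OF one_closed]])
  have le: "rk1 (C - {\<one>}) \<le> rk1 C" by (rule rk1_mono[OF d C _ ne]) blast
  have "rk1 C \<le> rk1 (C - {\<one>})"
  proof (cases "rk1 C")
    case 0 thus ?thesis by simp
  next
    case (Suc k)
    have e: "(C - {\<one>}) \<union> (C \<inter> {\<one>}) = C" by blast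
    have d2: "definable1 D (C \<inter> {\<one>})" by (rule def1_int[OF C def1_single[OF one_closed]])
    have "(C - {\<one>} \<noteq> {} \<and> rk1 C \<le> rk1 (C - {\<one>})) \<or> (C \<inter> {\<one>} \<noteq> {} \<and> rk1 C \<le> rk1 (C \<inter> {\<one>}))"
      using rk1_un[OF d d2, of "rk1 C"] ne unfolding e by blast
    moreover have "C \<inter> {\<one>} \<noteq> {} \<Longrightarrow> rk1 (C \<inter> {\<one>}) = 0"
    proof -
      assume "C \<inter> {\<one>} \<noteq> {}"
      hence "C \<inter> {\<one>} = {\<one>}" by blast
      thus ?thesis using rk1_single[OF one_closed] by simp
    qed
    ultimately show ?thesis using Suc by linarith
  qed
  thus ?thesis using le by simp
qed


lemma proj0_img: assumes A: "A \<in> D 2" shows "(\<lambda>p. [p ! 0]) ` A = (\<lambda>x. [x]) ` dom0 A"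
proof (intro equalityI subsetI)
  fix q assume "q \<in> (\<lambda>p. [p ! 0]) ` A"
  then obtain p where p: "p \<in> A" "q = [p ! 0]" by blast
  have "p = [p ! 0, p ! 1]" by (rule D2_nth_eq[OF A p(1)])
  hence "p ! 0 \<in> dom0 A" using p(1) unfolding dom0_def by (metis (mono_tags) mem_Collect_eq)
  thus "q \<in> (\<lambda>x. [x]) ` dom0 A" using p(2) by blast
next
  fix q assume "q \<in> (\<lambda>x. [x]) ` dom0 A"
  then obtain x y where x: "[x, y] \<in> A" "q = [x]" unfolding dom0_def by blast
  thus "q \<in> (\<lambda>p. [p ! 0]) ` A" by (intro image_eqI[of _ _ "[x, y]"]) simp_all
qed

lemma level0: assumes A: "A \<in> D 2" shows "definable1 D {x \<in> dom0 A. rk1 (fb0 A x) = k}"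
proof -
  have BD: "(\<lambda>x. [x]) ` dom0 A \<in> D 1" unfolding dom0_def by (rule coord_img0[OF A])
  have DF: "def_fun D 2 1 A ((\<lambda>x. [x]) ` dom0 A) (\<lambda>p. [p ! 0])"
    using proj0_img[OF A] by (intro DF_coord A BD) auto
  have "{b \<in> (\<lambda>x. [x]) ` dom0 A. fib A (\<lambda>p. [p ! 0]) b \<noteq> {} \<and> rk (fib A (\<lambda>p. [p ! 0]) b) = k} \<in> D 1"
    by (rule ax_defrk[OF DF])
  moreover have "{b \<in> (\<lambda>x. [x]) ` dom0 A. fib A (\<lambda>p. [p ! 0]) b \<noteq> {} \<and> rk (fib A (\<lambda>p. [p ! 0]) b) = k}
     = (\<lambda>x. [x]) ` {x \<in> dom0 A. rk1 (fb0 A x) = k}"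
  proof (intro equalityI subsetI)
    fix b assume b: "b \<in> {b \<in> (\<lambda>x. [x]) ` dom0 A. fib A (\<lambda>p. [p ! 0]) b \<noteq> {} \<and> rk (fib A (\<lambda>p. [p ! 0]) b) = k}"
    then obtain x where x: "x \<in> dom0 A" "b = [x]" by blast
    have "fib A (\<lambda>p. [p ! 0]) b = {p \<in> A. p ! 0 = x}" unfolding fib_def x(2) by simp
    hence "rk1 (fb0 A x) = k" using b row0_rank[OF A x(1)] by simp
    thus "b \<in> (\<lambda>x. [x]) ` {x \<in> dom0 A. rk1 (fb0 A x) = k}" using x by blast
  next
    fix b assume "b \<in> (\<lambda>x. [x]) ` {x \<in> dom0 A. rk1 (fb0 A x) = k}"
    then obtain x where x: "x \<in> dom0 A" "rk1 (fb0 A x) = k" "b = [x]" by blast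
    have f: "fib A (\<lambda>p. [p ! 0]) b = {p \<in> A. p ! 0 = x}" unfolding fib_def x(3) by simp
    have "{p \<in> A. p ! 0 = x} \<noteq> {}" using x(1) unfolding dom0_def by force
    thus "b \<in> {b \<in> (\<lambda>x. [x]) ` dom0 A. fib A (\<lambda>p. [p ! 0]) b \<noteq> {} \<and> rk (fib A (\<lambda>p. [p ! 0]) b) = k}"
      using f x row0_rank[OF A x(1)] by simp
  qed
  ultimately show ?thesis unfolding definable1_def by simp
qed

lemma D_empty: "{} \<in> D n" using D_diff[OF ax_full ax_full] by simp

lemma D_Un_fin: "(\<And>j. j < (m::nat) \<Longrightarrow> A j \<in> D d) \<Longrightarrow> (\<Union>j<m. A j) \<in> D d"
proof (induction m)
  case 0 thus ?case using D_empty by simp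
next
  case (Suc m)
  have "(\<Union>j<Suc m. A j) = (\<Union>j<m. A j) \<union> A m" by (auto simp: less_Suc_eq)
  thus ?case using Suc by (simp add: D_un)
qed

lemma RD_Un_fin: "(\<And>j. j < (m::nat) \<Longrightarrow> A j \<in> D d) \<Longrightarrow> (\<Union>j<m. A j) \<noteq> {} \<Longrightarrow> k \<le> rk (\<Union>j<m. A j) \<Longrightarrow>
   \<exists>j<m. A j \<noteq> {} \<and> k \<le> rk (A j)"
proof (induction m)
  case 0 thus ?case by simp
next
  case (Suc m)
  have e: "(\<Union>j<Suc m. A j) = (\<Union>j<m. A j) \<union> A m" by (auto simp: less_Suc_eq)
  have d: "(\<Union>j<m. A j) \<in> D d" using Suc.prems(1) by (intro D_Un_fin) simp
  have "((\<Union>j<m. A j) \<noteq> {} \<and> k \<le> rk (\<Union>j<m. A j)) \<or> (A m \<noteq> {} \<and> k \<le> rk (A m))"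
    using R2[OF d Suc.prems(1)[of m]] Suc.prems(2,3) unfolding e by simp
  thus ?case
  proof
    assume "(\<Union>j<m. A j) \<noteq> {} \<and> k \<le> rk (\<Union>j<m. A j)"
    thus ?thesis using Suc.IH Suc.prems(1) by (metis less_SucI)
  qed blast
qed

end

locale rgH = rg +
  fixes H :: "'a set"
  assumes H_sg: "subgroup H G" and H_def: "definable1 D H" and H_conn: "connected_sg G D H"
begin

definition big :: "'a set \<Rightarrow> bool" where "big Z \<longleftrightarrow> Z \<noteq> {} \<and> rk1 H \<le> rk1 Z"
definition dsub :: "'a set \<Rightarrow> bool" where "dsub Z \<longleftrightarrow> definable1 D Z \<and> Z \<subseteq> H"
definition atom :: "'a set \<Rightarrow> bool" where
  "atom X \<longleftrightarrow> dsub X \<and> big X \<and> (\<forall>P Q. dsub P \<and> dsub Q \<and> P \<subseteq> X \<and> Q \<subseteq> X \<and> P \<inter> Q = {} \<longrightarrow> \<not> (big P \<and> big Q))"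

lemma H_G: "H \<subseteq> carrier G" using H_sg subgroup.subset by blast
lemma H_mem: "h \<in> H \<Longrightarrow> h \<in> carrier G" using H_G by blast
lemma dsub_G: "dsub Z \<Longrightarrow> Z \<subseteq> carrier G" using H_G by (auto simp: dsub_def)

lemma big_mono: "dsub P \<Longrightarrow> dsub Q \<Longrightarrow> P \<subseteq> Q \<Longrightarrow> big P \<Longrightarrow> big Q"
  unfolding big_def dsub_def using rk1_mono[of P Q] by fastforce

lemma big_le: "dsub P \<Longrightarrow> P \<noteq> {} \<Longrightarrow> rk1 P \<le> rk1 H"
  unfolding dsub_def using rk1_mono[OF _ H_def] by blast

lemma big_un: "dsub P \<Longrightarrow> dsub Q \<Longrightarrow> big (P \<union> Q) \<Longrightarrow> big P \<or> big Q"
  unfolding big_def dsub_def using rk1_un[of P Q "rk1 H"] by blast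

lemma dsub_int: "dsub P \<Longrightarrow> definable1 D Q \<Longrightarrow> dsub (P \<inter> Q)"
  unfolding dsub_def using def1_int by blast
lemma dsub_diff: "dsub P \<Longrightarrow> definable1 D Q \<Longrightarrow> dsub (P - Q)"
  unfolding dsub_def using def1_diff by blast

lemma dsub_rcos: "dsub Z \<Longrightarrow> h \<in> H \<Longrightarrow> dsub (Z #> h)"
  unfolding dsub_def using def1_rcos[of Z h] H_mem rcos_in_sub[OF H_sg] by blast

lemma big_rcos: assumes "dsub Z" "h \<in> H" "big Z" shows "big (Z #> h)"
  using assms rk1_rcos[of Z h] H_mem rcos_ne unfolding big_def dsub_def by metis

lemma big_rcos_iff: assumes "dsub Z" "h \<in> H" shows "big (Z #> h) \<longleftrightarrow> big Z"
proof
  assume b: "big (Z #> h)"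
  have "inv h \<in> H" using assms(2) H_sg by (simp add: subgroup.m_inv_closed)
  hence "big ((Z #> h) #> inv h)" using big_rcos[OF dsub_rcos[OF assms] _ b] by blast
  thus "big Z" using rcos_back[OF dsub_G[OF assms(1)] H_mem[OF assms(2)]] by simp
qed (rule big_rcos[OF assms])

lemma no_inf:
  fixes T :: "nat \<Rightarrow> 'a set"
  assumes "\<And>i. dsub (T i)" "\<And>i. big (T i)" "\<And>i j. i \<noteq> j \<Longrightarrow> T i \<inter> T j = {}"
  shows False
proof -
  have "Suc (rk1 H) \<le> rk1 H"
    by (rule mono_intro1[OF H_def, of T]) (use assms in \<open>auto simp: dsub_def big_def\<close>)
  thus False by simp
qed


lemma atom_int: assumes X: "atom X" and P: "dsub P" "P \<subseteq> X" "big P" and Q: "dsub Q" "Q \<subseteq> X" "big Q"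
  shows "big (P \<inter> Q)"
proof (rule ccontr)
  assume nb: "\<not> big (P \<inter> Q)"
  have dQ: "definable1 D Q" using Q(1) by (simp add: dsub_def)
  have e: "P = (P - Q) \<union> (P \<inter> Q)" by blast
  have "big (P - Q) \<or> big (P \<inter> Q)" using big_un[OF dsub_diff[OF P(1) dQ] dsub_int[OF P(1) dQ]] P(3) e by simp
  hence "big (P - Q)" using nb by blast
  moreover have "(P - Q) \<inter> Q = {}" by blast
  moreover have "P - Q \<subseteq> X" using P(2) by blast
  ultimately show False using X Q dsub_diff[OF P(1) dQ] unfolding atom_def by blast
qed

lemma atom_rcos: assumes X: "atom X" and h: "h \<in> H" shows "atom (X #> h)"
proof -
  have dX: "dsub X" "big X" using X by (auto simp: atom_def)
  have ih: "inv h \<in> H" using h H_sg by (simp add: subgroup.m_inv_closed)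
  have hG: "h \<in> carrier G" by (rule H_mem[OF h])
  have "\<not> (big P \<and> big Q)" if PQ: "dsub P" "dsub Q" "P \<subseteq> X #> h" "Q \<subseteq> X #> h" "P \<inter> Q = {}" for P Q
  proof
    assume b: "big P \<and> big Q"
    have s1: "P #> inv h \<subseteq> X" using rcos_mono[OF PQ(3), of "inv h"] rcos_back[OF dsub_G[OF dX(1)] hG] by simp
    have s2: "Q #> inv h \<subseteq> X" using rcos_mono[OF PQ(4), of "inv h"] rcos_back[OF dsub_G[OF dX(1)] hG] by simp
    have "(P #> inv h) \<inter> (Q #> inv h) = (P \<inter> Q) #> inv h"
      using rcos_int[OF dsub_G[OF PQ(1)] dsub_G[OF PQ(2)], of "inv h"] hG by simp
    hence dj: "(P #> inv h) \<inter> (Q #> inv h) = {}" using PQ(5) unfolding r_coset_def by simp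
    have "big (P #> inv h)" "big (Q #> inv h)" using b big_rcos[OF PQ(1) ih] big_rcos[OF PQ(2) ih] by auto
    thus False using X s1 s2 dj dsub_rcos[OF PQ(1) ih] dsub_rcos[OF PQ(2) ih] unfolding atom_def by blast
  qed
  thus ?thesis unfolding atom_def using dsub_rcos[OF dX(1) h] big_rcos[OF dX(1) h dX(2)] by blast
qed

lemma atom_ex: assumes Y: "dsub Y" "big Y" shows "\<exists>X. atom X \<and> X \<subseteq> Y"
proof (rule ccontr)
  assume na: "\<not> (\<exists>X. atom X \<and> X \<subseteq> Y)"
  define props where "props Z p \<longleftrightarrow> dsub (fst p) \<and> dsub (snd p) \<and> fst p \<subseteq> Z \<and> snd p \<subseteq> Z \<and>
      fst p \<inter> snd p = {} \<and> big (fst p) \<and> big (snd p)" for Z :: "'a set" and p :: "'a set \<times> 'a set"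
  have "\<forall>Z. \<exists>p. dsub Z \<and> big Z \<and> Z \<subseteq> Y \<longrightarrow> props Z p"
  proof
    fix Z show "\<exists>p. dsub Z \<and> big Z \<and> Z \<subseteq> Y \<longrightarrow> props Z p"
    proof (cases "dsub Z \<and> big Z \<and> Z \<subseteq> Y")
      case True
      hence "\<not> atom Z" using na by blast
      then obtain P Q where "dsub P \<and> dsub Q \<and> P \<subseteq> Z \<and> Q \<subseteq> Z \<and> P \<inter> Q = {}" "big P \<and> big Q"
        using True unfolding atom_def by blast
      hence "props Z (P, Q)" unfolding props_def by simp
      thus ?thesis by blast
    qed blast
  qed
  then obtain spl where spl: "\<And>Z. dsub Z \<Longrightarrow> big Z \<Longrightarrow> Z \<subseteq> Y \<Longrightarrow> props Z (spl Z)"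
    by (metis choice)
  define W where "W = rec_nat Y (\<lambda>_ Z. snd (spl Z))"
  have W0: "W 0 = Y" and WS: "W (Suc i) = snd (spl (W i))" for i by (simp_all add: W_def)
  have good: "dsub (W i) \<and> big (W i) \<and> W i \<subseteq> Y" for i
  proof (induction i)
    case 0 thus ?case using Y W0 by simp
  next
    case (Suc i)
    have "props (W i) (spl (W i))" using spl Suc by blast
    thus ?case using Suc unfolding WS props_def by blast
  qed
  have pr: "props (W i) (spl (W i))" for i using spl good by blast
  define T where "T i = fst (spl (W i))" for i
  have dec: "W j \<subseteq> W (Suc i)" if "Suc i \<le> j" for i j
    using that
  proof (induction j)
    case 0 thus ?case by simp
  next
    case (Suc j)
    show ?case
    proof (cases "Suc i = Suc j")
      case True thus ?thesis by simp
    next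
      case False
      hence "Suc i \<le> j" using Suc.prems by simp
      moreover have "W (Suc j) \<subseteq> W j" using pr[of j] unfolding WS props_def by blast
      ultimately show ?thesis using Suc.IH by blast
    qed
  qed
  have dj: "T i \<inter> T j = {}" if "i < j" for i j
  proof -
    have "T j \<subseteq> W j" using pr[of j] unfolding T_def props_def by blast
    also have "\<dots> \<subseteq> W (Suc i)" using dec that by simp
    finally have "T j \<subseteq> snd (spl (W i))" unfolding WS .
    moreover have "fst (spl (W i)) \<inter> snd (spl (W i)) = {}" using pr[of i] unfolding props_def by blast
    ultimately show ?thesis unfolding T_def by blast
  qed
  show False
  proof (rule no_inf[of T])
    fix i show "dsub (T i)" "big (T i)" using pr[of i] unfolding T_def props_def by blast+
  next
    fix i j :: nat assume "i \<noteq> j"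
    thus "T i \<inter> T j = {}" using dj[of i j] dj[of j i] by (cases "i < j") auto
  qed
qed


definition stab :: "'a set \<Rightarrow> 'a set" where "stab X = {h \<in> H. big (X \<inter> (X #> h))}"

lemma dv0H: "dfn 2 (\<lambda>xs. xs ! 0 \<in> H)" by (rule d_in1[OF H_def]) simp

lemma stab_def1: assumes X: "atom X" shows "definable1 D (stab X)"
proof -
  have dX: "dsub X" using X by (simp add: atom_def)
  have X1: "definable1 D X" using dX by (simp add: dsub_def)
  let ?P = "{[h, x] | h x. h \<in> carrier G \<and> x \<in> carrier G \<and> (h \<in> H \<and> x \<in> X \<and> x \<otimes> inv h \<in> X)}"
  have "dfn 2 (\<lambda>xs. xs ! 0 \<in> H \<and> xs ! 1 \<in> X \<and> xs ! 1 \<otimes> inv (xs ! 0) \<in> X)"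
    by (intro d_and dv0H d_in1[OF X1] d_tin1[OF _ X1] dtm_mul dtm_inv dv0 dv1) simp
  hence PD: "?P \<in> D 2" by (rule D2_of)
  have fb: "fb0 ?P h = X \<inter> (X #> h)" if "h \<in> H" for h
    using that H_mem dsub_G[OF dX] by (auto simp: fb0_def rcos_mem_iff)
  have dm: "dom0 ?P = {h \<in> H. X \<inter> (X #> h) \<noteq> {}}"
  proof (intro equalityI subsetI)
    fix h assume "h \<in> dom0 ?P"
    then obtain x where "[h, x] \<in> ?P" unfolding dom0_def by blast
    hence "h \<in> H" "x \<in> fb0 ?P h" unfolding fb0_def by auto
    thus "h \<in> {h \<in> H. X \<inter> (X #> h) \<noteq> {}}" using fb by auto
  next
    fix h assume h: "h \<in> {h \<in> H. X \<inter> (X #> h) \<noteq> {}}"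
    hence "fb0 ?P h \<noteq> {}" using fb by auto
    thus "h \<in> dom0 ?P" unfolding fb0_def dom0_def by blast
  qed
  have "stab X = {h \<in> dom0 ?P. rk1 (fb0 ?P h) = rk1 H}"
  proof (intro equalityI subsetI)
    fix h assume h: "h \<in> stab X"
    hence hH: "h \<in> H" and b: "big (X \<inter> (X #> h))" unfolding stab_def by auto
    have ds: "dsub (X \<inter> (X #> h))" using dsub_int[OF dX] def1_rcos[OF X1 H_mem[OF hH]] by simp
    have "rk1 (X \<inter> (X #> h)) = rk1 H" using b big_le[OF ds] unfolding big_def by simp
    thus "h \<in> {h \<in> dom0 ?P. rk1 (fb0 ?P h) = rk1 H}" using hH b fb dm unfolding big_def by auto
  next
    fix h assume "h \<in> {h \<in> dom0 ?P. rk1 (fb0 ?P h) = rk1 H}"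
    thus "h \<in> stab X" using fb dm unfolding stab_def big_def by auto
  qed
  thus ?thesis using level0[OF PD] by simp
qed

lemma stab_sg: assumes X: "atom X" shows "subgroup (stab X) G"
proof (rule subgroupI)
  have dX: "dsub X" and bX: "big X" using X by (auto simp: atom_def)
  have XG: "X \<subseteq> carrier G" by (rule dsub_G[OF dX])
  show "stab X \<subseteq> carrier G" unfolding stab_def using H_G by blast
  have "\<one> \<in> stab X" unfolding stab_def using rcos_one[OF XG] bX H_sg subgroup.one_closed by fastforce
  thus "stab X \<noteq> {}" by blast
next
  have dX: "dsub X" and bX: "big X" using X by (auto simp: atom_def)
  have XG: "X \<subseteq> carrier G" by (rule dsub_G[OF dX])
  have X1: "definable1 D X" using dX by (simp add: dsub_def)
  fix a assume a: "a \<in> stab X"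
  hence aH: "a \<in> H" and b: "big (X \<inter> (X #> a))" unfolding stab_def by auto
  have iH: "inv a \<in> H" using aH H_sg by (simp add: subgroup.m_inv_closed)
  have aG: "a \<in> carrier G" by (rule H_mem[OF aH])
  have ds: "dsub (X \<inter> (X #> a))" using dsub_int[OF dX] def1_rcos[OF X1 aG] by simp
  have "(X \<inter> (X #> a)) #> inv a = (X #> inv a) \<inter> X"
    using rcos_int[OF XG rcos_sub[OF XG aG], of "inv a"] rcos_back[OF XG aG] aG by simp
  hence "big ((X #> inv a) \<inter> X)" using big_rcos[OF ds iH b] by simp
  hence "big (X \<inter> (X #> inv a))" by (simp add: Int_commute)
  thus "inv a \<in> stab X" using iH unfolding stab_def by simp
next
  have dX: "dsub X" and bX: "big X" using X by (auto simp: atom_def)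
  have XG: "X \<subseteq> carrier G" by (rule dsub_G[OF dX])
  have X1: "definable1 D X" using dX by (simp add: dsub_def)
  fix a b assume a: "a \<in> stab X" and b: "b \<in> stab X"
  hence aH: "a \<in> H" and ba: "big (X \<inter> (X #> a))" and bH: "b \<in> H" and bb: "big (X \<inter> (X #> b))"
    unfolding stab_def by auto
  have aG: "a \<in> carrier G" and bG: "b \<in> carrier G" using aH bH H_mem by auto
  have abH: "a \<otimes> b \<in> H" using aH bH H_sg by (simp add: subgroup.m_closed)
  have ds: "dsub (X \<inter> (X #> a))" using dsub_int[OF dX] def1_rcos[OF X1 aG] by simp
  have e: "(X \<inter> (X #> a)) #> b = (X #> b) \<inter> (X #> (a \<otimes> b))"
    using rcos_int[OF XG rcos_sub[OF XG aG] bG] rcos_assoc[OF XG aG bG] by simp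
  have b1: "big ((X #> b) \<inter> (X #> (a \<otimes> b)))" using big_rcos[OF ds bH ba] e by simp
  have Xb: "atom (X #> b)" by (rule atom_rcos[OF X bH])
  have dXb: "definable1 D (X #> b)" by (rule def1_rcos[OF X1 bG])
  have dXab: "definable1 D (X #> (a \<otimes> b))" by (rule def1_rcos[OF X1 m_closed[OF aG bG]])
  have P: "dsub ((X #> b) \<inter> X)" using dsub_int[OF dX dXb] by (simp add: Int_commute)
  have Q: "dsub ((X #> b) \<inter> (X #> (a \<otimes> b)))" using dsub_int[OF dsub_rcos[OF dX bH] dXab] by simp
  have bP: "big ((X #> b) \<inter> X)" using bb by (simp add: Int_commute)
  have "big (((X #> b) \<inter> X) \<inter> ((X #> b) \<inter> (X #> (a \<otimes> b))))"
    by (rule atom_int[OF Xb P _ bP Q _ b1]) blast+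
  moreover have "dsub (X \<inter> (X #> (a \<otimes> b)))" using dsub_int[OF dX dXab] by simp
  moreover have "dsub (((X #> b) \<inter> X) \<inter> ((X #> b) \<inter> (X #> (a \<otimes> b))))"
  proof -
    have eq: "((X #> b) \<inter> X) \<inter> ((X #> b) \<inter> (X #> (a \<otimes> b))) = ((X #> b) \<inter> X) \<inter> (X #> (a \<otimes> b))" by blast
    show ?thesis unfolding eq by (rule dsub_int[OF P dXab])
  qed
  ultimately have "big (X \<inter> (X #> (a \<otimes> b)))" using big_mono by blast
  thus "a \<otimes> b \<in> stab X" using abH unfolding stab_def by simp
qed


lemma stab_fin: assumes X: "atom X" shows "finite ((\<lambda>h. stab X #> h) ` H)"
proof (rule ccontr)
  let ?S = "stab X"
  have dX: "dsub X" and bX: "big X" using X by (auto simp: atom_def)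
  have XG: "X \<subseteq> carrier G" by (rule dsub_G[OF dX])
  have X1: "definable1 D X" using dX by (simp add: dsub_def)
  have Ssg: "subgroup ?S G" by (rule stab_sg[OF X])
  assume "infinite ((\<lambda>h. ?S #> h) ` H)"
  then obtain f :: "nat \<Rightarrow> 'a set" where f: "inj f" "range f \<subseteq> (\<lambda>h. ?S #> h) ` H"
    using infinite_countable_subset by blast
  define hh where "hh i = (SOME h. h \<in> H \<and> f i = ?S #> h)" for i
  have hh: "hh i \<in> H \<and> f i = ?S #> hh i" for i
  proof -
    have "\<exists>h. h \<in> H \<and> f i = ?S #> h" using f(2) by blast
    thus ?thesis unfolding hh_def by (rule someI_ex)
  qed
  have hG: "hh i \<in> carrier G" for i using hh H_mem by blast
  have dist: "?S #> hh i \<noteq> ?S #> hh j" if "i \<noteq> j" for i j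
    using hh f(1) that by (metis injD)
  have nb: "\<not> big ((X #> hh i) \<inter> (X #> hh j))" if "i \<noteq> j" for i j
  proof
    assume b: "big ((X #> hh i) \<inter> (X #> hh j))"
    define c where "c = hh i \<otimes> inv (hh j)"
    have cG: "c \<in> carrier G" unfolding c_def using hG by simp
    have cH: "c \<in> H" unfolding c_def using hh H_sg by (simp add: subgroup.m_closed subgroup.m_inv_closed)
    have ijH: "inv (hh j) \<in> H" using hh H_sg by (simp add: subgroup.m_inv_closed)
    have ds: "dsub ((X #> hh i) \<inter> (X #> hh j))"
      using dsub_int[OF dsub_rcos[OF dX], of "hh i" "X #> hh j"] hh def1_rcos[OF X1 hG] by simp
    have "((X #> hh i) \<inter> (X #> hh j)) #> inv (hh j) = (X #> c) \<inter> X"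
      using rcos_int[OF rcos_sub[OF XG hG] rcos_sub[OF XG hG], of "inv (hh j)"] hG
        rcos_assoc[OF XG hG, of "inv (hh j)"] rcos_back[OF XG hG] rcos_one[OF XG] unfolding c_def by simp
    hence "big (X \<inter> (X #> c))" using big_rcos[OF ds ijH b] by (simp add: Int_commute)
    hence cS: "c \<in> ?S" using cH unfolding stab_def by simp
    have "hh i = c \<otimes> hh j" unfolding c_def using hG by (simp add: m_assoc)
    hence "?S #> hh i = (?S #> c) #> hh j"
      using rcos_assoc[OF subgroup.subset[OF Ssg] cG hG] by simp
    also have "?S #> c = ?S" by (rule subgroup.rcos_const[OF Ssg is_group cS])
    finally show False using dist[OF that] by simp
  qed
  define Z where "Z i = (X #> hh i) - (\<Union>j<i. X #> hh j)" for i
  have dU: "definable1 D (\<Union>j<i. X #> hh j)" for i by (rule def1_Un_fin) (use def1_rcos[OF X1 hG] in simp)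
  have dZ: "dsub (Z i)" for i unfolding Z_def using dsub_diff[OF dsub_rcos[OF dX] dU] hh by blast
  have bZ: "big (Z i)" for i
  proof -
    have e: "X #> hh i = Z i \<union> (\<Union>j<i. (X #> hh i) \<inter> (X #> hh j))" unfolding Z_def by blast
    have dI: "dsub ((X #> hh i) \<inter> (X #> hh j))" for j
      using dsub_int[OF dsub_rcos[OF dX], of "hh i" "X #> hh j"] hh def1_rcos[OF X1 hG] by simp
    have dV: "dsub (\<Union>j<i. (X #> hh i) \<inter> (X #> hh j))"
      unfolding dsub_def using dI def1_Un_fin[of i "\<lambda>j. (X #> hh i) \<inter> (X #> hh j)"] unfolding dsub_def by blast
    have "big (X #> hh i)" by (rule big_rcos[OF dX _ bX]) (use hh in blast)
    hence "big (Z i) \<or> big (\<Union>j<i. (X #> hh i) \<inter> (X #> hh j))" using big_un[OF dZ dV] e by simp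
    moreover have "\<not> big (\<Union>j<i. (X #> hh i) \<inter> (X #> hh j))"
    proof
      assume "big (\<Union>j<i. (X #> hh i) \<inter> (X #> hh j))"
      then obtain j where "j < i" "big ((X #> hh i) \<inter> (X #> hh j))"
        using rk1_Un_fin[of i "\<lambda>j. (X #> hh i) \<inter> (X #> hh j)" "rk1 H"] dI unfolding big_def dsub_def by blast
      thus False using nb[of i j] by simp
    qed
    ultimately show ?thesis by blast
  qed
  have dj: "Z i \<inter> Z j = {}" if "j < i" for i j
    using that unfolding Z_def by blast
  show False
  proof (rule no_inf[of Z])
    fix i j :: nat assume "i \<noteq> j"
    thus "Z i \<inter> Z j = {}" using dj[of i j] dj[of j i] by (cases "j < i") auto
  qed (use dZ bZ in auto)
qed

lemma stab_all: assumes X: "atom X" and h: "h \<in> H" shows "big (X \<inter> (X #> h))"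
proof -
  have "stab X = H"
    using H_conn stab_sg[OF X] stab_def1[OF X] stab_fin[OF X] unfolding connected_sg_def stab_def by blast
  thus ?thesis using h unfolding stab_def by blast
qed


lemma dom0_def1: "A \<in> D 2 \<Longrightarrow> definable1 D (dom0 A)"
  unfolding definable1_def dom0_def by (rule coord_img0)

lemma count: assumes W: "dsub W" "big W" and X: "dsub X" "big X" shows "\<exists>h\<in>H. big (W \<inter> (X #> h))"
proof (rule ccontr)
  assume nb: "\<not> (\<exists>h\<in>H. big (W \<inter> (X #> h)))"
  let ?n = "rk1 H"
  have X1: "definable1 D X" and W1: "definable1 D W" using W X by (auto simp: dsub_def)
  have XH: "X \<subseteq> H" and WH: "W \<subseteq> H" using W X by (auto simp: dsub_def)
  have XG: "X \<subseteq> carrier G" and WG: "W \<subseteq> carrier G" using XH WH H_G by auto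
  have rX: "rk1 X = ?n" and rW: "rk1 W = ?n" using W X big_le unfolding big_def by (auto intro: le_antisym)
  let ?P = "{[h, y] | h y. h \<in> carrier G \<and> y \<in> carrier G \<and> (h \<in> H \<and> y \<in> W \<and> y \<otimes> inv h \<in> X)}"
  have "dfn 2 (\<lambda>xs. xs ! 0 \<in> H \<and> xs ! 1 \<in> W \<and> xs ! 1 \<otimes> inv (xs ! 0) \<in> X)"
    by (intro d_and dv0H d_in1[OF W1] d_tin1[OF _ X1] dtm_mul dtm_inv dv0 dv1) simp
  hence PD: "?P \<in> D 2" by (rule D2_of)
  have fb1e: "fb1 ?P y = (\<lambda>x. inv x \<otimes> y) ` X" if y: "y \<in> W" for y
  proof (intro equalityI subsetI)
    fix h assume "h \<in> fb1 ?P y"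
    hence h: "h \<in> H" "y \<otimes> inv h \<in> X" unfolding fb1_def by auto
    have hG: "h \<in> carrier G" and yG: "y \<in> carrier G" using h y H_G WG by auto
    have "inv (y \<otimes> inv h) \<otimes> y = h" using hG yG by (simp add: inv_mult_group m_assoc)
    thus "h \<in> (\<lambda>x. inv x \<otimes> y) ` X" using h(2) by (metis image_eqI)
  next
    fix h assume "h \<in> (\<lambda>x. inv x \<otimes> y) ` X"
    then obtain x where x: "x \<in> X" "h = inv x \<otimes> y" by blast
    have xG: "x \<in> carrier G" and yG: "y \<in> carrier G" using x y XG WG by auto
    have hH: "h \<in> H" unfolding x(2) using x(1) y XH WH H_sg by (auto intro: subgroup.m_closed subgroup.m_inv_closed)
    have "y \<otimes> inv h = x" unfolding x(2) using xG yG by (simp add: inv_mult_group)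
    thus "h \<in> fb1 ?P y" unfolding fb1_def using hH x(1) y xG yG H_G by auto
  qed
  have dm1: "dom1 ?P = W"
  proof (intro equalityI subsetI)
    fix y assume "y \<in> dom1 ?P" thus "y \<in> W" unfolding dom1_def by auto
  next
    fix y assume y: "y \<in> W"
    obtain x where x: "x \<in> X" using X unfolding big_def by blast
    have "inv x \<otimes> y \<in> fb1 ?P y" using fb1e[OF y] x by blast
    thus "y \<in> dom1 ?P" unfolding dom1_def fb1_def by blast
  qed
  have rfb1: "rk1 (fb1 ?P y) = ?n" if y: "y \<in> W" for y
  proof -
    have yG: "y \<in> carrier G" using y WG by auto
    have "rk1 ((\<lambda>x. inv x \<otimes> y) ` X) = rk1 X"
    proof (rule rk1_image[OF X1])
      show "dtm 1 (\<lambda>xs. inv (xs ! 0) \<otimes> y)" by (intro dtm_mul dtm_inv dv10 dtm_const yG)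
      show "inj_on (\<lambda>x. inv x \<otimes> y) X"
      proof (rule inj_onI)
        fix a b assume ab: "a \<in> X" "b \<in> X" "inv a \<otimes> y = inv b \<otimes> y"
        have "a \<in> carrier G" "b \<in> carrier G" using ab XG by auto
        hence "inv a = inv b" using ab(3) yG by simp
        hence "inv (inv a) = inv (inv b)" by simp
        thus "a = b" using \<open>a \<in> carrier G\<close> \<open>b \<in> carrier G\<close> by simp
      qed
      show "X \<noteq> {}" using X unfolding big_def by blast
    qed
    thus ?thesis using fb1e[OF y] rX by simp
  qed
  have Pne: "?P \<noteq> {}"
  proof -
    obtain y where "y \<in> W" using W unfolding big_def by blast
    hence "y \<in> dom1 ?P" using dm1 by simp
    then obtain h where "[h, y] \<in> ?P" unfolding dom1_def by blast
    thus ?thesis by blast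
  qed
  have "\<forall>y\<in>dom1 ?P. rk1 (fb1 ?P y) = ?n" using dm1 rfb1 by simp
  hence "rk ?P = rk1 (dom1 ?P) + ?n" by (rule proj1[OF PD Pne])
  hence rP: "rk ?P = ?n + ?n" using dm1 rW by simp
  have fb0e: "fb0 ?P h = W \<inter> (X #> h)" if h: "h \<in> H" for h
    using h H_G XG WG by (auto simp: fb0_def rcos_mem_iff)
  have dm0H: "dom0 ?P \<subseteq> H" unfolding dom0_def by auto
  have small: "rk1 (fb0 ?P h) < ?n" if h: "h \<in> dom0 ?P" for h
  proof -
    have hH: "h \<in> H" using h dm0H by blast
    have ne: "fb0 ?P h \<noteq> {}" using h unfolding dom0_def fb0_def by blast
    have "\<not> big (W \<inter> (X #> h))" using nb hH by blast
    thus ?thesis using ne fb0e[OF hH] unfolding big_def by simp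
  qed
  define L where "L k = {h \<in> dom0 ?P. rk1 (fb0 ?P h) = k}" for k
  have L1: "definable1 D (L k)" for k unfolding L_def by (rule level0[OF PD])
  define Pk where "Pk k = {p \<in> ?P. p ! 0 \<in> L k}" for k
  have PkD: "Pk k \<in> D 2" for k
  proof -
    have "dfn 2 (\<lambda>p. p \<in> ?P \<and> p ! 0 \<in> L k)" by (intro d_and D2_dfn[OF PD] d_in1[OF L1]) simp
    moreover have "{p \<in> Mn (carrier G) 2. p \<in> ?P \<and> p ! 0 \<in> L k} = Pk k"
      unfolding Pk_def using ax_sub[OF PD] by blast
    ultimately show ?thesis unfolding dfn_def by simp
  qed
  have Pun: "?P = (\<Union>k<?n. Pk k)"
  proof (intro equalityI subsetI)
    fix p assume p: "p \<in> ?P"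
    then obtain h y where hy: "p = [h, y]" by blast
    have hd: "h \<in> dom0 ?P" using p hy unfolding dom0_def by blast
    have "p \<in> Pk (rk1 (fb0 ?P h))" unfolding Pk_def L_def using p hy hd by simp
    thus "p \<in> (\<Union>k<?n. Pk k)" using small[OF hd] by blast
  next
    fix p assume "p \<in> (\<Union>k<?n. Pk k)" thus "p \<in> ?P" unfolding Pk_def by blast
  qed
  obtain k where k: "k < ?n" "Pk k \<noteq> {}" "?n + ?n \<le> rk (Pk k)"
    using RD_Un_fin[of ?n Pk 2 "?n + ?n"] PkD Pne rP Pun by auto
  have fbk: "fb0 (Pk k) h = fb0 ?P h" if "h \<in> dom0 (Pk k)" for h
    using that unfolding fb0_def dom0_def Pk_def by auto
  have dk: "dom0 (Pk k) \<subseteq> L k" unfolding dom0_def Pk_def by auto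
  have "\<forall>h\<in>dom0 (Pk k). rk1 (fb0 (Pk k) h) = k" using fbk dk unfolding L_def by auto
  hence rPk: "rk (Pk k) = rk1 (dom0 (Pk k)) + k" by (rule proj0[OF PkD k(2)])
  have "dom0 (Pk k) \<noteq> {}"
  proof -
    obtain p where p: "p \<in> Pk k" using k(2) by blast
    then obtain x y where "p = [x, y]" using D2_sub[OF PkD] by blast
    hence "x \<in> dom0 (Pk k)" using p unfolding dom0_def by blast
    thus ?thesis by blast
  qed
  moreover have "dom0 (Pk k) \<subseteq> H" using dk dm0H unfolding L_def by blast
  ultimately have "rk1 (dom0 (Pk k)) \<le> ?n" using big_le dom0_def1[OF PkD] unfolding dsub_def by blast
  thus False using k rPk by linarith
qed

lemma KL: assumes Y: "dsub Y" "big Y" and Z: "dsub Z" "big Z" shows "Y \<inter> Z \<noteq> {}"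
proof -
  obtain X where X: "atom X" using atom_ex[OF Y] by blast
  have dX: "dsub X" "big X" using X by (auto simp: atom_def)
  have X1: "definable1 D X" using dX by (simp add: dsub_def)
  have key: "big (X \<inter> W)" if W: "atom W" for W
  proof -
    have dW: "dsub W" "big W" using W by (auto simp: atom_def)
    obtain h where h: "h \<in> H" "big (W \<inter> (X #> h))" using count[OF dW dX] by blast
    have hG: "h \<in> carrier G" by (rule H_mem[OF h(1)])
    have Xh: "atom (X #> h)" by (rule atom_rcos[OF X h(1)])
    have dXh: "dsub (X #> h)" by (rule dsub_rcos[OF dX(1) h(1)])
    have dXh1: "definable1 D (X #> h)" by (rule def1_rcos[OF X1 hG])
    have W1: "definable1 D W" using dW by (simp add: dsub_def)
    have b1: "big ((X #> h) \<inter> X)" using stab_all[OF X h(1)] by (simp add: Int_commute)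
    have b2: "big ((X #> h) \<inter> W)" using h(2) by (simp add: Int_commute)
    have "big (((X #> h) \<inter> X) \<inter> ((X #> h) \<inter> W))"
      by (rule atom_int[OF Xh dsub_int[OF dXh X1] _ b1 dsub_int[OF dXh W1] _ b2]) blast+
    moreover have "dsub (((X #> h) \<inter> X) \<inter> ((X #> h) \<inter> W))"
      using dsub_int[OF dsub_int[OF dXh X1] def1_int[OF dXh1 W1]] by simp
    ultimately show ?thesis using big_mono dsub_int[OF dX(1) W1] by blast
  qed
  obtain Y' where Y': "atom Y'" "Y' \<subseteq> Y" using atom_ex[OF Y] by blast
  obtain Z' where Z': "atom Z'" "Z' \<subseteq> Z" using atom_ex[OF Z] by blast
  have Y1: "definable1 D Y'" and Z1: "definable1 D Z'" using Y' Z' by (auto simp: atom_def dsub_def)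
  have "big ((X \<inter> Y') \<inter> (X \<inter> Z'))"
    by (rule atom_int[OF X dsub_int[OF dX(1) Y1] _ key[OF Y'(1)] dsub_int[OF dX(1) Z1] _ key[OF Z'(1)]]) blast+
  thus ?thesis using Y'(2) Z'(2) unfolding big_def by blast
qed


lemma OL:
  assumes C1: "definable1 D C" and CH: "C \<subseteq> H" and Csg: "subgroup C G" and Cne: "C - {\<one>} \<noteq> {}"
    and TI: "\<forall>g\<in>H. \<forall>z\<in>C. z \<noteq> \<one> \<longrightarrow> g \<otimes> z \<otimes> inv g \<in> C \<longrightarrow> g \<in> C"
  shows "dsub {y \<in> H. y \<noteq> \<one> \<and> (\<exists>h\<in>H. h \<otimes> y \<otimes> inv h \<in> C)} \<and> big {y \<in> H. y \<noteq> \<one> \<and> (\<exists>h\<in>H. h \<otimes> y \<otimes> inv h \<in> C)}"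
proof -
  let ?U = "{y \<in> H. y \<noteq> \<one> \<and> (\<exists>h\<in>H. h \<otimes> y \<otimes> inv h \<in> C)}"
  have CG: "C \<subseteq> carrier G" using CH H_G by blast
  let ?Q = "{[y, h] | y h. y \<in> carrier G \<and> h \<in> carrier G \<and> (h \<in> H \<and> \<not> y = \<one> \<and> h \<otimes> y \<otimes> inv h \<in> C)}"
  have "dfn 2 (\<lambda>xs. xs ! 1 \<in> H \<and> \<not> xs ! 0 = \<one> \<and> xs ! 1 \<otimes> xs ! 0 \<otimes> inv (xs ! 1) \<in> C)"
    by (intro d_and d_not d_in1[OF H_def] d_teq dtm_const one_closed d_tin1[OF _ C1] dtm_mul dtm_inv dv0 dv1) simp_all
  hence QD: "?Q \<in> D 2" by (rule D2_of)
  have dm0: "dom0 ?Q = ?U"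
  proof (intro equalityI subsetI)
    fix y assume "y \<in> dom0 ?Q"
    then obtain h where h: "h \<in> H" "y \<in> carrier G" "y \<noteq> \<one>" "h \<otimes> y \<otimes> inv h \<in> C" unfolding dom0_def by blast
    have hG: "h \<in> carrier G" using h H_G by blast
    have "inv h \<otimes> (h \<otimes> y \<otimes> inv h) \<otimes> h \<in> H"
      using h CH H_sg by (simp add: subgroup.m_closed subgroup.m_inv_closed subsetD)
    hence "y \<in> H" using conj_back2[OF hG h(2)] by simp
    thus "y \<in> ?U" using h by blast
  next
    fix y assume "y \<in> ?U"
    thus "y \<in> dom0 ?Q" unfolding dom0_def using H_G by blast
  qed
  have fb1e: "fb1 ?Q h = conjg G (C - {\<one>}) h" if h: "h \<in> H" for h
  proof -
    have hG: "h \<in> carrier G" using h H_G by blast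
    have "y \<in> fb1 ?Q h \<longleftrightarrow> y \<in> conjg G (C - {\<one>}) h" for y
    proof -
      have "y \<in> conjg G (C - {\<one>}) h \<longleftrightarrow> y \<in> carrier G \<and> h \<otimes> y \<otimes> inv h \<in> C - {\<one>}"
        by (rule conj_mem_iff) (use CG hG in auto)
      moreover have "y \<in> fb1 ?Q h \<longleftrightarrow> y \<in> carrier G \<and> y \<noteq> \<one> \<and> h \<otimes> y \<otimes> inv h \<in> C"
        unfolding fb1_def using h hG by auto
      ultimately show ?thesis using conj_one_iff[OF hG] by blast
    qed
    thus ?thesis by blast
  qed
  have Cm1: "definable1 D (C - {\<one>})" by (rule def1_diff[OF C1 def1_single[OF one_closed]])
  have rC: "rk1 (C - {\<one>}) = rk1 C" by (rule rk1_minus1[OF C1 Cne])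
  have dm1: "dom1 ?Q = H"
  proof (intro equalityI subsetI)
    fix h assume "h \<in> dom1 ?Q" thus "h \<in> H" unfolding dom1_def by auto
  next
    fix h assume h: "h \<in> H"
    have "conjg G (C - {\<one>}) h \<noteq> {}" using Cne unfolding conjg_def by blast
    then obtain y where "y \<in> fb1 ?Q h" using fb1e[OF h] by blast
    thus "h \<in> dom1 ?Q" unfolding dom1_def fb1_def by blast
  qed
  have Qne: "?Q \<noteq> {}"
  proof -
    have "\<one> \<in> H" using H_sg by (simp add: subgroup.one_closed)
    hence "\<one> \<in> dom1 ?Q" using dm1 by simp
    thus ?thesis unfolding dom1_def by blast
  qed
  have "\<forall>h\<in>dom1 ?Q. rk1 (fb1 ?Q h) = rk1 C"
    using dm1 fb1e rk1_conjg[OF Cm1 _ Cne] rC H_G by auto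
  hence r1: "rk ?Q = rk1 H + rk1 C" using proj1[OF QD Qne] dm1 by simp
  have fb0e: "fb0 ?Q y = C #> h0" if y: "y \<in> ?U" and h0: "h0 \<in> H" "h0 \<otimes> y \<otimes> inv h0 \<in> C" for y h0
  proof (intro equalityI subsetI)
    have yG: "y \<in> carrier G" and h0G: "h0 \<in> carrier G" using y h0 H_G by auto
    fix h assume "h \<in> fb0 ?Q y"
    hence h: "h \<in> H" "h \<otimes> y \<otimes> inv h \<in> C" unfolding fb0_def by auto
    have hG: "h \<in> carrier G" using h H_G by blast
    define g where "g = h \<otimes> inv h0"
    have gG: "g \<in> carrier G" unfolding g_def using hG h0G by simp
    have gH: "g \<in> H" unfolding g_def using h h0 H_sg by (simp add: subgroup.m_closed subgroup.m_inv_closed)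
    have z1: "h0 \<otimes> y \<otimes> inv h0 \<noteq> \<one>" using conj_one_iff[OF h0G yG] y by simp
    have "g \<otimes> (h0 \<otimes> y \<otimes> inv h0) \<otimes> inv g = h \<otimes> y \<otimes> inv h"
    proof -
      have e1: "(h \<otimes> inv h0) \<otimes> h0 = h" using hG h0G by (simp add: m_assoc)
      show ?thesis unfolding g_def using conj_comp[of "h \<otimes> inv h0" h0 y] e1 hG h0G yG by simp
    qed
    hence "g \<in> C" using TI gH h0(2) z1 h(2) by metis
    thus "h \<in> C #> h0" using hG h0G CG by (simp add: rcos_mem_iff g_def)
  next
    have yG: "y \<in> carrier G" and h0G: "h0 \<in> carrier G" using y h0 H_G by auto
    fix h assume "h \<in> C #> h0"
    hence hG: "h \<in> carrier G" and c: "h \<otimes> inv h0 \<in> C" using h0G CG by (auto simp: rcos_mem_iff)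
    have hH: "h \<in> H"
    proof -
      have "(h \<otimes> inv h0) \<otimes> h0 \<in> H" using c CH h0 H_sg by (auto intro: subgroup.m_closed)
      thus ?thesis using hG h0G by (simp add: m_assoc)
    qed
    have "(h \<otimes> inv h0) \<otimes> (h0 \<otimes> y \<otimes> inv h0) \<otimes> inv (h \<otimes> inv h0) \<in> C"
      by (rule sg_conj_closed[OF Csg c h0(2)])
    moreover have "(h \<otimes> inv h0) \<otimes> (h0 \<otimes> y \<otimes> inv h0) \<otimes> inv (h \<otimes> inv h0) = h \<otimes> y \<otimes> inv h"
    proof -
      have e1: "(h \<otimes> inv h0) \<otimes> h0 = h" using hG h0G by (simp add: m_assoc)
      show ?thesis using conj_comp[of "h \<otimes> inv h0" h0 y] e1 hG h0G yG by simp
    qed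
    ultimately have "h \<otimes> y \<otimes> inv h \<in> C" by simp
    thus "h \<in> fb0 ?Q y" unfolding fb0_def using hH hG yG y by auto
  qed
  have "\<forall>y\<in>dom0 ?Q. rk1 (fb0 ?Q y) = rk1 C"
  proof
    fix y assume "y \<in> dom0 ?Q"
    hence y: "y \<in> ?U" using dm0 by simp
    then obtain h0 where h0: "h0 \<in> H" "h0 \<otimes> y \<otimes> inv h0 \<in> C" by blast
    have "C \<noteq> {}" using Cne by blast
    thus "rk1 (fb0 ?Q y) = rk1 C" using fb0e[OF y h0] rk1_rcos[OF C1] h0 H_G by auto
  qed
  hence r0: "rk ?Q = rk1 ?U + rk1 C" using proj0[OF QD Qne] dm0 by simp
  have dU: "dsub ?U" using dom0_def1[OF QD] dm0 unfolding dsub_def by auto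
  have "?U \<noteq> {}"
  proof -
    obtain p where p: "p \<in> ?Q" using Qne by blast
    then obtain x y where "p = [x, y]" using D2_sub[OF QD] by blast
    hence "x \<in> dom0 ?Q" using p unfolding dom0_def by blast
    thus ?thesis using dm0 by blast
  qed
  thus ?thesis using dU r0 r1 unfolding big_def by simp
qed

lemma OL2:
  assumes "definable1 D C1" "C1 \<subseteq> H" "subgroup C1 G" "C1 - {\<one>} \<noteq> {}"
    "\<forall>g\<in>H. \<forall>z\<in>C1. z \<noteq> \<one> \<longrightarrow> g \<otimes> z \<otimes> inv g \<in> C1 \<longrightarrow> g \<in> C1"
  assumes "definable1 D C2" "C2 \<subseteq> H" "subgroup C2 G" "C2 - {\<one>} \<noteq> {}"
    "\<forall>g\<in>H. \<forall>z\<in>C2. z \<noteq> \<one> \<longrightarrow> g \<otimes> z \<otimes> inv g \<in> C2 \<longrightarrow> g \<in> C2"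
  shows "\<exists>y\<in>H. y \<noteq> \<one> \<and> (\<exists>h\<in>H. h \<otimes> y \<otimes> inv h \<in> C1) \<and> (\<exists>h\<in>H. h \<otimes> y \<otimes> inv h \<in> C2)"
proof -
  have a: "dsub {y \<in> H. y \<noteq> \<one> \<and> (\<exists>h\<in>H. h \<otimes> y \<otimes> inv h \<in> C1)} \<and> big {y \<in> H. y \<noteq> \<one> \<and> (\<exists>h\<in>H. h \<otimes> y \<otimes> inv h \<in> C1)}"
    by (rule OL) (use assms in auto)
  have b: "dsub {y \<in> H. y \<noteq> \<one> \<and> (\<exists>h\<in>H. h \<otimes> y \<otimes> inv h \<in> C2)} \<and> big {y \<in> H. y \<noteq> \<one> \<and> (\<exists>h\<in>H. h \<otimes> y \<otimes> inv h \<in> C2)}"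
    by (rule OL) (use assms in auto)
  show ?thesis using KL[of "{y \<in> H. y \<noteq> \<one> \<and> (\<exists>h\<in>H. h \<otimes> y \<otimes> inv h \<in> C1)}" "{y \<in> H. y \<noteq> \<one> \<and> (\<exists>h\<in>H. h \<otimes> y \<otimes> inv h \<in> C2)}"] a b
    by blast
qed


definition good :: "'a set \<Rightarrow> bool" where
  "good C \<longleftrightarrow> definable1 D C \<and> C \<subseteq> H \<and> subgroup C G \<and> C - {\<one>} \<noteq> {} \<and> TI H C"

lemma OL3: assumes "good C1" "good C2"
  shows "\<exists>y\<in>H. y \<noteq> \<one> \<and> (\<exists>h\<in>H. h \<otimes> y \<otimes> inv h \<in> C1) \<and> (\<exists>h\<in>H. h \<otimes> y \<otimes> inv h \<in> C2)"
  using assms unfolding good_def TI_def by (intro OL2) auto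

lemma good_conj: assumes M: "malnormal G M" "definable1 D M" and c: "c \<in> carrier G"
  and ne: "(conjg G M c \<inter> H) - {\<one>} \<noteq> {}"
  shows "good (conjg G M c \<inter> H)"
  unfolding good_def
proof (intro conjI)
  show "definable1 D (conjg G M c \<inter> H)" by (rule def1_int[OF def1_conjg[OF M(2) c] H_def])
  show "conjg G M c \<inter> H \<subseteq> H" by blast
  show "subgroup (conjg G M c \<inter> H) G" by (rule subgroups_Inter_pair[OF conjg_subgroup[OF mal_sub[OF M(1)] c] H_sg])
  show "conjg G M c \<inter> H - {\<one>} \<noteq> {}" by (rule ne)
  show "TI H (conjg G M c \<inter> H)" by (rule TI_restrict[OF mal_TI[OF conjg_mal[OF M(1) c]] H_G])
qed

lemma ffc_parts: assumes "full_frob_complement G D P"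
  shows "malnormal G P" "definable1 D P" "\<And>y. y \<in> carrier G \<Longrightarrow> \<exists>a\<in>carrier G. a \<otimes> y \<otimes> inv a \<in> P"
proof -
  show M: "malnormal G P" and "definable1 D P" using assms by (auto simp: full_frob_complement_def)
  fix y assume y: "y \<in> carrier G"
  hence "y \<in> (\<Union>g\<in>carrier G. conjg G P g)" using assms by (simp add: full_frob_complement_def)
  then obtain a where a: "a \<in> carrier G" "y \<in> conjg G P a" by blast
  thus "\<exists>a\<in>carrier G. a \<otimes> y \<otimes> inv a \<in> P" using conj_mem_iff[OF mal_G[OF M] a(1)] by blast
qed

lemma part_a:
  assumes B: "full_frob_complement G D B" and notin: "\<forall>g\<in>carrier G. \<not> H \<subseteq> conjg G B g"
    and g: "g \<in> carrier G" and ne: "conjg G B g \<inter> H \<noteq> {\<one>}"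
  shows "full_frob_complement (G\<lparr>carrier := H\<rparr>) D (conjg G B g \<inter> H) \<and> conjg G B g \<inter> H \<noteq> H"
proof -
  note Bp = ffc_parts[OF B]
  let ?C = "conjg G B g \<inter> H"
  have BG: "B \<subseteq> carrier G" by (rule mal_G[OF Bp(1)])
  have malBg: "malnormal G (conjg G B g)" by (rule conjg_mal[OF Bp(1) g])
  have Csg: "subgroup ?C G" by (rule subgroups_Inter_pair[OF conjg_subgroup[OF mal_sub[OF Bp(1)] g] H_sg])
  have oneC: "\<one> \<in> ?C" using one_in_conjg[OF mal_sub[OF Bp(1)] g] H_sg subgroup.one_closed by blast
  have Cne: "?C - {\<one>} \<noteq> {}" using ne oneC by blast
  have gC: "good ?C" by (rule good_conj[OF Bp(1,2) g Cne])
  have CH: "?C \<subseteq> H" by blast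
  let ?K = "G\<lparr>carrier := H\<rparr>"
  have cK: "conjg ?K X x = conjg G X x" if "x \<in> H" for X x
    unfolding conjg_def using m_inv_consistent[OF H_sg that] by simp
  have malK: "malnormal ?K ?C"
    unfolding malnormal_def
  proof (intro conjI ballI)
    show "subgroup ?C ?K" by (rule subgroup_incl[OF Csg H_sg CH])
    fix x assume x: "x \<in> carrier ?K - ?C"
    hence xH: "x \<in> H" and xG: "x \<in> carrier G" and xn: "x \<notin> conjg G B g" using H_G by auto
    have "conjg G B g \<inter> conjg G (conjg G B g) x = {\<one>}" using malBg xG xn unfolding malnormal_def by blast
    moreover have "?C \<inter> conjg ?K ?C x \<subseteq> conjg G B g \<inter> conjg G (conjg G B g) x"
      using cK[OF xH] conjg_mono[of ?C "conjg G B g" x] by blast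
    moreover have "\<one> \<in> conjg ?K ?C x" using cK[OF xH] one_in_conjg[OF Csg xG] by simp
    ultimately show "?C \<inter> conjg ?K ?C x = {\<one>\<^bsub>?K\<^esub>}" using oneC by auto
  qed
  have cov: "(\<Union>x\<in>carrier ?K. conjg ?K ?C x) = carrier ?K"
  proof (intro equalityI subsetI)
    fix y assume "y \<in> (\<Union>x\<in>carrier ?K. conjg ?K ?C x)"
    then obtain x where x: "x \<in> H" "y \<in> conjg ?K ?C x" by auto
    hence "y \<in> conjg G ?C x" using cK by simp
    then obtain c where "c \<in> ?C" "y = inv x \<otimes> c \<otimes> x" unfolding conjg_def by blast
    thus "y \<in> carrier ?K" using x(1) H_sg by (auto intro: subgroup.m_closed subgroup.m_inv_closed)
  next
    fix y assume "y \<in> carrier ?K"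
    hence yH: "y \<in> H" by simp
    hence yG: "y \<in> carrier G" using H_G by blast
    show "y \<in> (\<Union>x\<in>carrier ?K. conjg ?K ?C x)"
    proof (cases "y = \<one>")
      case True
      have "\<one> \<in> conjg G ?C \<one>" using one_in_conjg[OF Csg one_closed] .
      moreover have "\<one> \<in> H" using H_sg subgroup.one_closed by blast
      ultimately show ?thesis using True cK by force
    next
      case False
      obtain a where a: "a \<in> carrier G" "a \<otimes> y \<otimes> inv a \<in> B" using Bp(3)[OF yG] by blast
      have ya: "y \<in> conjg G B a \<inter> H" using conj_mem_iff[OF BG a(1)] a yG yH by simp
      have gC2: "good (conjg G B a \<inter> H)" by (rule good_conj[OF Bp(1,2) a(1)]) (use ya False in blast)
      obtain y' h1 h2 where y': "y' \<in> H" "y' \<noteq> \<one>" and h1: "h1 \<in> H" "h1 \<otimes> y' \<otimes> inv h1 \<in> ?C"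
        and h2: "h2 \<in> H" "h2 \<otimes> y' \<otimes> inv h2 \<in> conjg G B a \<inter> H"
        using OL3[OF gC gC2] by blast
      have y'G: "y' \<in> carrier G" and h1G: "h1 \<in> carrier G" and h2G: "h2 \<in> carrier G" using y' h1 h2 H_G by auto
      have "g \<otimes> (h1 \<otimes> y' \<otimes> inv h1) \<otimes> inv g \<in> B" using h1(2) conj_mem_iff[OF BG g] by auto
      hence e1: "(g \<otimes> h1) \<otimes> y' \<otimes> inv (g \<otimes> h1) \<in> B" using conj_comp[OF g h1G y'G] by simp
      have "a \<otimes> (h2 \<otimes> y' \<otimes> inv h2) \<otimes> inv a \<in> B" using h2(2) conj_mem_iff[OF BG a(1)] by auto
      hence e2: "(a \<otimes> h2) \<otimes> y' \<otimes> inv (a \<otimes> h2) \<in> B" using conj_comp[OF a(1) h2G y'G] by simp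
      have m: "(g \<otimes> h1) \<otimes> inv (a \<otimes> h2) \<in> B"
        by (rule mal_U[OF Bp(1) _ _ y'G y'(2) e1 e2]) (use g h1G a h2G in simp_all)
      define x where "x = h1 \<otimes> inv h2"
      have xH: "x \<in> H" unfolding x_def using h1 h2 H_sg by (simp add: subgroup.m_closed subgroup.m_inv_closed)
      have xG: "x \<in> carrier G" unfolding x_def using h1G h2G by simp
      have "(g \<otimes> x) \<otimes> inv a \<in> B" unfolding x_def using m alg1[OF g h1G h2G a(1)] by simp
      hence "(g \<otimes> x) \<otimes> y \<otimes> inv (g \<otimes> x) \<in> B"
        using transport[OF mal_sub[OF Bp(1)] _ a(1) yG _ a(2)] g xG by simp
      hence "g \<otimes> (x \<otimes> y \<otimes> inv x) \<otimes> inv g \<in> B" using conj_comp[OF g xG yG] by simp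
      hence "x \<otimes> y \<otimes> inv x \<in> conjg G B g" using conj_mem_iff[OF BG g] xG yG by simp
      moreover have "x \<otimes> y \<otimes> inv x \<in> H" using sg_conj_closed[OF H_sg xH yH] .
      moreover have CG: "?C \<subseteq> carrier G" using CH H_G by blast
      ultimately have "y \<in> conjg G ?C x" using conj_mem_iff[OF CG xG] xG yG by simp
      thus ?thesis using xH cK by auto
    qed
  qed
  have "definable1 D ?C" using gC by (simp add: good_def)
  moreover have "?C \<noteq> H" using notin g by blast
  ultimately show ?thesis using malK cov unfolding full_frob_complement_def by simp
qed


lemma part_b:
  assumes B: "full_frob_complement G D B" and Bne: "B - {\<one>} \<noteq> {}"
    and g0: "g0 \<in> carrier G" and sub: "conjg G B g0 \<subseteq> H"
  shows "full_frob_complement G D H"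
proof -
  note Bp = ffc_parts[OF B]
  have BG: "B \<subseteq> carrier G" by (rule mal_G[OF Bp(1)])
  have subB: "z \<in> H" if "z \<in> carrier G" "g0 \<otimes> z \<otimes> inv g0 \<in> B" for z
    using sub conj_mem_iff[OF BG g0] that by blast
  have C1e: "conjg G B g0 \<inter> H = conjg G B g0" using sub by blast
  have gC1: "good (conjg G B g0 \<inter> H)"
    by (rule good_conj[OF Bp(1,2) g0]) (use conj_nontriv[OF BG g0 Bne] C1e in simp)
  have step1: "\<exists>k\<in>H. (g0 \<otimes> k) \<otimes> y \<otimes> inv (g0 \<otimes> k) \<in> B" if y: "y \<in> H" "y \<noteq> \<one>" for y
  proof -
    have yG: "y \<in> carrier G" using y H_G by blast
    obtain a where a: "a \<in> carrier G" "a \<otimes> y \<otimes> inv a \<in> B" using Bp(3)[OF yG] by blast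
    have ya: "y \<in> conjg G B a \<inter> H" using conj_mem_iff[OF BG a(1)] a yG y by simp
    have gC2: "good (conjg G B a \<inter> H)" by (rule good_conj[OF Bp(1,2) a(1)]) (use ya y in blast)
    obtain y' h1 h2 where y': "y' \<in> H" "y' \<noteq> \<one>" and h1: "h1 \<in> H" "h1 \<otimes> y' \<otimes> inv h1 \<in> conjg G B g0 \<inter> H"
      and h2: "h2 \<in> H" "h2 \<otimes> y' \<otimes> inv h2 \<in> conjg G B a \<inter> H"
      using OL3[OF gC1 gC2] by blast
    have y'G: "y' \<in> carrier G" and h1G: "h1 \<in> carrier G" and h2G: "h2 \<in> carrier G" using y' h1 h2 H_G by auto
    have "g0 \<otimes> (h1 \<otimes> y' \<otimes> inv h1) \<otimes> inv g0 \<in> B" using h1(2) conj_mem_iff[OF BG g0] by auto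
    hence e1: "(g0 \<otimes> h1) \<otimes> y' \<otimes> inv (g0 \<otimes> h1) \<in> B" using conj_comp[OF g0 h1G y'G] by simp
    have "a \<otimes> (h2 \<otimes> y' \<otimes> inv h2) \<otimes> inv a \<in> B" using h2(2) conj_mem_iff[OF BG a(1)] by auto
    hence e2: "(a \<otimes> h2) \<otimes> y' \<otimes> inv (a \<otimes> h2) \<in> B" using conj_comp[OF a(1) h2G y'G] by simp
    have m: "(g0 \<otimes> h1) \<otimes> inv (a \<otimes> h2) \<in> B"
      by (rule mal_U[OF Bp(1) _ _ y'G y'(2) e1 e2]) (use g0 h1G a h2G in simp_all)
    define k where "k = h1 \<otimes> inv h2"
    have kH: "k \<in> H" unfolding k_def using h1 h2 H_sg by (simp add: subgroup.m_closed subgroup.m_inv_closed)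
    have kG: "k \<in> carrier G" unfolding k_def using h1G h2G by simp
    have "(g0 \<otimes> k) \<otimes> inv a \<in> B" unfolding k_def using m alg1[OF g0 h1G h2G a(1)] by simp
    hence "(g0 \<otimes> k) \<otimes> y \<otimes> inv (g0 \<otimes> k) \<in> B"
      using transport[OF mal_sub[OF Bp(1)] _ a(1) yG _ a(2)] g0 kG by simp
    thus ?thesis using kH by blast
  qed
  have mal: "malnormal G H"
    unfolding malnormal_def
  proof (intro conjI ballI)
    show "subgroup H G" by (rule H_sg)
    fix g assume g: "g \<in> carrier G - H"
    hence gG: "g \<in> carrier G" and gn: "g \<notin> H" by auto
    show "H \<inter> conjg G H g = {\<one>}"
    proof (intro equalityI subsetI)
      fix x assume x: "x \<in> H \<inter> conjg G H g"
      hence xH: "x \<in> H" and xG: "x \<in> carrier G" and w: "g \<otimes> x \<otimes> inv g \<in> H"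
        using conj_mem_iff[OF H_G gG] by auto
      show "x \<in> {\<one>}"
      proof (rule ccontr)
        assume "x \<notin> {\<one>}"
        hence x1: "x \<noteq> \<one>" by simp
        have w1: "g \<otimes> x \<otimes> inv g \<noteq> \<one>" using conj_one_iff[OF gG xG] x1 by simp
        obtain k where k: "k \<in> H" "(g0 \<otimes> k) \<otimes> x \<otimes> inv (g0 \<otimes> k) \<in> B" using step1[OF xH x1] by blast
        obtain k' where k': "k' \<in> H" "(g0 \<otimes> k') \<otimes> (g \<otimes> x \<otimes> inv g) \<otimes> inv (g0 \<otimes> k') \<in> B"
          using step1[OF w w1] by blast
        have kG: "k \<in> carrier G" and k'G: "k' \<in> carrier G" using k k' H_G by auto
        have g0k': "g0 \<otimes> k' \<in> carrier G" using g0 k'G by simp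
        have e2: "((g0 \<otimes> k') \<otimes> g) \<otimes> x \<otimes> inv ((g0 \<otimes> k') \<otimes> g) \<in> B"
          using k'(2) conj_comp[OF g0k' gG xG] by simp
        have m: "(g0 \<otimes> k) \<otimes> inv ((g0 \<otimes> k') \<otimes> g) \<in> B"
          by (rule mal_U[OF Bp(1) _ _ xG x1 k(2) e2]) (use g0 kG k'G gG in simp_all)
        define z where "z = k \<otimes> inv g \<otimes> inv k'"
        have zG: "z \<in> carrier G" unfolding z_def using kG gG k'G by simp
        have "g0 \<otimes> z \<otimes> inv g0 = (g0 \<otimes> k) \<otimes> inv ((g0 \<otimes> k') \<otimes> g)"
          unfolding z_def using g0 kG k'G gG by (simp add: m_assoc inv_mult_group)
        hence "z \<in> H" using subB[OF zG] m by simp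
        hence "inv k \<otimes> z \<otimes> k' \<in> H" using k k' H_sg by (simp add: subgroup.m_closed subgroup.m_inv_closed)
        moreover have "inv k \<otimes> z \<otimes> k' = inv g" unfolding z_def using kG k'G gG by (simp add: m_assoc)
        ultimately have "inv g \<in> H" by simp
        hence "g \<in> H" using H_sg gG by (metis inv_inv subgroup.m_inv_closed)
        thus False using gn by simp
      qed
    next
      fix x assume "x \<in> {\<one>}"
      thus "x \<in> H \<inter> conjg G H g" using one_in_conjg[OF H_sg gG] H_sg subgroup.one_closed by blast
    qed
  qed
  have cov: "(\<Union>x\<in>carrier G. conjg G H x) = carrier G"
  proof (intro equalityI subsetI)
    fix y assume "y \<in> (\<Union>x\<in>carrier G. conjg G H x)"
    thus "y \<in> carrier G" using conjg_sub[OF H_G] by blast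
  next
    fix y assume yG: "y \<in> carrier G"
    obtain a where a: "a \<in> carrier G" "a \<otimes> y \<otimes> inv a \<in> B" using Bp(3)[OF yG] by blast
    define x where "x = inv g0 \<otimes> a"
    have xG: "x \<in> carrier G" unfolding x_def using g0 a by simp
    have "g0 \<otimes> x = a" unfolding x_def using g0 a by simp
    hence "g0 \<otimes> (x \<otimes> y \<otimes> inv x) \<otimes> inv g0 \<in> B" using conj_comp[OF g0 xG yG] a by simp
    hence "x \<otimes> y \<otimes> inv x \<in> H" using subB xG yG by simp
    hence "y \<in> conjg G H x" using conj_mem_iff[OF H_G xG] yG by simp
    thus "y \<in> (\<Union>x\<in>carrier G. conjg G H x)" using xG by blast
  qed
  show ?thesis unfolding full_frob_complement_def using H_def mal cov by simp
qed

lemma ffc_int: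
  assumes HG: "H = carrier G" and P: "full_frob_complement G D P" and Q: "full_frob_complement G D Q"
    and ne: "P \<inter> Q \<noteq> {\<one>}"
  shows "full_frob_complement G D (P \<inter> Q)"
proof -
  note Pp = ffc_parts[OF P] and Qp = ffc_parts[OF Q]
  have PG: "P \<subseteq> carrier G" and QG: "Q \<subseteq> carrier G" using mal_G Pp(1) Qp(1) by auto
  have Psg: "subgroup P G" and Qsg: "subgroup Q G" using mal_sub Pp(1) Qp(1) by auto
  have PQsg: "subgroup (P \<inter> Q) G" by (rule subgroups_Inter_pair[OF Psg Qsg])
  have one: "\<one> \<in> P \<inter> Q" using Psg Qsg subgroup.one_closed by blast
  have PQG: "P \<inter> Q \<subseteq> carrier G" using PG by blast
  have gC1: "good (P \<inter> Q)"
    unfolding good_def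
  proof (intro conjI)
    show "definable1 D (P \<inter> Q)" by (rule def1_int[OF Pp(2) Qp(2)])
    show "P \<inter> Q \<subseteq> H" using PQG HG by simp
    show "subgroup (P \<inter> Q) G" by (rule PQsg)
    show "P \<inter> Q - {\<one>} \<noteq> {}" using ne one by blast
    show "TI H (P \<inter> Q)" unfolding HG by (rule TI_int[OF mal_TI[OF Pp(1)] mal_TI[OF Qp(1)]])
  qed
  have mal: "malnormal G (P \<inter> Q)"
    unfolding malnormal_def
  proof (intro conjI ballI)
    show "subgroup (P \<inter> Q) G" by (rule PQsg)
    fix g assume g: "g \<in> carrier G - P \<inter> Q"
    hence gG: "g \<in> carrier G" by blast
    have "(P \<inter> Q) \<inter> conjg G (P \<inter> Q) g \<subseteq> {\<one>}"
    proof (cases "g \<in> P")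
      case False
      hence "P \<inter> conjg G P g = {\<one>}" using Pp(1) gG unfolding malnormal_def by blast
      thus ?thesis using conjg_mono[of "P \<inter> Q" P g] by blast
    next
      case True
      hence "g \<notin> Q" using g by blast
      hence "Q \<inter> conjg G Q g = {\<one>}" using Qp(1) gG unfolding malnormal_def by blast
      thus ?thesis using conjg_mono[of "P \<inter> Q" Q g] by blast
    qed
    moreover have "\<one> \<in> conjg G (P \<inter> Q) g" by (rule one_in_conjg[OF PQsg gG])
    ultimately show "(P \<inter> Q) \<inter> conjg G (P \<inter> Q) g = {\<one>}" using one by blast
  qed
  have cov: "(\<Union>x\<in>carrier G. conjg G (P \<inter> Q) x) = carrier G"
  proof (intro equalityI subsetI)
    fix y assume "y \<in> (\<Union>x\<in>carrier G. conjg G (P \<inter> Q) x)"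
    thus "y \<in> carrier G" using conjg_sub[OF PQG] by blast
  next
    fix y assume yG: "y \<in> carrier G"
    show "y \<in> (\<Union>x\<in>carrier G. conjg G (P \<inter> Q) x)"
    proof (cases "y = \<one>")
      case True thus ?thesis using one_in_conjg[OF PQsg one_closed] by blast
    next
      case False
      obtain a where a: "a \<in> carrier G" "a \<otimes> y \<otimes> inv a \<in> P" using Pp(3)[OF yG] by blast
      obtain b where b: "b \<in> carrier G" "b \<otimes> y \<otimes> inv b \<in> Q" using Qp(3)[OF yG] by blast
      let ?C2 = "conjg G P a \<inter> conjg G Q b"
      have yC2: "y \<in> ?C2" using conj_mem_iff[OF PG a(1)] conj_mem_iff[OF QG b(1)] a b yG by simp
      have gC2: "good ?C2"
        unfolding good_def
      proof (intro conjI)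
        show "definable1 D ?C2" by (rule def1_int[OF def1_conjg[OF Pp(2) a(1)] def1_conjg[OF Qp(2) b(1)]])
        show "?C2 \<subseteq> H" using conjg_sub[OF PG a(1)] HG by blast
        show "subgroup ?C2 G" by (rule subgroups_Inter_pair[OF conjg_subgroup[OF Psg a(1)] conjg_subgroup[OF Qsg b(1)]])
        show "?C2 - {\<one>} \<noteq> {}" using yC2 False by blast
        show "TI H ?C2" unfolding HG by (rule TI_int[OF mal_TI[OF conjg_mal[OF Pp(1) a(1)]] mal_TI[OF conjg_mal[OF Qp(1) b(1)]]])
      qed
      obtain y' h1 h2 where y': "y' \<in> H" "y' \<noteq> \<one>" and h1: "h1 \<in> H" "h1 \<otimes> y' \<otimes> inv h1 \<in> P \<inter> Q"
        and h2: "h2 \<in> H" "h2 \<otimes> y' \<otimes> inv h2 \<in> ?C2"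
        using OL3[OF gC1 gC2] by blast
      have y'G: "y' \<in> carrier G" and h1G: "h1 \<in> carrier G" and h2G: "h2 \<in> carrier G" using y' h1 h2 HG by auto
      have "a \<otimes> (h2 \<otimes> y' \<otimes> inv h2) \<otimes> inv a \<in> P" using h2(2) conj_mem_iff[OF PG a(1)] by auto
      hence eP: "(a \<otimes> h2) \<otimes> y' \<otimes> inv (a \<otimes> h2) \<in> P" using conj_comp[OF a(1) h2G y'G] by simp
      have "b \<otimes> (h2 \<otimes> y' \<otimes> inv h2) \<otimes> inv b \<in> Q" using h2(2) conj_mem_iff[OF QG b(1)] by auto
      hence eQ: "(b \<otimes> h2) \<otimes> y' \<otimes> inv (b \<otimes> h2) \<in> Q" using conj_comp[OF b(1) h2G y'G] by simp
      have mP: "h1 \<otimes> inv (a \<otimes> h2) \<in> P"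
        by (rule mal_U[OF Pp(1) h1G _ y'G y'(2) _ eP]) (use h1 a h2G in simp_all)
      have mQ: "h1 \<otimes> inv (b \<otimes> h2) \<in> Q"
        by (rule mal_U[OF Qp(1) h1G _ y'G y'(2) _ eQ]) (use h1 b h2G in simp_all)
      define x where "x = h1 \<otimes> inv h2"
      have xG: "x \<in> carrier G" unfolding x_def using h1G h2G by simp
      have "x \<otimes> inv a \<in> P" unfolding x_def using mP h1G h2G a(1) by (simp add: m_assoc inv_mult_group)
      hence xP: "x \<otimes> y \<otimes> inv x \<in> P" by (rule transport[OF Psg xG a(1) yG _ a(2)])
      have "x \<otimes> inv b \<in> Q" unfolding x_def using mQ h1G h2G b(1) by (simp add: m_assoc inv_mult_group)
      hence xQ: "x \<otimes> y \<otimes> inv x \<in> Q" by (rule transport[OF Qsg xG b(1) yG _ b(2)])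
      have "y \<in> conjg G (P \<inter> Q) x" using conj_mem_iff[OF PQG xG] xP xQ yG by simp
      thus ?thesis using xG by blast
    qed
  qed
  show ?thesis unfolding full_frob_complement_def using def1_int[OF Pp(2) Qp(2)] mal cov by simp
qed

end

context rg
begin

lemma ffc_parts': assumes "full_frob_complement G D P"
  shows "malnormal G P" "definable1 D P" "\<And>y. y \<in> carrier G \<Longrightarrow> \<exists>a\<in>carrier G. a \<otimes> y \<otimes> inv a \<in> P"
proof -
  show M: "malnormal G P" and "definable1 D P" using assms by (auto simp: full_frob_complement_def)
  fix y assume y: "y \<in> carrier G"
  hence "y \<in> (\<Union>g\<in>carrier G. conjg G P g)" using assms by (simp add: full_frob_complement_def)
  then obtain a where a: "a \<in> carrier G" "y \<in> conjg G P a" by blast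
  thus "\<exists>a\<in>carrier G. a \<otimes> y \<otimes> inv a \<in> P" using conj_mem_iff[OF mal_G[OF M] a(1)] by blast
qed

lemma ffc_conj: assumes P: "full_frob_complement G D P" and a: "a \<in> carrier G"
  shows "full_frob_complement G D (conjg G P a)"
proof -
  note Pp = ffc_parts'[OF P]
  have PG: "P \<subseteq> carrier G" by (rule mal_G[OF Pp(1)])
  have cov: "(\<Union>g\<in>carrier G. conjg G (conjg G P a) g) = carrier G"
  proof (intro equalityI subsetI)
    fix y assume "y \<in> (\<Union>g\<in>carrier G. conjg G (conjg G P a) g)"
    thus "y \<in> carrier G" using conjg_sub[OF conjg_sub[OF PG a]] by blast
  next
    fix y assume yG: "y \<in> carrier G"
    obtain b where b: "b \<in> carrier G" "b \<otimes> y \<otimes> inv b \<in> P" using Pp(3)[OF yG] by blast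
    define g where "g = inv a \<otimes> b"
    have gG: "g \<in> carrier G" unfolding g_def using a b by simp
    have "a \<otimes> g = b" unfolding g_def using a b by simp
    hence "y \<in> conjg G P (a \<otimes> g)" using conj_mem_iff[OF PG b(1)] yG b by simp
    hence "y \<in> conjg G (conjg G P a) g" using conjg_conjg[OF PG a gG] by simp
    thus "y \<in> (\<Union>g\<in>carrier G. conjg G (conjg G P a) g)" using gG by blast
  qed
  show ?thesis unfolding full_frob_complement_def using def1_conjg[OF Pp(2) a] conjg_mal[OF Pp(1) a] cov by simp
qed

lemma ffc_nontriv: assumes P: "full_frob_complement G D P" and x: "x \<in> carrier G" "x \<noteq> \<one>"
  shows "P - {\<one>} \<noteq> {}"
proof
  assume e: "P - {\<one>} = {}"
  note Pp = ffc_parts'[OF P]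
  obtain a where a: "a \<in> carrier G" "a \<otimes> x \<otimes> inv a \<in> P" using Pp(3)[OF x(1)] by blast
  hence "a \<otimes> x \<otimes> inv a = \<one>" using e by blast
  thus False using conj_one_iff[OF a(1) x(1)] x(2) by simp
qed

lemma ffc_one: "full_frob_complement G D P \<Longrightarrow> \<one> \<in> P"
  using ffc_parts'(1) mal_sub subgroup.one_closed by blast

lemma chain_rank:
  assumes C: "full_frob_complement G D C" and C': "full_frob_complement G D C'" and sub: "C \<subseteq> C'"
    and neq: "C \<noteq> C'"
  shows "rk1 C < rk1 C'"
proof -
  note Cp = ffc_parts'[OF C] and C'p = ffc_parts'[OF C']
  have Csg: "subgroup C G" and C'sg: "subgroup C' G" using mal_sub Cp(1) C'p(1) by auto
  have CG: "C \<subseteq> carrier G" and C'G: "C' \<subseteq> carrier G" using Csg C'sg subgroup.subset by auto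
  have oneC: "\<one> \<in> C" using ffc_one[OF C] .
  have le: "rk1 C \<le> rk1 C'" by (rule rk1_mono[OF Cp(2) C'p(2) sub]) (use oneC in blast)
  have "rk1 C \<noteq> rk1 C'"
  proof
    assume eqr: "rk1 C = rk1 C'"
    let ?R = "(\<lambda>a. C #> a) ` C'"
    have cosub: "C #> a \<subseteq> C'" if "a \<in> C'" for a by (rule rcos_in_sub[OF C'sg sub that])
    show False
    proof (cases "finite ?R")
      case False
      then obtain f :: "nat \<Rightarrow> 'a set" where f: "inj f" "range f \<subseteq> ?R"
        using infinite_countable_subset by blast
      define aa where "aa i = (SOME a. a \<in> C' \<and> f i = C #> a)" for i
      have aa: "aa i \<in> C' \<and> f i = C #> aa i" for i
      proof -
        have "\<exists>a. a \<in> C' \<and> f i = C #> a" using f(2) by blast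
        thus ?thesis unfolding aa_def by (rule someI_ex)
      qed
      have aG: "aa i \<in> carrier G" for i using aa C'G by blast
      have "Suc (rk1 C) \<le> rk1 C'"
      proof (rule mono_intro1[OF C'p(2), of f])
        fix i
        show "definable1 D (f i)" using aa def1_rcos[OF Cp(2) aG] by simp
        show "f i \<subseteq> C'" using aa cosub by simp
        show "f i \<noteq> {}" using aa rcos_ne[of C] oneC by auto
        have "C \<noteq> {}" using oneC by blast
        thus "rk1 C \<le> rk1 (f i)" using aa rk1_rcos[OF Cp(2) aG] by simp
      next
        fix i j :: nat assume "i \<noteq> j"
        hence "f i \<noteq> f j" using f(1) by (auto dest: injD)
        hence "C #> aa i \<noteq> C #> aa j" using aa by metis
        hence "(C #> aa i) \<inter> (C #> aa j) = {}" by (rule rcos_disj[OF Csg aG aG])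
        thus "f i \<inter> f j = {}" using aa by metis
      qed
      thus False using eqr by simp
    next
      case True
      obtain b where b: "b \<in> C'" "b \<notin> C" using sub neq by blast
      have bG: "b \<in> carrier G" using b C'G by blast
      have injphi: "inj_on (\<lambda>c. C #> (b \<otimes> c)) C"
      proof (rule inj_onI)
        fix c1 c2 assume c: "c1 \<in> C" "c2 \<in> C" "C #> (b \<otimes> c1) = C #> (b \<otimes> c2)"
        have cG: "c1 \<in> carrier G" "c2 \<in> carrier G" using c CG by auto
        have m: "(b \<otimes> c1) \<otimes> inv (b \<otimes> c2) \<in> C" using c(3) rcos_eq_iff[OF Csg] bG cG by simp
        have e: "(b \<otimes> c1) \<otimes> inv (b \<otimes> c2) = b \<otimes> (c1 \<otimes> inv c2) \<otimes> inv b"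
          using bG cG by (simp add: m_assoc inv_mult_group)
        have z: "c1 \<otimes> inv c2 \<in> C" using c Csg by (simp add: subgroup.m_closed subgroup.m_inv_closed)
        show "c1 = c2"
        proof (rule ccontr)
          assume "c1 \<noteq> c2"
          have "c1 = (c1 \<otimes> inv c2) \<otimes> c2" using cG by (simp add: m_assoc)
          hence "c1 \<otimes> inv c2 \<noteq> \<one>" using \<open>c1 \<noteq> c2\<close> cG by auto
          moreover have "b \<otimes> (c1 \<otimes> inv c2) \<otimes> inv b \<in> C" using m e by simp
          ultimately have "b \<in> C" using mal_TI[OF Cp(1)] bG z unfolding TI_def by blast
          thus False using b by simp
        qed
      qed
      have phiR: "(\<lambda>c. C #> (b \<otimes> c)) ` C \<subseteq> ?R"
        using b(1) sub C'sg by (auto intro: subgroup.m_closed)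
      have finC: "finite C" using finite_imageD[OF finite_subset[OF phiR True] injphi] .
      have UR: "\<Union>?R = C'"
      proof (intro equalityI subsetI)
        fix y assume "y \<in> \<Union>?R" thus "y \<in> C'" using cosub by blast
      next
        fix y assume y: "y \<in> C'"
        have "y \<in> C #> y" using rcos_mem_iff[OF CG] y C'G oneC by auto
        thus "y \<in> \<Union>?R" using y by blast
      qed
      have cardco: "card r = card C" if "r \<in> ?R" for r using that card_rcos[OF CG] C'G by auto
      have cpos: "0 < card C" using finC oneC by (simp add: card_gt_0_iff) blast
      have finco: "finite r" if "r \<in> ?R" for r
      proof (rule ccontr)
        assume "infinite r" hence "card r = 0" by simp
        thus False using cardco[OF that] cpos by simp
      qed
      have pw: "pairwise disjnt ?R"
        unfolding pairwise_def disjnt_def using rcos_disj[OF Csg] C'G by blast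
      have cardC': "card C' = card ?R * card C"
        using card_Union_disjoint[OF pw finco] UR cardco by simp
      have finC': "finite C'" using finite_Union[OF True finco] UR by simp
      have k2: "2 \<le> card ?R"
      proof -
        have "C #> \<one> \<in> ?R" using C'sg subgroup.one_closed by blast
        hence c1: "C \<in> ?R" using rcos_one[OF CG] by simp
        have c2: "C #> b \<in> ?R" using b by blast
        have "b \<in> C #> b" using rcos_mem_iff[OF CG bG] bG oneC by simp
        hence "C #> b \<noteq> C" using b by blast
        hence "card {C, C #> b} = 2" by simp
        moreover have "{C, C #> b} \<subseteq> ?R" using c1 c2 by blast
        hence "card {C, C #> b} \<le> card ?R" by (rule card_mono[OF True])
        ultimately show ?thesis by simp
      qed
      define rep where "rep r = (SOME a. a \<in> C' \<and> r = C #> a)" for r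
      have rep: "rep r \<in> C' \<and> r = C #> rep r" if "r \<in> ?R" for r
      proof -
        have "\<exists>a. a \<in> C' \<and> r = C #> a" using that by blast
        thus ?thesis unfolding rep_def by (rule someI_ex)
      qed
      have cover: "C' - {\<one>} \<subseteq> (\<Union>r\<in>?R. conjg G C (rep r) - {\<one>})"
      proof
        fix x assume x: "x \<in> C' - {\<one>}"
        have xG: "x \<in> carrier G" using x C'G by blast
        obtain a where a: "a \<in> carrier G" "a \<otimes> x \<otimes> inv a \<in> C" using Cp(3)[OF xG] by blast
        have "a \<in> C'" using mal_TI[OF C'p(1)] a x sub unfolding TI_def by blast
        hence r: "C #> a \<in> ?R" by blast
        have "C #> rep (C #> a) = C #> a" using rep[OF r] by simp
        hence "rep (C #> a) \<otimes> inv a \<in> C" using rcos_eq_iff[OF Csg] rep[OF r] C'G a(1) by blast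
        hence "conjg G C (rep (C #> a)) = conjg G C a" using conjg_coset[OF Csg] rep[OF r] C'G a(1) by blast
        moreover have "x \<in> conjg G C a" using conj_mem_iff[OF CG a(1)] xG a(2) by simp
        ultimately show "x \<in> (\<Union>r\<in>?R. conjg G C (rep r) - {\<one>})" using r x by blast
      qed
      have fincj: "finite (conjg G C a - {\<one>})" for a unfolding conjg_def using finC by simp
      have cardcj: "card (conjg G C (rep r) - {\<one>}) = card C - 1" if "r \<in> ?R" for r
      proof -
        have rG: "rep r \<in> carrier G" using rep[OF that] C'G by blast
        have "\<one> \<in> conjg G C (rep r)" by (rule one_in_conjg[OF Csg rG])
        moreover have "finite (conjg G C (rep r))" unfolding conjg_def using finC by simp
        ultimately show ?thesis using card_conjg[OF CG rG] by simp
      qed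
      have "card (C' - {\<one>}) \<le> card (\<Union>r\<in>?R. conjg G C (rep r) - {\<one>})"
        by (rule card_mono[OF _ cover]) (use True fincj in blast)
      also have "\<dots> \<le> (\<Sum>r\<in>?R. card (conjg G C (rep r) - {\<one>}))" by (rule card_UN_le[OF True])
      also have "\<dots> = card ?R * (card C - 1)" using cardcj by simp
      finally have ineq0: "card (C' - {\<one>}) \<le> card ?R * (card C - 1)" .
      have "\<one> \<in> C'" using C'sg subgroup.one_closed by blast
      hence "card (C' - {\<one>}) = card C' - 1" using finC' by (simp add: card_Diff_singleton)
      hence ineq: "card C' - 1 \<le> card ?R * (card C - 1)" using ineq0 by simp
      obtain c' where c': "card C = Suc c'" using cpos by (cases "card C") auto
      have "card ?R * c' + card ?R - 1 \<le> card ?R * c'" using ineq cardC' c' by simp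
      thus False using k2 by linarith
    qed
  qed
  thus ?thesis using le by simp
qed


lemma min_ex: assumes B: "full_frob_complement G D B"
  shows "\<exists>B0. full_frob_complement G D B0 \<and> (\<forall>C. full_frob_complement G D C \<and> C \<subseteq> B0 \<longrightarrow> C = B0)"
proof -
  let ?r = "LEAST r. \<exists>C. full_frob_complement G D C \<and> rk1 C = r"
  have "\<exists>C. full_frob_complement G D C \<and> rk1 C = ?r" by (rule LeastI_ex) (use B in blast)
  then obtain B0 where B0: "full_frob_complement G D B0" "rk1 B0 = ?r" by blast
  have "\<forall>C. full_frob_complement G D C \<and> C \<subseteq> B0 \<longrightarrow> C = B0"
  proof (intro allI impI)
    fix C assume C: "full_frob_complement G D C \<and> C \<subseteq> B0"
    show "C = B0"
    proof (rule ccontr)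
      assume "C \<noteq> B0"
      hence "rk1 C < rk1 B0" using chain_rank C B0(1) by blast
      moreover have "?r \<le> rk1 C" by (rule Least_le) (use C in blast)
      ultimately show False using B0(2) by simp
    qed
  qed
  thus ?thesis using B0(1) by blast
qed

lemma min_conj:
  assumes conn: "connected_sg G D (carrier G)" and x: "x \<in> carrier G" "x \<noteq> \<one>"
    and B1: "full_frob_complement G D B1" "\<forall>C. full_frob_complement G D C \<and> C \<subseteq> B1 \<longrightarrow> C = B1"
    and B2: "full_frob_complement G D B2" "\<forall>C. full_frob_complement G D C \<and> C \<subseteq> B2 \<longrightarrow> C = B2"
  shows "\<exists>g\<in>carrier G. B2 = conjg G B1 g"
proof -
  interpret H: rgH G D rk "carrier G"
    by unfold_locales (use conn subgroup_self def1_carrier in auto)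
  note B1p = ffc_parts'[OF B1(1)] and B2p = ffc_parts'[OF B2(1)]
  have B1G: "B1 \<subseteq> carrier G" and B2G: "B2 \<subseteq> carrier G" using mal_G B1p(1) B2p(1) by auto
  obtain y where y: "y \<in> B1" "y \<noteq> \<one>" using ffc_nontriv[OF B1(1) x] by blast
  have yG: "y \<in> carrier G" using y B1G by blast
  obtain a where a: "a \<in> carrier G" "a \<otimes> y \<otimes> inv a \<in> B2" using B2p(3)[OF yG] by blast
  have ya: "y \<in> conjg G B2 a" using conj_mem_iff[OF B2G a(1)] yG a by simp
  have F2a: "full_frob_complement G D (conjg G B2 a)" by (rule ffc_conj[OF B2(1) a(1)])
  have "B1 \<inter> conjg G B2 a \<noteq> {\<one>}" using y ya by blast
  hence "full_frob_complement G D (B1 \<inter> conjg G B2 a)" by (rule H.ffc_int[OF refl B1(1) F2a])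
  hence "B1 \<inter> conjg G B2 a = B1" using B1(2) by blast
  hence sub: "B1 \<subseteq> conjg G B2 a" by blast
  have ia: "inv a \<in> carrier G" using a by simp
  have "conjg G B1 (inv a) \<subseteq> conjg G (conjg G B2 a) (inv a)" by (rule conjg_mono[OF sub])
  also have "\<dots> = B2" using conjg_conjg[OF B2G a(1) ia] conjg_one[OF B2G] a by simp
  finally have "conjg G B1 (inv a) = B2" using B2(2) ffc_conj[OF B1(1) ia] by blast
  thus ?thesis using ia by metis
qed

end

theorem mainTheorem5:
  fixes G :: "('a, 'b) monoid_scheme" and D :: "nat \<Rightarrow> 'a list set set"
    and rk :: "'a list set \<Rightarrow> nat" and B :: "'a set"
  assumes "ranked_group G D rk"
    and "full_frob_complement G D B" and "B \<noteq> carrier G"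
  shows
    "(\<forall>H. subgroup H G \<and> definable1 D H \<and> connected_sg G D H \<and>
          (\<forall>g \<in> carrier G. \<not> H \<subseteq> conjg G B g) \<longrightarrow>
        (\<forall>g \<in> carrier G. conjg G B g \<inter> H \<noteq> {\<one>\<^bsub>G\<^esub>} \<longrightarrow>
            full_frob_complement (G\<lparr>carrier := H\<rparr>) D (conjg G B g \<inter> H) \<and>
            conjg G B g \<inter> H \<noteq> H)
        \<and> full_frob_group (G\<lparr>carrier := H\<rparr>) D)
   \<and> (\<forall>H. subgroup H G \<and> definable1 D H \<and> connected_sg G D H \<and>
          (\<exists>g \<in> carrier G. conjg G B g \<subseteq> H) \<longrightarrow> full_frob_complement G D H)
   \<and> (connected_sg G D (carrier G) \<longrightarrow>
        (\<forall>B'. full_frob_complement G D B' \<and> B \<inter> B' \<noteq> {\<one>\<^bsub>G\<^esub>} \<longrightarrow>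
              full_frob_complement G D (B \<inter> B'))
        \<and> (\<exists>B0. full_frob_complement G D B0 \<and>
              (\<forall>C. full_frob_complement G D C \<and> C \<subseteq> B0 \<longrightarrow> C = B0))
        \<and> (\<forall>B1 B2. full_frob_complement G D B1 \<and>
                (\<forall>C. full_frob_complement G D C \<and> C \<subseteq> B1 \<longrightarrow> C = B1) \<and>
                full_frob_complement G D B2 \<and>
                (\<forall>C. full_frob_complement G D C \<and> C \<subseteq> B2 \<longrightarrow> C = B2) \<longrightarrow>
              (\<exists>g \<in> carrier G. B2 = conjg G B1 g)))"
proof -
  have gr: "group G" and RU: "ranked_universe (carrier G) D rk"
    and MUL: "{[x, y, x \<otimes>\<^bsub>G\<^esub> y] | x y. x \<in> carrier G \<and> y \<in> carrier G} \<in> D 3"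
    using assms(1) unfolding ranked_group_def by auto
  have rgI: "rg G D rk" by (rule rg.intro[OF gr rg_axioms.intro[OF RU MUL]])
  interpret rg G D rk by (rule rgI)
  note Bf = assms(2)
  note Bp = ffc_parts'[OF Bf]
  have BG: "B \<subseteq> carrier G" by (rule mal_G[OF Bp(1)])
  have oneB: "\<one>\<^bsub>G\<^esub> \<in> B" by (rule ffc_one[OF Bf])
  obtain x where x: "x \<in> carrier G" "x \<notin> B" using assms(3) BG by blast
  have x1: "x \<noteq> \<one>\<^bsub>G\<^esub>" using x oneB by blast
  have Bne: "B - {\<one>\<^bsub>G\<^esub>} \<noteq> {}" by (rule ffc_nontriv[OF Bf x(1) x1])
  have A: "\<forall>H. subgroup H G \<and> definable1 D H \<and> connected_sg G D H \<and>
          (\<forall>g \<in> carrier G. \<not> H \<subseteq> conjg G B g) \<longrightarrow>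
        (\<forall>g \<in> carrier G. conjg G B g \<inter> H \<noteq> {\<one>\<^bsub>G\<^esub>} \<longrightarrow>
            full_frob_complement (G\<lparr>carrier := H\<rparr>) D (conjg G B g \<inter> H) \<and>
            conjg G B g \<inter> H \<noteq> H)
        \<and> full_frob_group (G\<lparr>carrier := H\<rparr>) D"
  proof (intro allI impI conjI ballI)
    fix H assume H: "subgroup H G \<and> definable1 D H \<and> connected_sg G D H \<and> (\<forall>g \<in> carrier G. \<not> H \<subseteq> conjg G B g)"
    interpret rgH G D rk H by (rule rgH.intro[OF rgI rgH_axioms.intro]) (use H in auto)
    fix g assume "g \<in> carrier G" "conjg G B g \<inter> H \<noteq> {\<one>\<^bsub>G\<^esub>}"
    thus "full_frob_complement (G\<lparr>carrier := H\<rparr>) D (conjg G B g \<inter> H)" "conjg G B g \<inter> H \<noteq> H"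
      using part_a[OF Bf] H by blast+
  next
    fix H assume H: "subgroup H G \<and> definable1 D H \<and> connected_sg G D H \<and> (\<forall>g \<in> carrier G. \<not> H \<subseteq> conjg G B g)"
    interpret rgH G D rk H by (rule rgH.intro[OF rgI rgH_axioms.intro]) (use H in auto)
    have "\<not> H \<subseteq> conjg G B \<one>\<^bsub>G\<^esub>" using H by blast
    hence "\<not> H \<subseteq> B" using conjg_one[OF BG] by simp
    then obtain y where y: "y \<in> H" "y \<notin> B" by blast
    have yG: "y \<in> carrier G" using y H_G by blast
    have y1: "y \<noteq> \<one>\<^bsub>G\<^esub>" using y oneB by blast
    obtain a where a: "a \<in> carrier G" "a \<otimes>\<^bsub>G\<^esub> y \<otimes>\<^bsub>G\<^esub> inv\<^bsub>G\<^esub> a \<in> B" using Bp(3)[OF yG] by blast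
    have "y \<in> conjg G B a \<inter> H" using conj_mem_iff[OF BG a(1)] a yG y by simp
    hence "conjg G B a \<inter> H \<noteq> {\<one>\<^bsub>G\<^esub>}" using y1 by blast
    hence "full_frob_complement (G\<lparr>carrier := H\<rparr>) D (conjg G B a \<inter> H) \<and> conjg G B a \<inter> H \<noteq> H"
      using part_a[OF Bf] H a(1) by blast
    thus "full_frob_group (G\<lparr>carrier := H\<rparr>) D" unfolding full_frob_group_def by auto
  qed
  have Bpart: "\<forall>H. subgroup H G \<and> definable1 D H \<and> connected_sg G D H \<and>
          (\<exists>g \<in> carrier G. conjg G B g \<subseteq> H) \<longrightarrow> full_frob_complement G D H"
  proof (intro allI impI)
    fix H assume H: "subgroup H G \<and> definable1 D H \<and> connected_sg G D H \<and> (\<exists>g \<in> carrier G. conjg G B g \<subseteq> H)"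
    interpret rgH G D rk H by (rule rgH.intro[OF rgI rgH_axioms.intro]) (use H in auto)
    obtain g0 where "g0 \<in> carrier G" "conjg G B g0 \<subseteq> H" using H by blast
    thus "full_frob_complement G D H" by (rule part_b[OF Bf Bne])
  qed
  have Cpart: "connected_sg G D (carrier G) \<longrightarrow>
        (\<forall>B'. full_frob_complement G D B' \<and> B \<inter> B' \<noteq> {\<one>\<^bsub>G\<^esub>} \<longrightarrow>
              full_frob_complement G D (B \<inter> B'))
        \<and> (\<exists>B0. full_frob_complement G D B0 \<and>
              (\<forall>C. full_frob_complement G D C \<and> C \<subseteq> B0 \<longrightarrow> C = B0))
        \<and> (\<forall>B1 B2. full_frob_complement G D B1 \<and>
                (\<forall>C. full_frob_complement G D C \<and> C \<subseteq> B1 \<longrightarrow> C = B1) \<and>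
                full_frob_complement G D B2 \<and>
                (\<forall>C. full_frob_complement G D C \<and> C \<subseteq> B2 \<longrightarrow> C = B2) \<longrightarrow>
              (\<exists>g \<in> carrier G. B2 = conjg G B1 g))"
  proof (intro impI conjI allI)
    assume conn: "connected_sg G D (carrier G)"
    interpret HH: rgH G D rk "carrier G"
      by (rule rgH.intro[OF rgI rgH_axioms.intro]) (use conn subgroup_self def1_carrier in auto)
    fix B' assume "full_frob_complement G D B' \<and> B \<inter> B' \<noteq> {\<one>\<^bsub>G\<^esub>}"
    thus "full_frob_complement G D (B \<inter> B')" using HH.ffc_int[OF refl Bf] by blast
  next
    show "\<exists>B0. full_frob_complement G D B0 \<and> (\<forall>C. full_frob_complement G D C \<and> C \<subseteq> B0 \<longrightarrow> C = B0)"
      by (rule min_ex[OF Bf])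
  next
    assume conn: "connected_sg G D (carrier G)"
    fix B1 B2 assume "full_frob_complement G D B1 \<and>
                (\<forall>C. full_frob_complement G D C \<and> C \<subseteq> B1 \<longrightarrow> C = B1) \<and>
                full_frob_complement G D B2 \<and>
                (\<forall>C. full_frob_complement G D C \<and> C \<subseteq> B2 \<longrightarrow> C = B2)"
    thus "\<exists>g \<in> carrier G. B2 = conjg G B1 g" using min_conj[OF conn x(1) x1] by blast
  qed
  show ?thesis using A Bpart Cpart by blast
qed

end
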